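(* Let $G$ be a finite Frobenius group with Frobenius kernel $K$ and Frobenius complement $H$, so that $G = K \rtimes H$, and suppose that $K$ and $H$ are both abelian, with $|K| = k$ and $|H| = h$. Then \[ AMZA(G) = AMZL(G) = 1 + \frac{2(h^2-1)}{h}\left(1 - \frac{h-1}{k}\right)\left(1 - \frac{1}{k}\right). \]
   Context: A finite group $G$ is a Frobenius group if it has a proper non-trivial subgroup $H$ with $H \cap gHg^{-1} = \{e\}$ for all $g \in G \setminus H$; then $K = \left(G \setminus \bigcup_{g \in G} gHg^{-1}\right) \cup \{e\}$ is a normal subgroup (the Frobenius kernel), $H$ is called the Frobenius complement, and $G = K \rtimes H$. For a finite group $G$, $\mathrm{Irr}(G)$ is the set of irreducible complex characters, $d_\chi = \chi(e)$ is the degree of $\chi$, $\mathrm{Conj}(G)$ is the set of conjugacy classes, $|C|$ is the size of a class $C$, and $\chi(C)$ is the value of $\chi$ on $C$. The amenability constant of a Banach algebra $\mathcal{A}$ is $AM(\mathcal{A}) = \inf\{\sup_\alpha \|d_\alpha\| : (d_\alpha) \text{ a bounded approximate diagonal}\}$, where a bounded approximate diagonal is a bounded net $(d_\alpha)$ in the projective tensor product $\mathcal{A}\hat\otimes\mathcal{A}$ with $a\cdot d_\alpha - d_\alpha\cdot a \to 0$ and $a\, m(d_\alpha) \to a$ for all $a\in\mathcal{A}$ ($m$ the multiplication map); $AM(\mathcal{A})=\infty$ if none exists. $ZL^1(G)$ is the centre of the group algebra $L^1(G)$ (the class functions with the $L^1$ norm), and $ZA(G)$ is the closed span of $\mathrm{Irr}(G)$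 in the Fourier algebra $A(G)$ (the class functions with the Fourier algebra norm). Write $AMZL(G) = AM(ZL^1(G))$ and $AMZA(G) = AM(ZA(G))$. For finite $G$ these are given by \[ AMZL(G) = \frac{1}{|G|^2}\sum_{C,C'\in\mathrm{Conj}(G)} |C||C'|\left|\sum_{\chi\in\mathrm{Irr}(G)} d_\chi^2\,\chi(C)\overline{\chi(C')}\right|,\qquad AMZA(G) = \frac{1}{|G|^2}\sum_{\chi,\chi'\in\mathrm{Irr}(G)} d_\chi d_{\chi'}\left|\sum_{C\in\mathrm{Conj}(G)} |C|^2\,\chi(C)\overline{\chi'(C)}\right|. \] *)

theory Defs
  imports "HOL-Algebra.Group" "HOL-Algebra.Coset" "Jordan_Normal_Form.Matrix"
begin

definition frobenius_complement :: "('a, 'b) monoid_scheme \<Rightarrow> 'a set \<Rightarrow> bool" where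
  "frobenius_complement G H \<longleftrightarrow>
     subgroup H G \<and> H \<noteq> carrier G \<and> H \<noteq> {\<one>\<^bsub>G\<^esub>} \<and>
     (\<forall>g \<in> carrier G - H. H \<inter> (g <#\<^bsub>G\<^esub> H #>\<^bsub>G\<^esub> inv\<^bsub>G\<^esub> g) = {\<one>\<^bsub>G\<^esub>})"

definition frobenius_kernel :: "('a, 'b) monoid_scheme \<Rightarrow> 'a set \<Rightarrow> 'a set" where
  "frobenius_kernel G H =
     (carrier G - (\<Union>g \<in> carrier G. g <#\<^bsub>G\<^esub> H #>\<^bsub>G\<^esub> inv\<^bsub>G\<^esub> g)) \<union> {\<one>\<^bsub>G\<^esub>}"

definition conj_class :: "('a, 'b) monoid_scheme \<Rightarrow> 'a \<Rightarrow> 'a set" where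
  "conj_class G x = {g \<otimes>\<^bsub>G\<^esub> x \<otimes>\<^bsub>G\<^esub> inv\<^bsub>G\<^esub> g | g. g \<in> carrier G}"

definition conj_classes :: "('a, 'b) monoid_scheme \<Rightarrow> 'a set set" where
  "conj_classes G = conj_class G ` carrier G"

definition class_val :: "('a \<Rightarrow> complex) \<Rightarrow> 'a set \<Rightarrow> complex" where
  "class_val \<chi> C = \<chi> (SOME x. x \<in> C)"

definition representation ::
  "('a, 'b) monoid_scheme \<Rightarrow> nat \<Rightarrow> ('a \<Rightarrow> complex mat) \<Rightarrow> bool" where
  "representation G n \<rho> \<longleftrightarrow>
     (\<forall>g \<in> carrier G. \<rho> g \<in> carrier_mat n n) \<and>
     \<rho> \<one>\<^bsub>G\<^esub> = 1\<^sub>m n \<and>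
     (\<forall>x \<in> carrier G. \<forall>y \<in> carrier G. \<rho> (x \<otimes>\<^bsub>G\<^esub> y) = \<rho> x * \<rho> y)"

definition invariant_subspace ::
  "('a, 'b) monoid_scheme \<Rightarrow> nat \<Rightarrow> ('a \<Rightarrow> complex mat) \<Rightarrow> complex vec set \<Rightarrow> bool" where
  "invariant_subspace G n \<rho> W \<longleftrightarrow>
     W \<subseteq> carrier_vec n \<and> 0\<^sub>v n \<in> W \<and>
     (\<forall>v \<in> W. \<forall>w \<in> W. v + w \<in> W) \<and>
     (\<forall>c. \<forall>v \<in> W. c \<cdot>\<^sub>v v \<in> W) \<and>
     (\<forall>g \<in> carrier G. \<forall>v \<in> W. \<rho> g *\<^sub>v v \<in> W)"

definition irreducible_rep ::
  "('a, 'b) monoid_scheme \<Rightarrow> nat \<Rightarrow> ('a \<Rightarrow> complex mat) \<Rightarrow> bool" where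
  "irreducible_rep G n \<rho> \<longleftrightarrow>
     representation G n \<rho> \<and> n > 0 \<and>
     (\<forall>W. invariant_subspace G n \<rho> W \<longrightarrow> W = {0\<^sub>v n} \<or> W = carrier_vec n)"

definition mat_trace :: "complex mat \<Rightarrow> complex" where
  "mat_trace A = (\<Sum>i < dim_row A. A $$ (i, i))"

definition character ::
  "('a, 'b) monoid_scheme \<Rightarrow> ('a \<Rightarrow> complex mat) \<Rightarrow> 'a \<Rightarrow> complex" where
  "character G \<rho> = (\<lambda>g. if g \<in> carrier G then mat_trace (\<rho> g) else 0)"

definition Irr :: "('a, 'b) monoid_scheme \<Rightarrow> ('a \<Rightarrow> complex) set" where
  "Irr G = {\<chi>. \<exists>n \<rho>. irreducible_rep G n \<rho> \<and> \<chi> = character G \<rho>}"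

text \<open>Degree d_chi = chi(e) (a positive integer, hence real).\<close>
definition degree :: "('a, 'b) monoid_scheme \<Rightarrow> ('a \<Rightarrow> complex) \<Rightarrow> real" where
  "degree G \<chi> = Re (\<chi> \<one>\<^bsub>G\<^esub>)"

section \<open>Amenability constants of ZL^1(G) and ZA(G) for finite G (explicit formulas)\<close>

definition AMZL :: "('a, 'b) monoid_scheme \<Rightarrow> real" where
  "AMZL G = (1 / real (card (carrier G)) ^ 2) *
     (\<Sum>C \<in> conj_classes G. \<Sum>C' \<in> conj_classes G.
        real (card C) * real (card C') *
        cmod (\<Sum>\<chi> \<in> Irr G. complex_of_real ((degree G \<chi>)^2) * class_val \<chi> C * cnj (class_val \<chi> C')))"

definition AMZA :: "('a, 'b) monoid_scheme \<Rightarrow> real" where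
  "AMZA G = (1 / real (card (carrier G)) ^ 2) *
     (\<Sum>\<chi> \<in> Irr G. \<Sum>\<chi>' \<in> Irr G.
        degree G \<chi> * degree G \<chi>' *
        cmod (\<Sum>C \<in> conj_classes G. complex_of_real ((real (card C))^2) * class_val \<chi> C * cnj (class_val \<chi>' C)))"

end

theory Submission
  imports Defs "HOL-Algebra.Multiplicative_Group"
begin

definition dual :: "('a,'b) monoid_scheme \<Rightarrow> ('a \<Rightarrow> complex) set" where
 "dual A = {f. f \<one>\<^bsub>A\<^esub> = 1 \<and> (\<forall>x\<in>carrier A. \<forall>y\<in>carrier A. f (x \<otimes>\<^bsub>A\<^esub> y) = f x * f y)
    \<and> (\<forall>x. x \<notin> carrier A \<longrightarrow> f x = 0)}"

definition triv :: "('a,'b) monoid_scheme \<Rightarrow> 'a \<Rightarrow> complex" where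
 "triv A = (\<lambda>x. if x \<in> carrier A then 1 else 0)"

locale fab = comm_group A for A (structure) + assumes fin: "finite (carrier A)"

context fab begin

lemma dualD:
  assumes "f \<in> dual A"
  shows "f \<one> = 1" "\<And>x y. x \<in> carrier A \<Longrightarrow> y \<in> carrier A \<Longrightarrow> f (x \<otimes> y) = f x * f y"
    "\<And>x. x \<notin> carrier A \<Longrightarrow> f x = 0"
  using assms unfolding dual_def by auto

lemma dual_inv: "f \<in> dual A \<Longrightarrow> x \<in> carrier A \<Longrightarrow> f x * f (inv x) = 1"
  using dualD[of f] by (metis inv_closed r_inv)

lemma dual_nz: "f \<in> dual A \<Longrightarrow> x \<in> carrier A \<Longrightarrow> f x \<noteq> 0"
  using dual_inv by force

lemma dual_pow: "f \<in> dual A \<Longrightarrow> x \<in> carrier A \<Longrightarrow> f (x [^] (n::nat)) = f x ^ n"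
  by (induction n) (auto simp: dualD)

lemma order_pos: "0 < order A"
  using fin order_gt_0_iff_finite by blast

lemma dual_root: "f \<in> dual A \<Longrightarrow> x \<in> carrier A \<Longrightarrow> f x ^ order A = 1"
proof -
  assume a: "f \<in> dual A" "x \<in> carrier A"
  have "f (x [^] order A) = f x ^ order A" using dual_pow[OF a] .
  moreover have "x [^] order A = \<one>" using pow_order_eq_1 a(2) .
  ultimately show ?thesis using dualD(1)[OF a(1)] by simp
qed

lemma dual_norm: "f \<in> dual A \<Longrightarrow> x \<in> carrier A \<Longrightarrow> cmod (f x) = 1"
proof -
  assume a: "f \<in> dual A" "x \<in> carrier A"
  show ?thesis using power_eq_1_iff[OF dual_root[OF a]] order_pos by simp
qed

lemma unit_cnj: "cmod z = 1 \<Longrightarrow> z * cnj z = 1"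
  by (metis complex_norm_square mult.commute of_real_1 power_one)

lemma dual_cnj: "f \<in> dual A \<Longrightarrow> x \<in> carrier A \<Longrightarrow> cnj (f x) = f (inv x)"
proof -
  assume a: "f \<in> dual A" "x \<in> carrier A"
  have "f x * cnj (f x) = 1" using unit_cnj dual_norm a by blast
  moreover have "f x * f (inv x) = 1" using dual_inv a by blast
  ultimately show ?thesis using dual_nz[OF a]
    by (metis mult_cancel_left)
qed

lemma triv_dual: "triv A \<in> dual A"
  unfolding dual_def triv_def by auto

lemma dual_mult: "f \<in> dual A \<Longrightarrow> g \<in> dual A \<Longrightarrow> (\<lambda>x. f x * g x) \<in> dual A"
  unfolding dual_def by auto

lemma dual_cnjf: "f \<in> dual A \<Longrightarrow> (\<lambda>x. cnj (f x)) \<in> dual A"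
  unfolding dual_def by (simp add: complex_cnj_mult)

lemma dual_finite: "finite (dual A)"
proof -
  let ?R = "{z::complex. z ^ order A = 1}"
  have fR: "finite ?R" using finite_nth_roots order_pos by blast
  have "restrict f (carrier A) \<in> carrier A \<rightarrow>\<^sub>E ?R" if "f \<in> dual A" for f
    using dual_root that by auto
  moreover have "inj_on (\<lambda>f. restrict f (carrier A)) (dual A)"
  proof (rule inj_onI)
    fix f g assume fg: "f \<in> dual A" "g \<in> dual A" "restrict f (carrier A) = restrict g (carrier A)"
    show "f = g"
    proof
      fix x show "f x = g x"
        using fg dualD(3)[of f x] dualD(3)[of g x] by (metis restrict_apply')
    qed
  qed
  ultimately show ?thesis
    by (metis (no_types, lifting) fR fin finite_PiE finite_imageD finite_subset image_subsetI)
qed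

lemma sum_mult_shift:
  assumes "y \<in> carrier A"
  shows "(\<Sum>x\<in>carrier A. F (y \<otimes> x)) = (\<Sum>x\<in>carrier A. F x)"
proof (rule sum.reindex_bij_witness[where i="\<lambda>x. inv y \<otimes> x" and j="\<lambda>x. y \<otimes> x"])
qed (use assms in \<open>auto simp: m_assoc[symmetric]\<close>)

lemma dual_row0:
  assumes f: "f \<in> dual A" and nt: "f \<noteq> triv A"
  shows "(\<Sum>x\<in>carrier A. f x) = 0"
proof -
  obtain y where y: "y \<in> carrier A" "f y \<noteq> 1"
  proof -
    have "\<exists>y\<in>carrier A. f y \<noteq> 1"
    proof (rule ccontr)
      assume "\<not> ?thesis"
      then have "f = triv A" using dualD(3)[OF f] unfolding triv_def by (auto simp: fun_eq_iff)
      with nt show False by blast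
    qed
    then show ?thesis using that by blast
  qed
  have "(\<Sum>x\<in>carrier A. f x) = (\<Sum>x\<in>carrier A. f (y \<otimes> x))"
    using sum_mult_shift[OF y(1), of f] by simp
  also have "\<dots> = f y * (\<Sum>x\<in>carrier A. f x)"
    by (simp add: sum_distrib_left dualD(2)[OF f] y(1))
  finally have "(1 - f y) * (\<Sum>x\<in>carrier A. f x) = 0" by (simp add: algebra_simps)
  then show ?thesis using y(2) by simp
qed

lemma dual_row:
  assumes f: "f \<in> dual A" and g: "g \<in> dual A"
  shows "(\<Sum>x\<in>carrier A. f x * cnj (g x)) = (if f = g then of_nat (order A) else 0)"
proof (cases "f = g")
  case True
  then have "(\<Sum>x\<in>carrier A. f x * cnj (g x)) = (\<Sum>x\<in>carrier A. 1)"
    using unit_cnj dual_norm g by (intro sum.cong) auto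
  then show ?thesis using True by (simp add: order_def)
next
  case False
  have h: "(\<lambda>x. f x * cnj (g x)) \<in> dual A" using dual_mult dual_cnjf f g by blast
  have "(\<lambda>x. f x * cnj (g x)) \<noteq> triv A"
  proof
    assume e: "(\<lambda>x. f x * cnj (g x)) = triv A"
    have "f x = g x" for x
    proof (cases "x \<in> carrier A")
      case True
      then have "f x * cnj (g x) = 1" using fun_cong[OF e, of x] by (simp add: triv_def)
      then have "f x * cnj (g x) * g x = g x" by simp
      moreover have "cnj (g x) * g x = 1" using unit_cnj dual_norm g True by (simp add: mult.commute)
      ultimately show ?thesis by (simp add: mult.assoc)
    next
      case False
      then show ?thesis using dualD(3) f g by metis
    qed
    then show False using \<open>f \<noteq> g\<close> by auto
  qed
  then show ?thesis using dual_row0[OF h] False by simp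
qed

end

lemma (in comm_group) sub_fab:
  assumes "subgroup B G" "finite (carrier G)"
  shows "fab (G\<lparr>carrier := B\<rparr>)"
proof -
  interpret B: group "G\<lparr>carrier := B\<rparr>" using subgroup_imp_group assms by blast
  have "comm_group (G\<lparr>carrier := B\<rparr>)"
    by (rule B.group_comm_groupI) (use assms subgroup.mem_carrier[OF assms(1)] m_comm in auto)
  moreover have "finite B" using assms subgroup.subset finite_subset by metis
  ultimately show ?thesis unfolding fab_def fab_axioms_def by simp
qed


lemma (in group) subgroup_pow_closed: "subgroup B G \<Longrightarrow> x \<in> B \<Longrightarrow> x [^] (n::nat) \<in> B"
  by (induction n) (auto simp: subgroup.one_closed subgroup.m_closed)

lemma pow_upd: "x [^]\<^bsub>A\<lparr>carrier := B\<rparr>\<^esub> (n::nat) = x [^]\<^bsub>A\<^esub> n"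
  by (simp add: nat_pow_def)

context fab begin

lemma ext_step:
  assumes B: "subgroup B A" and f: "f \<in> dual (A\<lparr>carrier := B\<rparr>)" and g: "g \<in> carrier A" "g \<notin> B"
    and m: "m = (LEAST m. 0 < m \<and> g [^] m \<in> B)" and w: "w ^ m = f (g [^] m)"
  shows "\<exists>B' f'. subgroup B' A \<and> B \<subset> B' \<and> f' \<in> dual (A\<lparr>carrier := B'\<rparr>) \<and> (\<forall>b\<in>B. f' b = f b) \<and> f' g = w"
proof -
  interpret FB: fab "A\<lparr>carrier := B\<rparr>" using sub_fab B fin by blast
  have Bc: "B \<subseteq> carrier A" using B subgroup.subset by blast
  have fD: "f \<one> = 1" "\<And>x y. x \<in> B \<Longrightarrow> y \<in> B \<Longrightarrow> f (x \<otimes> y) = f x * f y"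
    "\<And>x. x \<notin> B \<Longrightarrow> f x = 0"
    using FB.dualD[OF f] by auto
  have ex: "\<exists>m::nat. 0 < m \<and> g [^] m \<in> B"
    using order_pos pow_order_eq_1[OF g(1)] subgroup.one_closed[OF B] by (intro exI[of _ "order A"]) auto
  have m0: "0 < m" and gm: "g [^] m \<in> B" using LeastI_ex[OF ex] m by auto
  have mmin: "\<And>j. 0 < j \<Longrightarrow> j < m \<Longrightarrow> g [^] j \<notin> B" using not_less_Least m by blast
  define B' where "B' = {x. \<exists>b\<in>B. \<exists>i::nat. x = b \<otimes> g [^] i}"
  have uniq: "i1 = i2 \<and> b1 = b2" if u: "b1 \<in> B" "b2 \<in> B" "i1 < m" "i2 < m" "b1 \<otimes> g [^] i1 = b2 \<otimes> g [^] i2"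
    for b1 b2 i1 i2
  proof -
    have main: "i1 = i2 \<and> b1 = b2" if u: "b1 \<in> B" "b2 \<in> B" "i1 < m" "i2 < m" "b1 \<otimes> g [^] i1 = b2 \<otimes> g [^] i2"
      "i1 \<le> i2" for b1 b2 i1 i2
    proof -
      have c: "b1 \<in> carrier A" "b2 \<in> carrier A" using u Bc by auto
      have "g [^] i2 = g [^] i1 \<otimes> g [^] (i2 - i1)" using nat_pow_mult[OF g(1)] u(6) by simp
      then have "b1 \<otimes> g [^] i1 = (b2 \<otimes> g [^] (i2 - i1)) \<otimes> g [^] i1"
        using u(5) c g(1) by (simp add: m_ac)
      then have e: "b1 = b2 \<otimes> g [^] (i2 - i1)" using c g(1) by simp
      then have "g [^] (i2 - i1) = inv b2 \<otimes> b1" using c g(1)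
        by (simp add: m_assoc[symmetric])
      then have "g [^] (i2 - i1) \<in> B" using u(1,2) B by (simp add: subgroup.m_closed subgroup.m_inv_closed)
      then have "i2 - i1 = 0" using mmin u by (meson diff_less_Suc less_Suc_eq_0_disj less_imp_diff_less not_less_eq zero_less_diff)
      then show ?thesis using e u(6) g(1) c by simp
    qed
    show ?thesis using main[of b1 b2 i1 i2] main[of b2 b1 i2 i1] u by (cases "i1 \<le> i2") auto
  qed
  have split: "g [^] i = (g [^] m) [^] (i div m) \<otimes> g [^] (i mod m)" for i
    using nat_pow_pow[OF g(1)] nat_pow_mult[OF g(1)] by (metis div_mult_mod_eq mult.commute)
  have gmq: "(g [^] m) [^] (q::nat) \<in> B" for q using subgroup_pow_closed[OF B gm] .
  define rep where "rep x = (SOME p. fst p \<in> B \<and> snd p < m \<and> x = fst p \<otimes> g [^] snd p)" for x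
  define F where "F x = (if x \<in> B' then f (fst (rep x)) * w ^ snd (rep x) else 0)" for x
  have Fval: "F (b \<otimes> g [^] i) = f b * w ^ i" if b: "b \<in> B" for b i
  proof -
    define b1 where "b1 = b \<otimes> (g [^] m) [^] (i div m)"
    have b1: "b1 \<in> B" unfolding b1_def using b gmq B by (simp add: subgroup.m_closed)
    have bc: "b \<in> carrier A" using b Bc by auto
    have x: "b \<otimes> g [^] i = b1 \<otimes> g [^] (i mod m)" unfolding b1_def
      using split[of i] bc g(1) by (simp add: m_assoc)
    have mem: "b \<otimes> g [^] i \<in> B'" unfolding B'_def using b by blast
    have v1: "f b1 * w ^ (i mod m) = f b * w ^ i"
    proof -
      have "f ((g [^] m) [^] (i div m)) = f (g [^] m) ^ (i div m)"
        using FB.dual_pow[OF f, of "g [^] m" "i div m"] gm by (simp add: pow_upd)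
      then have "f b1 = f b * f (g [^] m) ^ (i div m)" unfolding b1_def
        using fD(2)[OF b gmq] by simp
      also have "\<dots> = f b * w ^ (m * (i div m))" using w by (simp add: power_mult)
      finally have "f b1 * w ^ (i mod m) = f b * (w ^ (m * (i div m)) * w ^ (i mod m))" by (simp add: mult.assoc)
      also have "w ^ (m * (i div m)) * w ^ (i mod m) = w ^ i" by (simp add: power_add[symmetric])
      finally show ?thesis .
    qed
    have P: "fst (b1, i mod m) \<in> B \<and> snd (b1, i mod m) < m \<and> b \<otimes> g [^] i = fst (b1, i mod m) \<otimes> g [^] snd (b1, i mod m)"
      using b1 x m0 by simp
    have R: "fst (rep (b \<otimes> g [^] i)) \<in> B \<and> snd (rep (b \<otimes> g [^] i)) < m \<and>
        b \<otimes> g [^] i = fst (rep (b \<otimes> g [^] i)) \<otimes> g [^] snd (rep (b \<otimes> g [^] i))"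
      unfolding rep_def by (rule someI[of _ "(b1, i mod m)"], rule P)
    have "snd (rep (b \<otimes> g [^] i)) = i mod m \<and> fst (rep (b \<otimes> g [^] i)) = b1"
      using uniq[of "fst (rep (b \<otimes> g [^] i))" b1 "snd (rep (b \<otimes> g [^] i))" "i mod m"] R b1 x m0 by simp
    then show ?thesis unfolding F_def using mem v1 by simp
  qed
  have B'c: "B' \<subseteq> carrier A" unfolding B'_def using Bc g(1) by auto
  have B'sub: "subgroup B' A"
  proof (rule subgroupI)
    show "B' \<subseteq> carrier A" by (rule B'c)
    have "\<one> \<otimes> g [^] (0::nat) \<in> B'" unfolding B'_def using subgroup.one_closed[OF B]
      by (intro CollectI bexI[of _ "\<one>"] exI[of _ "0::nat"]) simp_all
    then show "B' \<noteq> {}" by auto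
  next
    fix a assume "a \<in> B'"
    then obtain b and i :: nat where a: "b \<in> B" "a = b \<otimes> g [^] i" unfolding B'_def by auto
    have bc: "b \<in> carrier A" using a Bc by auto
    have e1: "inv a = inv b \<otimes> inv (g [^] i)" using a bc g(1) by (simp add: inv_mult)
    have e2: "inv (g [^] i) = g [^] (i * (order A - 1))"
    proof -
      have "g [^] i \<otimes> g [^] (i * (order A - 1)) = g [^] (i + i * (order A - 1))"
        using nat_pow_mult[OF g(1)] by simp
      also have "i + i * (order A - 1) = order A * i" using order_pos
        by (metis Suc_diff_1 mult.commute mult_Suc_right)
      also have "g [^] (order A * i) = \<one>" using pow_order_eq_1[OF g(1)] nat_pow_pow[OF g(1), of "order A" i]
        by simp
      finally have "g [^] i \<otimes> g [^] (i * (order A - 1)) = \<one>" .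
      then show ?thesis using g(1) inv_equality inv_comm nat_pow_closed by metis
    qed
    have "inv b \<in> B" by (rule subgroup.m_inv_closed[OF B a(1)])
    then show "inv a \<in> B'" unfolding B'_def using e1 e2 by (intro CollectI bexI[of _ "inv b"] exI[of _ "i * (order A - 1)"]) simp_all
  next
    fix a c assume "a \<in> B'" "c \<in> B'"
    then obtain b b2 and i j :: nat where a: "b \<in> B" "a = b \<otimes> g [^] i" "b2 \<in> B" "c = b2 \<otimes> g [^] j"
      unfolding B'_def by auto
    have bc: "b \<in> carrier A" "b2 \<in> carrier A" using a Bc by auto
    have "a \<otimes> c = (b \<otimes> b2) \<otimes> g [^] (i + j)"
      using a bc g(1) nat_pow_mult[OF g(1), of i j, symmetric] by (simp add: m_ac)
    moreover have "b \<otimes> b2 \<in> B" by (rule subgroup.m_closed[OF B a(1) a(3)])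
    ultimately show "a \<otimes> c \<in> B'" unfolding B'_def by (intro CollectI bexI[of _ "b \<otimes> b2"] exI[of _ "i + j"]) simp_all
  qed
  have BB': "B \<subset> B'"
  proof -
    have "b \<in> B'" if "b \<in> B" for b unfolding B'_def using that Bc
      by (intro CollectI bexI[of _ b] exI[of _ "0::nat"]) auto
    moreover have "g \<in> B'" unfolding B'_def using g(1) subgroup.one_closed[OF B]
      by (intro CollectI bexI[of _ "\<one>"] exI[of _ "1::nat"]) auto
    ultimately show ?thesis using g(2) by blast
  qed
  have Fd: "F \<in> dual (A\<lparr>carrier := B'\<rparr>)"
    unfolding dual_def
  proof (simp, intro conjI ballI allI impI)
    show "F \<one> = 1" using Fval[of "\<one>" 0] fD(1) subgroup.one_closed[OF B] by simp
  next
    fix x y assume "x \<in> B'" "y \<in> B'"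
    then obtain b b2 and i j :: nat where a: "b \<in> B" "x = b \<otimes> g [^] i" "b2 \<in> B" "y = b2 \<otimes> g [^] j"
      unfolding B'_def by auto
    have bc: "b \<in> carrier A" "b2 \<in> carrier A" using a Bc by auto
    have "x \<otimes> y = (b \<otimes> b2) \<otimes> g [^] (i + j)"
      using a bc g(1) nat_pow_mult[OF g(1), of i j, symmetric] by (simp add: m_ac)
    moreover have "F (b \<otimes> b2 \<otimes> g [^] (i + j)) = f (b \<otimes> b2) * w ^ (i + j)"
      by (rule Fval, rule subgroup.m_closed[OF B a(1) a(3)])
    ultimately show "F (x \<otimes> y) = F x * F y" using Fval[OF a(1)] Fval[OF a(3)] a fD(2)[OF a(1) a(3)]
      by (simp add: power_add)
  next
    fix x assume "x \<notin> B'" then show "F x = 0" unfolding F_def by simp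
  qed
  have "\<forall>b\<in>B. F b = f b"
  proof
    fix b assume b: "b \<in> B"
    then have "b \<otimes> g [^] (0::nat) = b" using Bc by auto
    then show "F b = f b" using Fval[OF b, of 0] by simp
  qed
  moreover have "F g = w" using Fval[of "\<one>" 1] fD(1) subgroup.one_closed[OF B] g(1) by simp
  ultimately show ?thesis using B'sub BB' Fd by blast
qed

end

context fab begin

lemma dual_upd_self: "dual (A\<lparr>carrier := carrier A\<rparr>) = dual A"
  unfolding dual_def by simp

lemma root_exists: "0 < (m::nat) \<Longrightarrow> c \<noteq> 0 \<Longrightarrow> \<exists>w::complex. w ^ m = c"
proof -
  assume "0 < m" "c \<noteq> 0"
  then have "card {z::complex. z ^ m = c} = m" by (rule card_nth_roots[rotated])
  with \<open>0 < m\<close> have "card {z::complex. z ^ m = c} \<noteq> 0" by simp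
  then have "{z::complex. z ^ m = c} \<noteq> {}" by (metis card.empty)
  then show ?thesis by auto
qed

lemma ext_all:
  assumes "subgroup B A" "f \<in> dual (A\<lparr>carrier := B\<rparr>)"
  shows "\<exists>f'\<in>dual A. \<forall>b\<in>B. f' b = f b"
  using assms
proof (induction "card (carrier A) - card B" arbitrary: B f rule: less_induct)
  case less
  show ?case
  proof (cases "B = carrier A")
    case True
    then show ?thesis using less.prems(2) dual_upd_self by auto
  next
    case False
    have Bc: "B \<subseteq> carrier A" using less.prems(1) subgroup.subset by blast
    then obtain g where g: "g \<in> carrier A" "g \<notin> B" using False by blast
    interpret FB: fab "A\<lparr>carrier := B\<rparr>" using sub_fab less.prems(1) fin by blast
    define m :: nat where "m = (LEAST m. 0 < m \<and> g [^] m \<in> B)"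
    have ex: "\<exists>m::nat. 0 < m \<and> g [^] m \<in> B"
      using order_pos pow_order_eq_1[OF g(1)] subgroup.one_closed[OF less.prems(1)]
      by (intro exI[of _ "order A"]) auto
    have m0: "0 < m" and gm: "g [^] m \<in> B" using LeastI_ex[OF ex] m_def by auto
    have "f (g [^] m) \<noteq> 0" using FB.dual_nz[OF less.prems(2), of "g [^] m"] gm by simp
    then obtain w where w: "w ^ m = f (g [^] m)" using root_exists[OF m0] by blast
    obtain B' f' where B': "subgroup B' A" "B \<subset> B'" "f' \<in> dual (A\<lparr>carrier := B'\<rparr>)" "\<forall>b\<in>B. f' b = f b"
      using ext_step[OF less.prems(1) less.prems(2) g m_def w] by blast
    have B'c: "B' \<subseteq> carrier A" using B'(1) subgroup.subset by blast
    have "card B < card B'" using B'(2) B'c fin by (meson psubset_card_mono rev_finite_subset)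
    moreover have "card B' \<le> card (carrier A)" using B'c fin by (simp add: card_mono)
    ultimately have "card (carrier A) - card B' < card (carrier A) - card B" by linarith
    then obtain f'' where f'': "f'' \<in> dual A" "\<forall>b\<in>B'. f'' b = f' b" using less.hyps B'(1,3) by blast
    show ?thesis
    proof (intro bexI ballI)
      fix b assume "b \<in> B"
      then show "f'' b = f b" using f''(2) B'(2,4) by auto
    qed (rule f''(1))
  qed
qed

lemma separate:
  assumes x: "x \<in> carrier A" "x \<noteq> \<one>"
  shows "\<exists>f\<in>dual A. f x \<noteq> 1"
proof -
  have B: "subgroup {\<one>} A" by (rule triv_subgroup)
  interpret FB: fab "A\<lparr>carrier := {\<one>}\<rparr>" using sub_fab B fin by blast
  have f0: "triv (A\<lparr>carrier := {\<one>}\<rparr>) \<in> dual (A\<lparr>carrier := {\<one>}\<rparr>)" by (rule FB.triv_dual)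
  define m :: nat where "m = (LEAST m. 0 < m \<and> x [^] m \<in> {\<one>})"
  have ex: "\<exists>m::nat. 0 < m \<and> x [^] m \<in> {\<one>}"
    using order_pos pow_order_eq_1[OF x(1)] by (intro exI[of _ "order A"]) auto
  have m0: "0 < m" and gm: "x [^] m \<in> {\<one>}" using LeastI_ex[OF ex] m_def by auto
  have "m \<noteq> 1" using gm x by (metis nat_pow_eone singletonD)
  then have m2: "1 < m" using m0 by linarith
  have "card {z::complex. z ^ m = 1} = m" using card_roots_unity_eq m0 by blast
  then have "\<not> {z::complex. z ^ m = 1} \<subseteq> {1}"
  proof -
    assume c: "card {z::complex. z ^ m = 1} = m"
    show ?thesis
    proof
      assume "{z::complex. z ^ m = 1} \<subseteq> {1}"
      then have "card {z::complex. z ^ m = 1} \<le> card {1::complex}" by (rule card_mono[rotated]) simp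
      then show False using c m2 by simp
    qed
  qed
  then obtain w :: complex where w: "w ^ m = 1" "w \<noteq> 1" by blast
  have w': "w ^ m = triv (A\<lparr>carrier := {\<one>}\<rparr>) (x [^] m)" using w gm by (simp add: triv_def)
  have xn: "x \<notin> {\<one>}" using x by simp
  obtain B' f' where B': "subgroup B' A" "f' \<in> dual (A\<lparr>carrier := B'\<rparr>)" "f' x = w"
    using ext_step[OF B f0 x(1) xn m_def w'] by blast
  interpret FB': fab "A\<lparr>carrier := B'\<rparr>" using sub_fab B'(1) fin by blast
  have xB': "x \<in> B'"
  proof (rule ccontr)
    assume "x \<notin> B'"
    then have "f' x = 0" using FB'.dualD(3)[OF B'(2), of x] by simp
    then show False using B'(3) w(1) m0 by (simp add: power_0_left)
  qed
  obtain f'' where f'': "f'' \<in> dual A" "\<forall>b\<in>B'. f'' b = f' b" using ext_all[OF B'(1,2)] by blast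
  have "f'' x \<noteq> 1" using f''(2) xB' B'(3) w(2) by simp
  then show ?thesis using f''(1) by blast
qed

lemma col0:
  assumes x: "x \<in> carrier A" "x \<noteq> \<one>"
  shows "(\<Sum>f\<in>dual A. f x) = 0"
proof -
  obtain f0 where f0: "f0 \<in> dual A" "f0 x \<noteq> 1" using separate[OF x] by blast
  have inv1: "(\<lambda>y. cnj (f0 y) * (f0 y * f y)) = f" if "f \<in> dual A" for f
  proof
    fix y show "cnj (f0 y) * (f0 y * f y) = f y"
    proof (cases "y \<in> carrier A")
      case True
      then have "cnj (f0 y) * f0 y = 1" using unit_cnj dual_norm f0(1) by (simp add: mult.commute)
      then show ?thesis by (simp add: mult.assoc[symmetric])
    next
      case False then show ?thesis using dualD(3) that by simp
    qed
  qed
  have inv2: "(\<lambda>y. f0 y * (cnj (f0 y) * f y)) = f" if "f \<in> dual A" for f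
  proof
    fix y show "f0 y * (cnj (f0 y) * f y) = f y"
    proof (cases "y \<in> carrier A")
      case True
      then have "f0 y * cnj (f0 y) = 1" using unit_cnj dual_norm f0(1) by simp
      then show ?thesis by (simp add: mult.assoc[symmetric])
    next
      case False then show ?thesis using dualD(3) that by simp
    qed
  qed
  have "(\<Sum>f\<in>dual A. f x) = (\<Sum>f\<in>dual A. f0 x * f x)"
  proof (rule sum.reindex_bij_witness[where j="\<lambda>f y. cnj (f0 y) * f y" and i="\<lambda>f y. f0 y * f y"])
    fix f assume f: "f \<in> dual A"
    show "(\<lambda>y. f0 y * (cnj (f0 y) * f y)) = f" using inv2[OF f] .
    show "(\<lambda>y. f0 y * f y) \<in> dual A" using dual_mult[OF f0(1) f] .
    show "(\<lambda>y. cnj (f0 y) * (f0 y * f y)) = f" using inv1[OF f] .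
    show "(\<lambda>y. cnj (f0 y) * f y) \<in> dual A" using dual_mult[OF dual_cnjf[OF f0(1)] f] .
    show "f0 x * (cnj (f0 x) * f x) = f x" using fun_cong[OF inv2[OF f], of x] .
  qed
  also have "\<dots> = f0 x * (\<Sum>f\<in>dual A. f x)" by (simp add: sum_distrib_left)
  finally have "(1 - f0 x) * (\<Sum>f\<in>dual A. f x) = 0" by (simp add: algebra_simps)
  then show ?thesis using f0(2) by simp
qed

lemma card_dual: "card (dual A) = order A"
proof -
  have "(\<Sum>x\<in>carrier A. \<Sum>f\<in>dual A. f x) = (\<Sum>x\<in>carrier A. if x = \<one> then of_nat (card (dual A)) else 0)"
  proof (rule sum.cong)
    fix x assume x: "x \<in> carrier A"
    show "(\<Sum>f\<in>dual A. f x) = (if x = \<one> then of_nat (card (dual A)) else 0)"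
    proof (cases "x = \<one>")
      case True
      then have "(\<Sum>f\<in>dual A. f x) = (\<Sum>f\<in>dual A. 1)" using dualD(1) by (intro sum.cong) auto
      then show ?thesis using True by simp
    qed (use col0 x in auto)
  qed simp
  also have "\<dots> = of_nat (card (dual A))" using fin by (simp add: sum.delta)
  finally have e1: "(\<Sum>x\<in>carrier A. \<Sum>f\<in>dual A. f x) = of_nat (card (dual A))" .
  have "(\<Sum>f\<in>dual A. \<Sum>x\<in>carrier A. f x) = (\<Sum>f\<in>dual A. if f = triv A then of_nat (order A) else 0)"
  proof (rule sum.cong)
    fix f assume f: "f \<in> dual A"
    show "(\<Sum>x\<in>carrier A. f x) = (if f = triv A then of_nat (order A) else 0)"
    proof (cases "f = triv A")
      case True
      then show ?thesis by (simp add: triv_def order_def)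
    qed (use dual_row0 f in auto)
  qed simp
  also have "\<dots> = of_nat (order A)" using triv_dual dual_finite by simp
  finally have e2: "(\<Sum>f\<in>dual A. \<Sum>x\<in>carrier A. f x) = of_nat (order A)" .
  have "(of_nat (card (dual A)) :: complex) = of_nat (order A)" using e1 e2 sum.swap[where g="\<lambda>x f. f x" and A="carrier A" and B="dual A"] by simp
  then show ?thesis using of_nat_eq_iff by blast
qed

lemma dual_col:
  assumes x: "x \<in> carrier A" and y: "y \<in> carrier A"
  shows "(\<Sum>f\<in>dual A. f x * cnj (f y)) = (if x = y then of_nat (order A) else 0)"
proof -
  have "(\<Sum>f\<in>dual A. f x * cnj (f y)) = (\<Sum>f\<in>dual A. f (x \<otimes> inv y))"
    using dual_cnj dualD(2) x y by (intro sum.cong) auto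
  also have "\<dots> = (if x = y then of_nat (order A) else 0)"
  proof (cases "x = y")
    case True
    then have "(\<Sum>f\<in>dual A. f (x \<otimes> inv y)) = (\<Sum>f\<in>dual A. 1)" using dualD(1) x by (intro sum.cong) auto
    then show ?thesis using True card_dual by simp
  next
    case False
    then have "x \<otimes> inv y \<noteq> \<one>" using x y by (metis inv_closed inv_inv inv_equality m_closed r_inv inv_comm)
    then show ?thesis using col0[of "x \<otimes> inv y"] x y False by simp
  qed
  finally show ?thesis .
qed

end

lemma mult_entry:
  "A \<in> carrier_mat p q \<Longrightarrow> B \<in> carrier_mat q r \<Longrightarrow> a < p \<Longrightarrow> b < r \<Longrightarrow>
   (A * B) $$ (a, b) = (\<Sum>c<q. A $$ (a, c) * B $$ (c, b))"
  by (simp add: scalar_prod_def atLeast0LessThan)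

lemma mv0: "(T :: complex mat) \<in> carrier_mat n m \<Longrightarrow> T *\<^sub>v 0\<^sub>v m = 0\<^sub>v n"
  by (intro eq_vecI) (auto simp: scalar_prod_def)

lemma mv_unit: "(T :: complex mat) \<in> carrier_mat n m \<Longrightarrow> i < n \<Longrightarrow> j < m \<Longrightarrow> (T *\<^sub>v unit_vec m j) $ i = T $$ (i, j)"
  by simp

lemma mat_trace_comm:
  assumes "(A :: complex mat) \<in> carrier_mat n m" "B \<in> carrier_mat m n"
  shows "mat_trace (A * B) = mat_trace (B * A)"
proof -
  have "mat_trace (A * B) = (\<Sum>i<n. (A * B) $$ (i, i))" unfolding mat_trace_def using assms by simp
  also have "\<dots> = (\<Sum>i<n. \<Sum>k<m. A $$ (i, k) * B $$ (k, i))"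
    by (rule sum.cong[OF refl]) (use mult_entry[OF assms] in simp)
  also have "\<dots> = (\<Sum>k<m. \<Sum>i<n. B $$ (k, i) * A $$ (i, k))"
    by (subst sum.swap) (simp add: mult.commute)
  also have "\<dots> = (\<Sum>k<m. (B * A) $$ (k, k))"
    by (rule sum.cong[OF refl]) (use mult_entry[OF assms(2,1)] in simp)
  also have "\<dots> = mat_trace (B * A)" unfolding mat_trace_def using assms by simp
  finally show ?thesis .
qed

lemma repD:
  assumes "representation G n \<rho>"
  shows "\<And>g. g \<in> carrier G \<Longrightarrow> \<rho> g \<in> carrier_mat n n" "\<rho> \<one>\<^bsub>G\<^esub> = 1\<^sub>m n"
    "\<And>x y. x \<in> carrier G \<Longrightarrow> y \<in> carrier G \<Longrightarrow> \<rho> (x \<otimes>\<^bsub>G\<^esub> y) = \<rho> x * \<rho> y"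
  using assms unfolding representation_def by auto

lemma schur_iso:
  assumes r: "irreducible_rep G n \<rho>" and s: "irreducible_rep G m \<sigma>"
    and T: "T \<in> carrier_mat n m"
    and inter: "\<And>h. h \<in> carrier G \<Longrightarrow> T * \<sigma> h = \<rho> h * T"
    and nz: "i0 < n" "j0 < m" "T $$ (i0, j0) \<noteq> 0"
  shows "\<And>g. g \<in> carrier G \<Longrightarrow> mat_trace (\<sigma> g) = mat_trace (\<rho> g)"
proof -
  have rr: "representation G n \<rho>" and rs: "representation G m \<sigma>"
    using r s unfolding irreducible_rep_def by auto
  note rD = repD[OF rr] and sD = repD[OF rs]
  define K where "K = {v \<in> carrier_vec m. T *\<^sub>v v = 0\<^sub>v n}"
  have "invariant_subspace G m \<sigma> K"
    unfolding invariant_subspace_def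
  proof (intro conjI ballI allI)
    show "K \<subseteq> carrier_vec m" unfolding K_def by auto
    show "0\<^sub>v m \<in> K" unfolding K_def using mv0[OF T] by auto
  next
    fix v w assume "v \<in> K" "w \<in> K"
    then show "v + w \<in> K" unfolding K_def using T by (auto simp: mult_add_distrib_mat_vec)
  next
    fix c v assume "v \<in> K"
    then show "c \<cdot>\<^sub>v v \<in> K" unfolding K_def using T by (auto simp: mult_mat_vec)
  next
    fix g v assume g: "g \<in> carrier G" and v: "v \<in> K"
    have "T *\<^sub>v (\<sigma> g *\<^sub>v v) = (T * \<sigma> g) *\<^sub>v v" using T sD(1)[OF g] v unfolding K_def by auto
    also have "\<dots> = (\<rho> g * T) *\<^sub>v v" using inter[OF g] by simp
    also have "\<dots> = \<rho> g *\<^sub>v (T *\<^sub>v v)" using T rD(1)[OF g] v unfolding K_def by auto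
    also have "\<dots> = 0\<^sub>v n" using v mv0[OF rD(1)[OF g]] unfolding K_def by auto
    finally show "\<sigma> g *\<^sub>v v \<in> K" unfolding K_def using sD(1)[OF g] v K_def by auto
  qed
  then have Kc: "K = {0\<^sub>v m} \<or> K = carrier_vec m" using s unfolding irreducible_rep_def by blast
  have "unit_vec m j0 \<notin> K"
  proof
    assume "unit_vec m j0 \<in> K"
    then have "(T *\<^sub>v unit_vec m j0) $ i0 = 0" unfolding K_def using nz by auto
    then show False using mv_unit[OF T nz(1,2)] nz(3) by simp
  qed
  then have K0: "K = {0\<^sub>v m}" using Kc nz(2) by auto
  define I where "I = (\<lambda>v. T *\<^sub>v v) ` carrier_vec m"
  have "invariant_subspace G n \<rho> I"
    unfolding invariant_subspace_def
  proof (intro conjI ballI allI)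
    show "I \<subseteq> carrier_vec n" unfolding I_def using T by auto
    show "0\<^sub>v n \<in> I" unfolding I_def by (rule image_eqI[of _ _ "0\<^sub>v m"]) (use mv0[OF T] in auto)
  next
    fix v w assume "v \<in> I" "w \<in> I"
    then obtain v' w' where "v' \<in> carrier_vec m" "w' \<in> carrier_vec m" "v = T *\<^sub>v v'" "w = T *\<^sub>v w'"
      unfolding I_def by auto
    then have "v + w = T *\<^sub>v (v' + w')" using T by (simp add: mult_add_distrib_mat_vec)
    then show "v + w \<in> I" unfolding I_def using \<open>v' \<in> carrier_vec m\<close> \<open>w' \<in> carrier_vec m\<close> by auto
  next
    fix c v assume "v \<in> I"
    then obtain v' where "v' \<in> carrier_vec m" "v = T *\<^sub>v v'" unfolding I_def by auto
    then have "c \<cdot>\<^sub>v v = T *\<^sub>v (c \<cdot>\<^sub>v v')" using T by (simp add: mult_mat_vec)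
    then show "c \<cdot>\<^sub>v v \<in> I" unfolding I_def using \<open>v' \<in> carrier_vec m\<close> by auto
  next
    fix g v assume g: "g \<in> carrier G" and "v \<in> I"
    then obtain v' where v': "v' \<in> carrier_vec m" "v = T *\<^sub>v v'" unfolding I_def by auto
    have "\<rho> g *\<^sub>v v = (\<rho> g * T) *\<^sub>v v'" using v' T rD(1)[OF g] by auto
    also have "\<dots> = (T * \<sigma> g) *\<^sub>v v'" using inter[OF g] by simp
    also have "\<dots> = T *\<^sub>v (\<sigma> g *\<^sub>v v')" using v' T sD(1)[OF g] by auto
    finally show "\<rho> g *\<^sub>v v \<in> I" unfolding I_def using v' sD(1)[OF g] by auto
  qed
  then have Ic: "I = {0\<^sub>v n} \<or> I = carrier_vec n" using r unfolding irreducible_rep_def by blast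
  have "T *\<^sub>v unit_vec m j0 \<noteq> 0\<^sub>v n"
  proof
    assume "T *\<^sub>v unit_vec m j0 = 0\<^sub>v n"
    then have "(T *\<^sub>v unit_vec m j0) $ i0 = 0" using nz by simp
    then show False using mv_unit[OF T nz(1,2)] nz(3) by simp
  qed
  then have "I \<noteq> {0\<^sub>v n}" unfolding I_def using nz(2) by auto
  then have I1: "I = carrier_vec n" using Ic by blast
  define pre where "pre j = (SOME v. v \<in> carrier_vec m \<and> T *\<^sub>v v = unit_vec n j)" for j
  have pre: "pre j \<in> carrier_vec m \<and> T *\<^sub>v pre j = unit_vec n j" if "j < n" for j
  proof -
    have "unit_vec n j \<in> I" using I1 by simp
    then have "\<exists>v. v \<in> carrier_vec m \<and> T *\<^sub>v v = unit_vec n j" unfolding I_def by auto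
    then show ?thesis unfolding pre_def by (rule someI_ex)
  qed
  define S where "S = mat m n (\<lambda>(i, j). pre j $ i)"
  have S: "S \<in> carrier_mat m n" unfolding S_def by simp
  have colS: "col S j = pre j" if "j < n" for j
    using pre[OF that] that unfolding S_def by (intro eq_vecI) auto
  have TS: "T * S = 1\<^sub>m n"
  proof (rule eq_matI)
    fix i j assume ij: "i < dim_row (1\<^sub>m n :: complex mat)" "j < dim_col (1\<^sub>m n :: complex mat)"
    then have "(T * S) $$ (i, j) = (T *\<^sub>v col S j) $ i" using T S by simp
    also have "\<dots> = unit_vec n j $ i" using colS pre ij by simp
    finally show "(T * S) $$ (i, j) = 1\<^sub>m n $$ (i, j)" using ij by simp
  qed (use T S in auto)
  have ST: "S * T = 1\<^sub>m m"
  proof (rule eq_matI)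
    fix i j assume ij: "i < dim_row (1\<^sub>m m :: complex mat)" "j < dim_col (1\<^sub>m m :: complex mat)"
    define u where "u = S *\<^sub>v (T *\<^sub>v unit_vec m j)"
    have u: "u \<in> carrier_vec m" unfolding u_def using S T by simp
    have "T *\<^sub>v u = (T * S) *\<^sub>v (T *\<^sub>v unit_vec m j)" unfolding u_def using S T by simp
    also have "\<dots> = T *\<^sub>v unit_vec m j" using TS T by simp
    finally have "T *\<^sub>v (u - unit_vec m j) = 0\<^sub>v n"
      using T u by (simp add: mult_minus_distrib_mat_vec)
    then have "u - unit_vec m j \<in> K" unfolding K_def using u by simp
    then have "u - unit_vec m j = 0\<^sub>v m" using K0 by simp
    then have ue: "u = unit_vec m j"
    proof -
      assume eq: "u - unit_vec m j = 0\<^sub>v m"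
      show ?thesis
      proof (rule eq_vecI)
        fix i assume i: "i < dim_vec (unit_vec m j)"
        then have "(u - unit_vec m j) $ i = 0" using eq by simp
        then show "u $ i = unit_vec m j $ i" using u i by simp
      qed (use u in simp)
    qed
    have "(S * T) $$ (i, j) = ((S * T) *\<^sub>v unit_vec m j) $ i"
      by (rule mv_unit[symmetric]) (use S T ij in auto)
    also have "\<dots> = u $ i" unfolding u_def using S T by simp
    finally show "(S * T) $$ (i, j) = 1\<^sub>m m $$ (i, j)" using ue ij by simp
  qed (use T S in auto)
  fix g assume g: "g \<in> carrier G"
  have "\<sigma> g = (S * T) * \<sigma> g" using ST sD(1)[OF g] by simp
  also have "\<dots> = S * (T * \<sigma> g)" using S T sD(1)[OF g] by simp
  also have "\<dots> = S * (\<rho> g * T)" using inter[OF g] by simp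
  finally have "mat_trace (\<sigma> g) = mat_trace (S * (\<rho> g * T))" by simp
  also have "\<dots> = mat_trace ((\<rho> g * T) * S)"
    by (rule mat_trace_comm[of _ m n]) (use S T rD(1)[OF g] in auto)
  also have "(\<rho> g * T) * S = \<rho> g * (T * S)" using S T rD(1)[OF g] by simp
  also have "\<dots> = \<rho> g" using TS rD(1)[OF g] by simp
  finally show "mat_trace (\<sigma> g) = mat_trace (\<rho> g)" .
qed


lemma (in group) sum_shift:
  assumes "h \<in> carrier G"
  shows "(\<Sum>g\<in>carrier G. F (h \<otimes> g)) = (\<Sum>g\<in>carrier G. F g)"
proof (rule sum.reindex_bij_witness[where i="\<lambda>x. inv h \<otimes> x" and j="\<lambda>x. h \<otimes> x"])
qed (use assms in \<open>auto simp: m_assoc[symmetric]\<close>)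

lemma (in group) schur_char:
  assumes fin: "finite (carrier G)"
    and r: "irreducible_rep G n \<rho>" and s: "irreducible_rep G m \<sigma>"
    and nz: "(\<Sum>g\<in>carrier G. character G \<rho> g * character G \<sigma> (inv g)) \<noteq> 0"
  shows "character G \<sigma> = character G \<rho>"
proof -
  have rr: "representation G n \<rho>" and rs: "representation G m \<sigma>"
    using r s unfolding irreducible_rep_def by auto
  note rD = repD[OF rr] and sD = repD[OF rs]
  define Tm :: "nat \<Rightarrow> nat \<Rightarrow> complex mat" where "Tm i j = mat n m (\<lambda>(a, b). \<Sum>g\<in>carrier G. \<rho> g $$ (a, i) * \<sigma> (inv g) $$ (j, b))" for i j
  have Tc: "Tm i j \<in> carrier_mat n m" for i j unfolding Tm_def by simp
  have Td: "dim_row (Tm i j) = n" "dim_col (Tm i j) = m" for i j unfolding Tm_def by simp_all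
  have inter: "Tm i j * \<sigma> h = \<rho> h * Tm i j" if ij: "i < n" "j < m" and h: "h \<in> carrier G" for i j h
  proof (rule eq_matI)
    fix a b assume ab: "a < dim_row (\<rho> h * Tm i j)" "b < dim_col (\<rho> h * Tm i j)"
    then have a: "a < n" and b: "b < m" using rD(1)[OF h] Td by auto
    have "(Tm i j * \<sigma> h) $$ (a, b) = (\<Sum>c<m. Tm i j $$ (a, c) * \<sigma> h $$ (c, b))"
      using mult_entry[OF Tc sD(1)[OF h] a b] .
    also have "\<dots> = (\<Sum>c<m. \<Sum>g\<in>carrier G. \<rho> g $$ (a, i) * \<sigma> (inv g) $$ (j, c) * \<sigma> h $$ (c, b))"
      unfolding Tm_def using a by (simp add: sum_distrib_right)
    also have "\<dots> = (\<Sum>g\<in>carrier G. \<rho> g $$ (a, i) * (\<Sum>c<m. \<sigma> (inv g) $$ (j, c) * \<sigma> h $$ (c, b)))"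
      by (subst sum.swap) (simp add: sum_distrib_left mult.assoc)
    also have "\<dots> = (\<Sum>g\<in>carrier G. \<rho> g $$ (a, i) * \<sigma> (inv g \<otimes> h) $$ (j, b))"
    proof (rule sum.cong[OF refl])
      fix g assume g: "g \<in> carrier G"
      have "(\<Sum>c<m. \<sigma> (inv g) $$ (j, c) * \<sigma> h $$ (c, b)) = (\<sigma> (inv g) * \<sigma> h) $$ (j, b)"
        using mult_entry[OF sD(1)[of "inv g"] sD(1)[OF h] ij(2) b] g by simp
      also have "\<dots> = \<sigma> (inv g \<otimes> h) $$ (j, b)" using sD(3)[of "inv g" h] g h by simp
      finally show "\<rho> g $$ (a, i) * (\<Sum>c<m. \<sigma> (inv g) $$ (j, c) * \<sigma> h $$ (c, b)) =
          \<rho> g $$ (a, i) * \<sigma> (inv g \<otimes> h) $$ (j, b)" by simp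
    qed
    finally have L: "(Tm i j * \<sigma> h) $$ (a, b) = (\<Sum>g\<in>carrier G. \<rho> g $$ (a, i) * \<sigma> (inv g \<otimes> h) $$ (j, b))" .
    have "(\<rho> h * Tm i j) $$ (a, b) = (\<Sum>c<n. \<rho> h $$ (a, c) * Tm i j $$ (c, b))"
      using mult_entry[OF rD(1)[OF h] Tc a b] .
    also have "\<dots> = (\<Sum>c<n. \<Sum>g\<in>carrier G. \<rho> h $$ (a, c) * \<rho> g $$ (c, i) * \<sigma> (inv g) $$ (j, b))"
      unfolding Tm_def using b by (simp add: sum_distrib_left mult.assoc)
    also have "\<dots> = (\<Sum>g\<in>carrier G. (\<Sum>c<n. \<rho> h $$ (a, c) * \<rho> g $$ (c, i)) * \<sigma> (inv g) $$ (j, b))"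
      by (subst sum.swap) (simp add: sum_distrib_right)
    also have "\<dots> = (\<Sum>g\<in>carrier G. \<rho> (h \<otimes> g) $$ (a, i) * \<sigma> (inv g) $$ (j, b))"
    proof (rule sum.cong[OF refl])
      fix g assume g: "g \<in> carrier G"
      have "(\<Sum>c<n. \<rho> h $$ (a, c) * \<rho> g $$ (c, i)) = (\<rho> h * \<rho> g) $$ (a, i)"
        using mult_entry[OF rD(1)[OF h] rD(1)[OF g] a ij(1)] by simp
      also have "\<dots> = \<rho> (h \<otimes> g) $$ (a, i)" using rD(3)[OF h g] by simp
      finally show "(\<Sum>c<n. \<rho> h $$ (a, c) * \<rho> g $$ (c, i)) * \<sigma> (inv g) $$ (j, b) =
          \<rho> (h \<otimes> g) $$ (a, i) * \<sigma> (inv g) $$ (j, b)" by simp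
    qed
    also have "\<dots> = (\<Sum>g\<in>carrier G. \<rho> (h \<otimes> g) $$ (a, i) * \<sigma> (inv (h \<otimes> g) \<otimes> h) $$ (j, b))"
    proof (rule sum.cong[OF refl])
      fix g assume g: "g \<in> carrier G"
      have "inv (h \<otimes> g) \<otimes> h = inv g" using g h by (simp add: inv_mult_group m_assoc)
      then show "\<rho> (h \<otimes> g) $$ (a, i) * \<sigma> (inv g) $$ (j, b) =
          \<rho> (h \<otimes> g) $$ (a, i) * \<sigma> (inv (h \<otimes> g) \<otimes> h) $$ (j, b)" by simp
    qed
    also have "\<dots> = (\<Sum>g\<in>carrier G. \<rho> g $$ (a, i) * \<sigma> (inv g \<otimes> h) $$ (j, b))"
      by (rule sum_shift[OF h, of "\<lambda>x. \<rho> x $$ (a, i) * \<sigma> (inv x \<otimes> h) $$ (j, b)"])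
    finally show "(Tm i j * \<sigma> h) $$ (a, b) = (\<rho> h * Tm i j) $$ (a, b)" using L by simp
  qed (use Td rD(1)[OF h] sD(1)[OF h] in auto)
  have chr: "character G \<rho> g = (\<Sum>i<n. \<rho> g $$ (i, i))" if "g \<in> carrier G" for g
    unfolding character_def mat_trace_def using that rD(1)[OF that] by simp
  have chs: "character G \<sigma> g = (\<Sum>i<m. \<sigma> g $$ (i, i))" if "g \<in> carrier G" for g
    unfolding character_def mat_trace_def using that sD(1)[OF that] by simp
  have "(\<Sum>i<n. \<Sum>j<m. Tm i j $$ (i, j)) = (\<Sum>i<n. \<Sum>j<m. \<Sum>g\<in>carrier G. \<rho> g $$ (i, i) * \<sigma> (inv g) $$ (j, j))"
    unfolding Tm_def by simp
  also have "\<dots> = (\<Sum>i<n. \<Sum>g\<in>carrier G. \<Sum>j<m. \<rho> g $$ (i, i) * \<sigma> (inv g) $$ (j, j))"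
    by (rule sum.cong[OF refl], rule sum.swap)
  also have "\<dots> = (\<Sum>g\<in>carrier G. \<Sum>i<n. \<Sum>j<m. \<rho> g $$ (i, i) * \<sigma> (inv g) $$ (j, j))"
    by (rule sum.swap)
  also have "\<dots> = (\<Sum>g\<in>carrier G. (\<Sum>i<n. \<rho> g $$ (i, i)) * (\<Sum>j<m. \<sigma> (inv g) $$ (j, j)))"
    by (simp add: sum_product)
  also have "\<dots> = (\<Sum>g\<in>carrier G. character G \<rho> g * character G \<sigma> (inv g))"
    using chr chs by (intro sum.cong) auto
  finally have "(\<Sum>i<n. \<Sum>j<m. Tm i j $$ (i, j)) \<noteq> 0" using nz by simp
  then obtain i j where ij: "i < n" "j < m" "Tm i j $$ (i, j) \<noteq> 0"
    by (metis (no_types, lifting) lessThan_iff sum.neutral)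
  have tr: "mat_trace (\<sigma> g) = mat_trace (\<rho> g)" if "g \<in> carrier G" for g
    using schur_iso[OF r s Tc, of i j, OF inter[OF ij(1,2)] ij that] by simp
  show ?thesis
  proof
    fix g show "character G \<sigma> g = character G \<rho> g" unfolding character_def using tr by simp
  qed
qed


lemma (in group) conj_back: "g \<in> carrier G \<Longrightarrow> x \<in> carrier G \<Longrightarrow> inv g \<otimes> (g \<otimes> x \<otimes> inv g) \<otimes> g = x"
  by (simp add: m_assoc) (simp add: m_assoc[symmetric])

lemma (in group) conj_one: "g \<in> carrier G \<Longrightarrow> x \<in> carrier G \<Longrightarrow> g \<otimes> x \<otimes> inv g = \<one> \<Longrightarrow> x = \<one>"
proof -
  assume a: "g \<in> carrier G" "x \<in> carrier G" "g \<otimes> x \<otimes> inv g = \<one>"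
  have "x = inv g \<otimes> (g \<otimes> x \<otimes> inv g) \<otimes> g" using conj_back a(1,2) by simp
  also have "\<dots> = \<one>" using a by simp
  finally show ?thesis .
qed

lemma conj_coset_eq: "g <#\<^bsub>G\<^esub> H #>\<^bsub>G\<^esub> inv\<^bsub>G\<^esub> g = {g \<otimes>\<^bsub>G\<^esub> a \<otimes>\<^bsub>G\<^esub> inv\<^bsub>G\<^esub> g | a. a \<in> H}"
  unfolding l_coset_def r_coset_def by auto

locale frob = group G for G (structure) +
  fixes H
  assumes fin: "finite (carrier G)"
    and fc: "frobenius_complement G H"
    and cK: "comm_group (G\<lparr>carrier := frobenius_kernel G H\<rparr>)"
    and cH: "comm_group (G\<lparr>carrier := H\<rparr>)"
begin

abbreviation "K \<equiv> frobenius_kernel G H"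

lemma H_sub: "subgroup H G" and H_ne: "H \<noteq> carrier G" and H_nt: "H \<noteq> {\<one>}"
  and frobC: "\<And>g. g \<in> carrier G \<Longrightarrow> g \<notin> H \<Longrightarrow> H \<inter> {g \<otimes> a \<otimes> inv g | a. a \<in> H} = {\<one>}"
  using fc unfolding frobenius_complement_def by (auto simp: conj_coset_eq)

lemma Hc: "H \<subseteq> carrier G" using H_sub subgroup.subset by blast
lemma H1: "\<one> \<in> H" using H_sub subgroup.one_closed by blast
lemma Hm: "a \<in> H \<Longrightarrow> b \<in> H \<Longrightarrow> a \<otimes> b \<in> H" by (rule subgroup.m_closed[OF H_sub])
lemma Hi: "a \<in> H \<Longrightarrow> inv a \<in> H" by (rule subgroup.m_inv_closed[OF H_sub])
lemma Hcomm: "a \<in> H \<Longrightarrow> b \<in> H \<Longrightarrow> a \<otimes> b = b \<otimes> a"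
  using comm_monoid.m_comm[OF comm_group.axioms(1)[OF cH], of a b] by simp

lemma fp:
  assumes g: "g \<in> carrier G" and a: "a \<in> H" "a \<noteq> \<one>" and c: "g \<otimes> a \<otimes> inv g \<in> H"
  shows "g \<in> H"
proof (rule ccontr)
  assume "g \<notin> H"
  then have "H \<inter> {g \<otimes> a \<otimes> inv g | a. a \<in> H} = {\<one>}" using frobC g by blast
  then have "g \<otimes> a \<otimes> inv g = \<one>" using c a by blast
  then have "a = \<one>" using g a Hc conj_one by blast
  then show False using a by simp
qed

lemma K_mem: "x \<in> K \<longleftrightarrow> x = \<one> \<or> (x \<in> carrier G \<and> (\<forall>g\<in>carrier G. \<forall>a\<in>H. x \<noteq> g \<otimes> a \<otimes> inv g))"
  unfolding frobenius_kernel_def conj_coset_eq by blast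

lemma Kc: "K \<subseteq> carrier G" using K_mem by auto
lemma K1: "\<one> \<in> K" using K_mem by auto

lemma Km: "x \<in> K \<Longrightarrow> y \<in> K \<Longrightarrow> x \<otimes> y \<in> K"
  using monoid.m_closed[OF comm_monoid.axioms(1)[OF comm_group.axioms(1)[OF cK]], of x y] by simp

lemma Kcomm: "x \<in> K \<Longrightarrow> y \<in> K \<Longrightarrow> x \<otimes> y = y \<otimes> x"
  using comm_monoid.m_comm[OF comm_group.axioms(1)[OF cK], of x y] by simp

lemma Ki: "x \<in> K \<Longrightarrow> inv x \<in> K"
proof -
  assume x: "x \<in> K"
  interpret GK: comm_group "G\<lparr>carrier := K\<rparr>" by (rule cK)
  have y: "inv\<^bsub>G\<lparr>carrier := K\<rparr>\<^esub> x \<in> K" using GK.inv_closed x by simp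
  have "x \<otimes> inv\<^bsub>G\<lparr>carrier := K\<rparr>\<^esub> x = \<one>" using GK.r_inv x by simp
  then have "inv x = inv\<^bsub>G\<lparr>carrier := K\<rparr>\<^esub> x" using x y Kc
    by (metis inv_equality inv_comm subsetD)
  then show ?thesis using y by simp
qed

lemma K_sub: "subgroup K G"
  by (rule subgroupI) (use Kc K1 Km Ki in auto)

lemma K_normal: "x \<in> K \<Longrightarrow> g \<in> carrier G \<Longrightarrow> g \<otimes> x \<otimes> inv g \<in> K"
proof -
  assume x: "x \<in> K" and g: "g \<in> carrier G"
  show ?thesis
  proof (cases "x = \<one>")
    case True then show ?thesis using g K1 by simp
  next
    case False
    then have xc: "x \<in> carrier G" and nx: "\<forall>g\<in>carrier G. \<forall>a\<in>H. x \<noteq> g \<otimes> a \<otimes> inv g" using x K_mem by auto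
    have "\<forall>g'\<in>carrier G. \<forall>a\<in>H. g \<otimes> x \<otimes> inv g \<noteq> g' \<otimes> a \<otimes> inv g'"
    proof (intro ballI notI)
      fix g' a assume g': "g' \<in> carrier G" and a: "a \<in> H" and e: "g \<otimes> x \<otimes> inv g = g' \<otimes> a \<otimes> inv g'"
      have ac: "a \<in> carrier G" using a Hc by auto
      have "x = (inv g \<otimes> g') \<otimes> a \<otimes> inv (inv g \<otimes> g')"
      proof -
        have "x = inv g \<otimes> (g \<otimes> x \<otimes> inv g) \<otimes> g" using g xc by (simp add: conj_back)
        also have "\<dots> = inv g \<otimes> (g' \<otimes> a \<otimes> inv g') \<otimes> g" using e by simp
        also have "\<dots> = (inv g \<otimes> g') \<otimes> a \<otimes> inv (inv g \<otimes> g')" using g g' ac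
          by (simp add: inv_mult_group m_assoc)
        finally show ?thesis .
      qed
      then show False using nx g g' a by auto
    qed
    then show ?thesis using K_mem g xc by auto
  qed
qed

lemma KH: "x \<in> K \<Longrightarrow> x \<in> H \<Longrightarrow> x = \<one>"
proof -
  assume x: "x \<in> K" "x \<in> H"
  have "x = \<one> \<otimes> x \<otimes> inv \<one>" using x Hc by auto
  then show ?thesis using x K_mem by (metis one_closed)
qed

end

lemma (in group) lcancel: "g \<in> carrier G \<Longrightarrow> x \<in> carrier G \<Longrightarrow> y \<in> carrier G \<Longrightarrow> g \<otimes> x = g \<otimes> y \<Longrightarrow> x = y"
proof -
  assume a: "g \<in> carrier G" "x \<in> carrier G" "y \<in> carrier G" "g \<otimes> x = g \<otimes> y"
  have "x = inv g \<otimes> (g \<otimes> x)" using a by (simp add: m_assoc[symmetric])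
  also have "\<dots> = inv g \<otimes> (g \<otimes> y)" using a by simp
  also have "\<dots> = y" using a by (simp add: m_assoc[symmetric])
  finally show ?thesis .
qed

context frob begin

lemma finH: "finite H" using fin Hc finite_subset by blast
lemma finK: "finite K" using fin Kc finite_subset by blast

lemma Hcomm_conj: "c \<in> H \<Longrightarrow> a \<in> H \<Longrightarrow> c \<otimes> a \<otimes> inv c = a"
proof -
  assume c: "c \<in> H" and a: "a \<in> H"
  have cc: "c \<in> carrier G" "a \<in> carrier G" using c a Hc by auto
  have "c \<otimes> a \<otimes> inv c = a \<otimes> c \<otimes> inv c" using Hcomm[OF c a] by simp
  also have "\<dots> = a" using cc by (simp add: m_assoc)
  finally show ?thesis .
qed

lemma card_G: "card K * card H = card (carrier G)"
proof -
  define U where "U = carrier G - K"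
  define \<Phi> where "\<Phi> p = fst p \<otimes> snd p \<otimes> inv (fst p)" for p
  define A' where "A' = carrier G \<times> (H - {\<one>})"
  define fib where "fib u = {p \<in> A'. \<Phi> p = u}" for u
  have A'U: "A' = (\<Union>u\<in>U. fib u)"
  proof
    show "A' \<subseteq> (\<Union>u\<in>U. fib u)"
    proof
      fix p assume p: "p \<in> A'"
      then obtain g a where ga: "p = (g, a)" "g \<in> carrier G" "a \<in> H" "a \<noteq> \<one>" unfolding A'_def by auto
      have ac: "a \<in> carrier G" using ga Hc by auto
      have "\<Phi> p \<noteq> \<one>" using conj_one[OF ga(2) ac] ga(4) unfolding \<Phi>_def ga(1) by auto
      moreover have "\<Phi> p \<in> carrier G" unfolding \<Phi>_def ga(1) using ga(2) ac by simp
      ultimately have "\<Phi> p \<notin> K" using K_mem ga unfolding \<Phi>_def by auto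
      then have "\<Phi> p \<in> U" unfolding U_def using \<open>\<Phi> p \<in> carrier G\<close> by simp
      then show "p \<in> (\<Union>u\<in>U. fib u)" unfolding fib_def using p by auto
    qed
  qed (auto simp: fib_def)
  have fibc: "card (fib u) = card H" if u: "u \<in> U" for u
  proof -
    have "u \<noteq> \<one>" "u \<in> carrier G" using u K1 unfolding U_def by auto
    then obtain g a where ga: "g \<in> carrier G" "a \<in> H" "u = g \<otimes> a \<otimes> inv g"
      using u K_mem unfolding U_def by auto
    have ac: "a \<in> carrier G" using ga Hc by auto
    have a1: "a \<noteq> \<one>" using ga \<open>u \<noteq> \<one>\<close> by auto
    have "fib u = (\<lambda>c. (g \<otimes> c, a)) ` H"
    proof
      show "(\<lambda>c. (g \<otimes> c, a)) ` H \<subseteq> fib u"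
      proof
        fix p assume "p \<in> (\<lambda>c. (g \<otimes> c, a)) ` H"
        then obtain c where c: "c \<in> H" "p = (g \<otimes> c, a)" by auto
        have cc: "c \<in> carrier G" using c Hc by auto
        have "\<Phi> p = g \<otimes> (c \<otimes> a \<otimes> inv c) \<otimes> inv g" unfolding \<Phi>_def c(2) using ga(1) cc ac
          by (simp add: inv_mult_group m_assoc)
        also have "\<dots> = u" using Hcomm_conj[OF c(1) ga(2)] ga(3) by simp
        finally show "p \<in> fib u" unfolding fib_def A'_def using c ga(1) cc ga(2) a1 by auto
      qed
    next
      show "fib u \<subseteq> (\<lambda>c. (g \<otimes> c, a)) ` H"
      proof
        fix p assume p: "p \<in> fib u"
        obtain g' a' where pe: "p = (g', a')" by (cases p)
        have ga': "p = (g', a')" "g' \<in> carrier G" "a' \<in> H" "a' \<noteq> \<one>"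
          "g' \<otimes> a' \<otimes> inv g' = g \<otimes> a \<otimes> inv g"
          using p ga(3) unfolding pe fib_def A'_def \<Phi>_def by auto
        have a'c: "a' \<in> carrier G" using ga' Hc by auto
        define c where "c = inv g \<otimes> g'"
        have cc: "c \<in> carrier G" unfolding c_def using ga ga' by simp
        have "c \<otimes> a' \<otimes> inv c = inv g \<otimes> (g' \<otimes> a' \<otimes> inv g') \<otimes> g"
          unfolding c_def using ga(1) ga'(2) a'c by (simp add: inv_mult_group m_assoc)
        also have "\<dots> = a" using ga'(5) conj_back ga(1) ac by simp
        finally have ca: "c \<otimes> a' \<otimes> inv c = a" .
        then have cH: "c \<in> H" using fp[OF cc ga'(3) ga'(4)] ga(2) by simp
        have "a' = a" using Hcomm_conj[OF cH ga'(3)] ca by simp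
        moreover have "g' = g \<otimes> c" unfolding c_def using ga(1) ga'(2) by (simp add: m_assoc[symmetric])
        ultimately show "p \<in> (\<lambda>c. (g \<otimes> c, a)) ` H" using ga'(1) cH by auto
      qed
    qed
    moreover have "inj_on (\<lambda>c. (g \<otimes> c, a)) H"
    proof (rule inj_onI)
      fix x y assume "x \<in> H" "y \<in> H" "(g \<otimes> x, a) = (g \<otimes> y, a)"
      then show "x = y" using lcancel[OF ga(1), of x y] Hc by auto
    qed
    ultimately show ?thesis by (simp add: card_image)
  qed
  have finA': "finite A'" unfolding A'_def using fin finH by simp
  have finU: "finite U" unfolding U_def using fin by simp
  have "card A' = (\<Sum>u\<in>U. card (fib u))"
    unfolding A'U
  proof (rule card_UN_disjoint)
    show "finite U" by (rule finU)
    show "\<forall>i\<in>U. finite (fib i)" unfolding fib_def using finA' by auto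
    show "\<forall>i\<in>U. \<forall>j\<in>U. i \<noteq> j \<longrightarrow> fib i \<inter> fib j = {}" unfolding fib_def by auto
  qed
  also have "\<dots> = card U * card H" using fibc by simp
  finally have e1: "card A' = card U * card H" .
  have "card A' = card (carrier G) * (card H - 1)" unfolding A'_def using H1 finH
    by (simp add: card_cartesian_product card_Diff_singleton)
  moreover have "card U = card (carrier G) - card K" unfolding U_def using Kc finK
    by (simp add: card_Diff_subset)
  moreover have "card K \<le> card (carrier G)" using Kc fin card_mono by blast
  moreover have "1 \<le> card H" using H1 finH by (metis card_0_eq empty_iff less_one not_le)
  ultimately have "card (carrier G) * (card H - 1) = (card (carrier G) - card K) * card H" using e1 by simp
  then have "card (carrier G) * card H - card (carrier G) = card (carrier G) * card H - card K * card H"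
    by (simp add: algebra_simps diff_mult_distrib diff_mult_distrib2)
  moreover have "card K * card H \<le> card (carrier G) * card H" using \<open>card K \<le> card (carrier G)\<close> by simp
  moreover have "card (carrier G) \<le> card (carrier G) * card H" using \<open>1 \<le> card H\<close> by simp
  ultimately show ?thesis by linarith
qed

end

lemma (in group) invl_one: "a \<in> carrier G \<Longrightarrow> b \<in> carrier G \<Longrightarrow> inv b \<otimes> a = \<one> \<Longrightarrow> a = b"
proof -
  assume h: "a \<in> carrier G" "b \<in> carrier G" "inv b \<otimes> a = \<one>"
  have "a = b \<otimes> (inv b \<otimes> a)" using h(1,2) by (simp add: m_assoc[symmetric])
  then show ?thesis using h by simp
qed

lemma (in group) conj_fix_comm: "a \<in> carrier G \<Longrightarrow> x \<in> carrier G \<Longrightarrow> a \<otimes> x \<otimes> inv a = x \<Longrightarrow> a \<otimes> x = x \<otimes> a"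
proof -
  assume h: "a \<in> carrier G" "x \<in> carrier G" "a \<otimes> x \<otimes> inv a = x"
  have "a \<otimes> x = (a \<otimes> x \<otimes> inv a) \<otimes> a" using h(1,2) by (simp add: m_assoc)
  then show ?thesis using h by simp
qed

lemma (in group) comm_conj: "a \<in> carrier G \<Longrightarrow> x \<in> carrier G \<Longrightarrow> x \<otimes> a = a \<otimes> x \<Longrightarrow> x \<otimes> a \<otimes> inv x = a"
proof -
  assume h: "a \<in> carrier G" "x \<in> carrier G" "x \<otimes> a = a \<otimes> x"
  then have "x \<otimes> a \<otimes> inv x = a \<otimes> x \<otimes> inv x" by simp
  also have "\<dots> = a" using h by (simp add: m_assoc)
  finally show ?thesis .
qed

lemma (in group) lcancel_inv: "a \<in> carrier G \<Longrightarrow> b \<in> carrier G \<Longrightarrow> inv a \<otimes> (a \<otimes> b) = b"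
  by (simp add: m_assoc[symmetric])

context frob begin

lemma decomp_inj:
  assumes x: "x \<in> K" "x' \<in> K" and a: "a \<in> H" "a' \<in> H" and e: "x \<otimes> a = x' \<otimes> a'"
  shows "x = x' \<and> a = a'"
proof -
  have xc: "x \<in> carrier G" "x' \<in> carrier G" using x Kc by auto
  have ac: "a \<in> carrier G" "a' \<in> carrier G" using a Hc by auto
  define c where "c = inv x' \<otimes> x"
  have cK: "c \<in> K" unfolding c_def using x Ki Km by simp
  have cc: "c \<in> carrier G" using cK Kc by auto
  have "x' \<otimes> (c \<otimes> a) = x' \<otimes> a'" unfolding c_def using e xc ac by (simp add: m_assoc[symmetric])
  then have ca: "c \<otimes> a = a'" using lcancel[OF xc(2)] cc ac by simp
  then have "c = a' \<otimes> inv a" using cc ac by (metis inv_solve_right)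
  then have "c \<in> H" using a Hm Hi by simp
  then have "c = \<one>" using KH cK by simp
  then have "a = a'" using ca ac by simp
  moreover have "x = x'" using \<open>c = \<one>\<close> invl_one[OF xc(1) xc(2)] unfolding c_def by simp
  ultimately show ?thesis by simp
qed

lemma decomp: "g \<in> carrier G \<Longrightarrow> \<exists>x\<in>K. \<exists>a\<in>H. g = x \<otimes> a"
proof -
  assume g: "g \<in> carrier G"
  let ?m = "\<lambda>p. fst p \<otimes> snd p"
  have inj: "inj_on ?m (K \<times> H)"
  proof (rule inj_onI)
    fix p q assume "p \<in> K \<times> H" "q \<in> K \<times> H" "?m p = ?m q"
    then show "p = q" using decomp_inj[of "fst p" "fst q" "snd p" "snd q"] by (auto simp: prod_eq_iff)
  qed
  have sub: "?m ` (K \<times> H) \<subseteq> carrier G" using Kc Hc by (auto intro!: m_closed)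
  have "card (?m ` (K \<times> H)) = card (carrier G)"
    using card_image[OF inj] card_G by (simp add: card_cartesian_product)
  then have "?m ` (K \<times> H) = carrier G" using card_subset_eq[OF fin sub] by simp
  then show ?thesis using g by force
qed

definition pi where "pi g = (THE a. a \<in> H \<and> (\<exists>x\<in>K. g = x \<otimes> a))"

lemma pi_eq: "x \<in> K \<Longrightarrow> a \<in> H \<Longrightarrow> pi (x \<otimes> a) = a"
  unfolding pi_def
proof (rule the_equality)
  assume "x \<in> K" "a \<in> H"
  then show "a \<in> H \<and> (\<exists>x'\<in>K. x \<otimes> a = x' \<otimes> a)" by auto
next
  fix b assume x: "x \<in> K" and a: "a \<in> H" and b: "b \<in> H \<and> (\<exists>x'\<in>K. x \<otimes> a = x' \<otimes> b)"
  then show "b = a" using decomp_inj by metis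
qed

lemma pi_H: "g \<in> carrier G \<Longrightarrow> pi g \<in> H"
  using decomp pi_eq by metis

lemma pi_K: "g \<in> carrier G \<Longrightarrow> g \<otimes> inv (pi g) \<in> K"
proof -
  assume g: "g \<in> carrier G"
  obtain x a where xa: "x \<in> K" "a \<in> H" "g = x \<otimes> a" using decomp[OF g] by blast
  have "pi g = a" using pi_eq xa by simp
  then show ?thesis using xa Kc Hc by (simp add: m_assoc subsetD)
qed

lemma pi_decomp: "g \<in> carrier G \<Longrightarrow> g = (g \<otimes> inv (pi g)) \<otimes> pi g"
  using pi_H Hc by (simp add: m_assoc subsetD)

lemma pi_onH: "a \<in> H \<Longrightarrow> pi a = a"
  using pi_eq[OF K1] Hc by (metis l_one subsetD)

lemma pi_onK: "x \<in> K \<Longrightarrow> pi x = \<one>"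
  using pi_eq[OF _ H1] Kc by (metis r_one subsetD)

lemma pi_one_iff: "g \<in> carrier G \<Longrightarrow> pi g = \<one> \<longleftrightarrow> g \<in> K"
  using pi_K pi_onK by (metis inv_one r_one)

lemma pi_mult:
  assumes g: "g \<in> carrier G" and h: "h \<in> carrier G"
  shows "pi (g \<otimes> h) = pi g \<otimes> pi h"
proof -
  define x a y b where "x = g \<otimes> inv (pi g)" "a = pi g" "y = h \<otimes> inv (pi h)" "b = pi h"
  have xa: "x \<in> K" "a \<in> H" "y \<in> K" "b \<in> H" unfolding x_a_y_b_def using pi_K pi_H g h by auto
  have c: "x \<in> carrier G" "a \<in> carrier G" "y \<in> carrier G" "b \<in> carrier G" using xa Kc Hc by auto
  have "g \<otimes> h = (x \<otimes> a) \<otimes> (y \<otimes> b)" unfolding x_a_y_b_def using pi_decomp g h by simp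
  also have "\<dots> = (x \<otimes> (a \<otimes> y \<otimes> inv a)) \<otimes> (a \<otimes> b)" using c by (simp add: m_assoc lcancel_inv)
  finally have e: "g \<otimes> h = (x \<otimes> (a \<otimes> y \<otimes> inv a)) \<otimes> (a \<otimes> b)" .
  have "x \<otimes> (a \<otimes> y \<otimes> inv a) \<in> K" using K_normal[OF xa(3) c(2)] Km xa(1) by simp
  then show ?thesis using e pi_eq Hm xa x_a_y_b_def by simp
qed

lemma pi_inv: "g \<in> carrier G \<Longrightarrow> pi (inv g) = inv (pi g)"
proof -
  assume g: "g \<in> carrier G"
  have "pi g \<otimes> pi (inv g) = \<one>" using pi_mult[OF g inv_closed[OF g]] pi_onK[OF K1] g by simp
  then show ?thesis using pi_H g Hc by (metis inv_closed inv_equality inv_comm subsetD)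
qed

lemma fpf:
  assumes x: "x \<in> K" "x \<noteq> \<one>" and a: "a \<in> H" and e: "a \<otimes> x \<otimes> inv a = x"
  shows "a = \<one>"
proof (rule ccontr)
  assume a1: "a \<noteq> \<one>"
  have xc: "x \<in> carrier G" and ac: "a \<in> carrier G" using x a Kc Hc by auto
  have "x \<otimes> a \<otimes> inv x = a"
    using comm_conj[OF ac xc] conj_fix_comm[OF ac xc e] by simp
  then have "x \<in> H" using fp[OF xc a a1] a by simp
  then show False using KH x by simp
qed

lemma orbit_inj:
  assumes x: "x \<in> K" "x \<noteq> \<one>" and ab: "a \<in> H" "b \<in> H" and e: "a \<otimes> x \<otimes> inv a = b \<otimes> x \<otimes> inv b"
  shows "a = b"
proof -
  have xc: "x \<in> carrier G" and ac: "a \<in> carrier G" "b \<in> carrier G" using x ab Kc Hc by auto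
  define c where "c = inv b \<otimes> a"
  have cH: "c \<in> H" unfolding c_def using ab Hm Hi by simp
  have "c \<otimes> x \<otimes> inv c = inv b \<otimes> (a \<otimes> x \<otimes> inv a) \<otimes> b" unfolding c_def using xc ac
    by (simp add: inv_mult_group m_assoc)
  also have "\<dots> = x" using e conj_back ac(2) xc by simp
  finally have "c = \<one>" using fpf[OF x cH] by simp
  then show ?thesis unfolding c_def using ac invl_one by simp
qed

lemma Kconj_inj:
  assumes a: "a \<in> H" "a \<noteq> \<one>" and xy: "x \<in> K" "y \<in> K" and e: "x \<otimes> a \<otimes> inv x = y \<otimes> a \<otimes> inv y"
  shows "x = y"
proof -
  have ac: "a \<in> carrier G" and xc: "x \<in> carrier G" "y \<in> carrier G" using xy a Kc Hc by auto
  define c where "c = inv y \<otimes> x"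
  have cK: "c \<in> K" unfolding c_def using xy Km Ki by simp
  have cc: "c \<in> carrier G" using cK Kc by auto
  have "c \<otimes> a \<otimes> inv c = inv y \<otimes> (x \<otimes> a \<otimes> inv x) \<otimes> y" unfolding c_def using xc ac
    by (simp add: inv_mult_group m_assoc)
  also have "\<dots> = a" using e conj_back xc(2) ac by simp
  finally have "c \<in> H" using fp[OF cc a] a by simp
  then have "c = \<one>" using KH cK by simp
  then show ?thesis unfolding c_def using xc invl_one by simp
qed

end

lemma (in group) conj_class_sub: "x \<in> carrier G \<Longrightarrow> conj_class G x \<subseteq> carrier G"
  unfolding conj_class_def by auto

lemma (in group) conj_class_self: "x \<in> carrier G \<Longrightarrow> x \<in> conj_class G x"
  unfolding conj_class_def by (rule CollectI, rule exI[of _ \<one>]) simp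

lemma (in group) conj_class_conj:
  assumes y: "y \<in> carrier G" and a: "a \<in> carrier G"
  shows "conj_class G (y \<otimes> a \<otimes> inv y) = conj_class G a"
proof
  show "conj_class G (y \<otimes> a \<otimes> inv y) \<subseteq> conj_class G a"
  proof
    fix z assume "z \<in> conj_class G (y \<otimes> a \<otimes> inv y)"
    then obtain g where g: "g \<in> carrier G" "z = g \<otimes> (y \<otimes> a \<otimes> inv y) \<otimes> inv g" unfolding conj_class_def by auto
    have "z = (g \<otimes> y) \<otimes> a \<otimes> inv (g \<otimes> y)" using g y a by (simp add: m_assoc inv_mult_group)
    then show "z \<in> conj_class G a" unfolding conj_class_def using g y by blast
  qed
next
  show "conj_class G a \<subseteq> conj_class G (y \<otimes> a \<otimes> inv y)"
  proof
    fix z assume "z \<in> conj_class G a"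
    then obtain g where g: "g \<in> carrier G" "z = g \<otimes> a \<otimes> inv g" unfolding conj_class_def by auto
    have "z = (g \<otimes> inv y) \<otimes> (y \<otimes> a \<otimes> inv y) \<otimes> inv (g \<otimes> inv y)" using g y a
      by (simp add: m_assoc inv_mult_group lcancel_inv)
    then show "z \<in> conj_class G (y \<otimes> a \<otimes> inv y)" unfolding conj_class_def using g y by blast
  qed
qed

lemma (in group) conj_class_mem_eq:
  assumes x: "x \<in> carrier G" and y: "y \<in> conj_class G x"
  shows "conj_class G y = conj_class G x"
proof -
  obtain g where g: "g \<in> carrier G" "y = g \<otimes> x \<otimes> inv g" using y unfolding conj_class_def by auto
  then show ?thesis using conj_class_conj[OF g(1) x] by simp
qed

lemma (in group) sum_classes:
  assumes fin: "finite (carrier G)"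
  shows "(\<Sum>C\<in>conj_classes G. real (card C) * F C) = (\<Sum>g\<in>carrier G. F (conj_class G g))"
proof -
  have ft: "finite (conj_classes G)" unfolding conj_classes_def using fin by simp
  have "(\<Sum>g\<in>carrier G. F (conj_class G g)) =
      (\<Sum>C\<in>conj_classes G. \<Sum>g\<in>{g \<in> carrier G. conj_class G g = C}. F (conj_class G g))"
    by (rule sum.group[symmetric]) (use fin ft in \<open>auto simp: conj_classes_def\<close>)
  also have "\<dots> = (\<Sum>C\<in>conj_classes G. real (card C) * F C)"
  proof (rule sum.cong[OF refl])
    fix C assume "C \<in> conj_classes G"
    then obtain x where x: "x \<in> carrier G" "C = conj_class G x" unfolding conj_classes_def by auto
    have "{g \<in> carrier G. conj_class G g = C} = C"
    proof
      show "{g \<in> carrier G. conj_class G g = C} \<subseteq> C" using x conj_class_self by auto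
      show "C \<subseteq> {g \<in> carrier G. conj_class G g = C}"
        using x conj_class_mem_eq conj_class_sub by blast
    qed
    then have "(\<Sum>g\<in>{g \<in> carrier G. conj_class G g = C}. F (conj_class G g)) = (\<Sum>g\<in>C. F C)"
      using x conj_class_mem_eq by (intro sum.cong) auto
    then show "(\<Sum>g\<in>{g \<in> carrier G. conj_class G g = C}. F (conj_class G g)) = real (card C) * F C"
      by simp
  qed
  finally show ?thesis by simp
qed

context frob begin

lemma Kconj_fix: "y \<in> K \<Longrightarrow> z \<in> K \<Longrightarrow> y \<otimes> z \<otimes> inv y = z"
  using comm_conj Kcomm Kc by (metis subsetD)

lemma class_K:
  assumes x: "x \<in> K"
  shows "conj_class G x = (\<lambda>a. a \<otimes> x \<otimes> inv a) ` H"
proof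
  show "conj_class G x \<subseteq> (\<lambda>a. a \<otimes> x \<otimes> inv a) ` H"
  proof
    fix z assume "z \<in> conj_class G x"
    then obtain g where g: "g \<in> carrier G" "z = g \<otimes> x \<otimes> inv g" unfolding conj_class_def by auto
    define y a where "y = g \<otimes> inv (pi g)" "a = pi g"
    have ya: "y \<in> K" "a \<in> H" unfolding y_a_def using pi_K pi_H g by auto
    have c: "y \<in> carrier G" "a \<in> carrier G" "x \<in> carrier G" using ya x Kc Hc by auto
    have "z = y \<otimes> (a \<otimes> x \<otimes> inv a) \<otimes> inv y"
      using g pi_decomp[OF g(1)] c unfolding y_a_def by (metis inv_mult_group m_assoc m_closed inv_closed)
    also have "\<dots> = a \<otimes> x \<otimes> inv a" using Kconj_fix[OF ya(1) K_normal[OF x c(2)]] by simp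
    finally show "z \<in> (\<lambda>a. a \<otimes> x \<otimes> inv a) ` H" using ya by auto
  qed
  show "(\<lambda>a. a \<otimes> x \<otimes> inv a) ` H \<subseteq> conj_class G x" unfolding conj_class_def using Hc by auto
qed

lemma card_class_K: "x \<in> K \<Longrightarrow> x \<noteq> \<one> \<Longrightarrow> card (conj_class G x) = card H"
  using class_K card_image orbit_inj by (metis (mono_tags, lifting) inj_onI)

lemma class_H:
  assumes a: "a \<in> H"
  shows "conj_class G a = (\<lambda>y. y \<otimes> a \<otimes> inv y) ` K"
proof
  show "conj_class G a \<subseteq> (\<lambda>y. y \<otimes> a \<otimes> inv y) ` K"
  proof
    fix z assume "z \<in> conj_class G a"
    then obtain g where g: "g \<in> carrier G" "z = g \<otimes> a \<otimes> inv g" unfolding conj_class_def by auto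
    define y b where "y = g \<otimes> inv (pi g)" "b = pi g"
    have yb: "y \<in> K" "b \<in> H" unfolding y_b_def using pi_K pi_H g by auto
    have c: "y \<in> carrier G" "b \<in> carrier G" "a \<in> carrier G" using yb a Kc Hc by auto
    have "z = y \<otimes> (b \<otimes> a \<otimes> inv b) \<otimes> inv y"
      using g pi_decomp[OF g(1)] c unfolding y_b_def by (metis inv_mult_group m_assoc m_closed inv_closed)
    also have "\<dots> = y \<otimes> a \<otimes> inv y" using Hcomm_conj[OF yb(2) a] by simp
    finally show "z \<in> (\<lambda>y. y \<otimes> a \<otimes> inv y) ` K" using yb by auto
  qed
  show "(\<lambda>y. y \<otimes> a \<otimes> inv y) ` K \<subseteq> conj_class G a" unfolding conj_class_def using Kc by auto
qed

lemma card_class_H: "a \<in> H \<Longrightarrow> a \<noteq> \<one> \<Longrightarrow> card (conj_class G a) = card K"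
  using class_H card_image Kconj_inj by (metis (mono_tags, lifting) inj_onI)

lemma notK_conj:
  assumes g: "g \<in> carrier G" "g \<notin> K"
  shows "\<exists>y\<in>carrier G. \<exists>a\<in>H. a \<noteq> \<one> \<and> g = y \<otimes> a \<otimes> inv y"
proof -
  have "g \<noteq> \<one>" using g K1 by auto
  then obtain y a where ya: "y \<in> carrier G" "a \<in> H" "g = y \<otimes> a \<otimes> inv y" using g K_mem by auto
  have "a \<noteq> \<one>" using ya \<open>g \<noteq> \<one>\<close> by auto
  then show ?thesis using ya by blast
qed

lemma card_class_notK: "g \<in> carrier G \<Longrightarrow> g \<notin> K \<Longrightarrow> card (conj_class G g) = card K"
  using notK_conj conj_class_conj card_class_H Hc by (metis subsetD)

lemma class_one: "conj_class G \<one> = {\<one>}"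
  unfolding conj_class_def by (auto intro: exI[of _ \<one>])

end

lemma mat11_mult: "mat 1 1 (\<lambda>_. a) * mat 1 1 (\<lambda>_. b) = mat 1 1 (\<lambda>_. (a::complex) * b)"
  by (rule eq_matI) (auto simp: scalar_prod_def)

lemma irr_dim1:
  assumes "representation G 1 \<rho>"
  shows "irreducible_rep G 1 \<rho>"
  unfolding irreducible_rep_def
proof (intro conjI allI impI assms)
  fix W assume W: "invariant_subspace G 1 \<rho> W"
  have Wc: "W \<subseteq> carrier_vec 1" and sc: "\<And>c v. v \<in> W \<Longrightarrow> c \<cdot>\<^sub>v v \<in> W"
    using W unfolding invariant_subspace_def by auto
  show "W = {0\<^sub>v 1} \<or> W = carrier_vec 1"
  proof (cases "\<exists>v\<in>W. v \<noteq> 0\<^sub>v 1")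
    case True
    then obtain v where v: "v \<in> W" "v \<noteq> 0\<^sub>v 1" by blast
    have vc: "v \<in> carrier_vec 1" using v Wc by auto
    have v0: "v $ 0 \<noteq> 0"
    proof
      assume "v $ 0 = 0"
      then have "v = 0\<^sub>v 1" using vc by (intro eq_vecI) auto
      then show False using v by simp
    qed
    have "carrier_vec 1 \<subseteq> W"
    proof
      fix w :: "complex vec" assume w: "w \<in> carrier_vec 1"
      have "w = (w $ 0 / v $ 0) \<cdot>\<^sub>v v" using w vc v0 by (intro eq_vecI) auto
      then show "w \<in> W" using sc[OF v(1)] by metis
    qed
    then show ?thesis using Wc by blast
  next
    case False
    then have "W \<subseteq> {0\<^sub>v 1}" by auto
    moreover have "0\<^sub>v 1 \<in> W" using W unfolding invariant_subspace_def by auto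
    ultimately show ?thesis by blast
  qed
qed simp

context frob begin

abbreviation "LH \<equiv> dual (G\<lparr>carrier := H\<rparr>)"
abbreviation "LK \<equiv> dual (G\<lparr>carrier := K\<rparr>)"

lemma fabH: "fab (G\<lparr>carrier := H\<rparr>)" unfolding fab_def fab_axioms_def using cH finH by simp
lemma fabK: "fab (G\<lparr>carrier := K\<rparr>)" unfolding fab_def fab_axioms_def using cK finK by simp

lemma LHD: "\<mu> \<in> LH \<Longrightarrow> \<mu> \<one> = 1 \<and> (\<forall>a\<in>H. \<forall>b\<in>H. \<mu> (a \<otimes> b) = \<mu> a * \<mu> b) \<and> (\<forall>x. x \<notin> H \<longrightarrow> \<mu> x = 0)"
  unfolding dual_def by simp
lemma LKD: "la \<in> LK \<Longrightarrow> la \<one> = 1 \<and> (\<forall>a\<in>K. \<forall>b\<in>K. la (a \<otimes> b) = la a * la b) \<and> (\<forall>x. x \<notin> K \<longrightarrow> la x = 0)"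
  unfolding dual_def by simp

definition linrep :: "('a \<Rightarrow> complex) \<Rightarrow> 'a \<Rightarrow> complex mat" where
  "linrep \<mu> g = mat 1 1 (\<lambda>_. \<mu> (pi g))"

definition lin :: "('a \<Rightarrow> complex) \<Rightarrow> 'a \<Rightarrow> complex" where
  "lin \<mu> g = (if g \<in> carrier G then \<mu> (pi g) else 0)"

lemma pi_one: "pi \<one> = \<one>" using pi_onK[OF K1] .

lemma linrep_irr: "\<mu> \<in> LH \<Longrightarrow> irreducible_rep G 1 (linrep \<mu>)"
proof (rule irr_dim1)
  assume m: "\<mu> \<in> LH"
  show "representation G 1 (linrep \<mu>)"
    unfolding representation_def
  proof (intro conjI ballI)
    show "linrep \<mu> \<one> = 1\<^sub>m 1" unfolding linrep_def using LHD[OF m] pi_one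
      by (intro eq_matI) auto
  next
    fix x y assume x: "x \<in> carrier G" and y: "y \<in> carrier G"
    have "\<mu> (pi (x \<otimes> y)) = \<mu> (pi x) * \<mu> (pi y)" using pi_mult[OF x y] LHD[OF m] pi_H x y by simp
    then show "linrep \<mu> (x \<otimes> y) = linrep \<mu> x * linrep \<mu> y" unfolding linrep_def mat11_mult by simp
  qed (simp add: linrep_def)
qed

lemma lin_char: "character G (linrep \<mu>) = lin \<mu>"
  unfolding character_def lin_def linrep_def mat_trace_def by auto

lemma lin_Irr: assumes "\<mu> \<in> LH" shows "lin \<mu> \<in> Irr G"
proof -
  have "irreducible_rep G 1 (linrep \<mu>)" using linrep_irr[OF assms] .
  moreover have "lin \<mu> = character G (linrep \<mu>)" using lin_char by simp
  ultimately show ?thesis unfolding Irr_def by blast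
qed

end

lemma sum_single:
  assumes "finite S" "l0 \<in> S" "\<And>l. l \<in> S \<Longrightarrow> l \<noteq> l0 \<Longrightarrow> f l = 0"
  shows "sum f S = (f l0 :: complex)"
proof -
  have "sum f S = f l0 + sum f (S - {l0})" using assms(1,2) by (rule sum.remove)
  also have "sum f (S - {l0}) = 0" using assms(3) by (intro sum.neutral) auto
  finally show ?thesis by simp
qed

lemma inv_sum_closed:
  assumes W: "invariant_subspace G n \<rho> W" and fS: "finite S" and f: "\<And>x. x \<in> S \<Longrightarrow> f x \<in> W"
  shows "vec n (\<lambda>l. \<Sum>x\<in>S. f x $ l) \<in> W"
  using fS f
proof (induction S rule: finite_induct)
  case empty
  have "vec n (\<lambda>l. \<Sum>x\<in>{}. f x $ l) = 0\<^sub>v n" by (intro eq_vecI) auto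
  then show ?case using W unfolding invariant_subspace_def by simp
next
  case (insert y S)
  have Wc: "W \<subseteq> carrier_vec n" and add: "\<And>v w. v \<in> W \<Longrightarrow> w \<in> W \<Longrightarrow> v + w \<in> W"
    using W unfolding invariant_subspace_def by auto
  have fy: "f y \<in> W" using insert by simp
  have IH: "vec n (\<lambda>l. \<Sum>x\<in>S. f x $ l) \<in> W" using insert by simp
  have "vec n (\<lambda>l. \<Sum>x\<in>insert y S. f x $ l) = f y + vec n (\<lambda>l. \<Sum>x\<in>S. f x $ l)"
    using insert fy Wc by (intro eq_vecI) auto
  then show ?case using add[OF fy IH] by simp
qed

lemma (in group) lcancel_inv2: "a \<in> carrier G \<Longrightarrow> b \<in> carrier G \<Longrightarrow> a \<otimes> (inv a \<otimes> b) = b"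
  by (simp add: m_assoc[symmetric])

context frob begin

abbreviation "hh \<equiv> card H"

definition en :: "nat \<Rightarrow> 'a" where "en = (SOME e. bij_betw e {..<card H} H)"

lemma en_bij: "bij_betw en {..<hh} H"
proof -
  have "\<exists>e. bij_betw e {..<card H} H" using ex_bij_betw_nat_finite[OF finH] by (simp add: atLeast0LessThan)
  then show ?thesis unfolding en_def by (rule someI_ex)
qed

lemma en_H: "i < hh \<Longrightarrow> en i \<in> H" using en_bij bij_betwE by blast
lemma en_c: "i < hh \<Longrightarrow> en i \<in> carrier G" using en_H Hc by blast
lemma en_inj: "i < hh \<Longrightarrow> j < hh \<Longrightarrow> en i = en j \<Longrightarrow> i = j"
  using en_bij unfolding bij_betw_def inj_on_def by blast
lemma en_surj: "a \<in> H \<Longrightarrow> \<exists>i<hh. en i = a"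
  using en_bij unfolding bij_betw_def by force

lemma hh_pos: "0 < hh" using H1 finH card_gt_0_iff by blast

definition cj :: "'a \<Rightarrow> ('a \<Rightarrow> complex) \<Rightarrow> 'a \<Rightarrow> complex" where
  "cj a la = (\<lambda>x. if x \<in> K then la (inv a \<otimes> x \<otimes> a) else 0)"

lemma conjK_iff: "a \<in> carrier G \<Longrightarrow> x \<in> carrier G \<Longrightarrow> inv a \<otimes> x \<otimes> a \<in> K \<longleftrightarrow> x \<in> K"
proof
  assume a: "a \<in> carrier G" "x \<in> carrier G" "inv a \<otimes> x \<otimes> a \<in> K"
  have "a \<otimes> (inv a \<otimes> x \<otimes> a) \<otimes> inv a = x" using a by (simp add: m_assoc lcancel_inv lcancel_inv2)
  then show "x \<in> K" using K_normal[OF a(3) a(1)] by simp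
next
  assume a: "a \<in> carrier G" "x \<in> carrier G" "x \<in> K"
  show "inv a \<otimes> x \<otimes> a \<in> K" using K_normal[OF a(3) inv_closed[OF a(1)]] a by simp
qed

lemma cj_LK: assumes a: "a \<in> H" and la: "la \<in> LK" shows "cj a la \<in> LK"
proof -
  have ac: "a \<in> carrier G" using a Hc by auto
  have D: "la \<one> = 1" "\<And>x y. x \<in> K \<Longrightarrow> y \<in> K \<Longrightarrow> la (x \<otimes> y) = la x * la y"
    using LKD[OF la] by auto
  show ?thesis unfolding dual_def
  proof (simp, intro conjI ballI allI impI)
    show "cj a la \<one> = 1" unfolding cj_def using K1 ac D(1) by simp
  next
    fix x y assume x: "x \<in> K" and y: "y \<in> K"
    have c: "x \<in> carrier G" "y \<in> carrier G" using x y Kc by auto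
    have "inv a \<otimes> (x \<otimes> y) \<otimes> a = (inv a \<otimes> x \<otimes> a) \<otimes> (inv a \<otimes> y \<otimes> a)"
      using c ac by (simp add: m_assoc lcancel_inv lcancel_inv2)
    moreover have "inv a \<otimes> x \<otimes> a \<in> K" "inv a \<otimes> y \<otimes> a \<in> K" using conjK_iff ac c x y by auto
    ultimately show "cj a la (x \<otimes> y) = cj a la x * cj a la y" unfolding cj_def using x y Km D(2) by simp
  next
    fix x assume "x \<notin> K" then show "cj a la x = 0" unfolding cj_def by simp
  qed
qed

definition indrep :: "('a \<Rightarrow> complex) \<Rightarrow> 'a \<Rightarrow> complex mat" where
  "indrep la g = mat hh hh (\<lambda>(i, j). la (inv (en i) \<otimes> g \<otimes> en j))"

definition ind :: "('a \<Rightarrow> complex) \<Rightarrow> 'a \<Rightarrow> complex" where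
  "ind la g = (if g \<in> carrier G then \<Sum>a\<in>H. la (inv a \<otimes> g \<otimes> a) else 0)"

lemma unique_l:
  assumes g: "g \<in> carrier G" and i: "i < hh"
  shows "\<exists>l0<hh. inv (en i) \<otimes> g \<otimes> en l0 \<in> K \<and> (\<forall>l<hh. inv (en i) \<otimes> g \<otimes> en l \<in> K \<longrightarrow> l = l0)"
proof -
  define z where "z = inv (en i) \<otimes> g"
  have zc: "z \<in> carrier G" unfolding z_def using g en_c[OF i] by simp
  obtain l0 where l0: "l0 < hh" "en l0 = inv (pi z)" using en_surj Hi pi_H[OF zc] by blast
  have "z \<otimes> en l0 \<in> K" using pi_K[OF zc] l0 by simp
  moreover have "l = l0" if l: "l < hh" "z \<otimes> en l \<in> K" for l
  proof -
    have "pi (z \<otimes> en l) = \<one>" using pi_onK[OF l(2)] .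
    then have "pi z \<otimes> en l = \<one>" using pi_mult[OF zc en_c[OF l(1)]] pi_onH[OF en_H[OF l(1)]] by simp
    then have "en l = inv (pi z)" using pi_H[OF zc] Hc en_c[OF l(1)]
      by (metis inv_equality inv_comm subsetD)
    then show ?thesis using l0 l en_inj by simp
  qed
  ultimately show ?thesis using l0(1) unfolding z_def by blast
qed

lemma en_cross: "i < hh \<Longrightarrow> j < hh \<Longrightarrow> inv (en i) \<otimes> en j \<in> K \<longleftrightarrow> i = j"
proof
  assume ij: "i < hh" "j < hh" "inv (en i) \<otimes> en j \<in> K"
  have "inv (en i) \<otimes> en j \<in> H" using en_H ij Hm Hi by simp
  then have "inv (en i) \<otimes> en j = \<one>" using KH ij by simp
  then have "en j = en i" using invl_one en_c ij by simp
  then show "i = j" using en_inj ij by simp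
next
  assume "i < hh" "j < hh" "i = j"
  then show "inv (en i) \<otimes> en j \<in> K" using en_c K1 by simp
qed

lemma la_cross: "la \<in> LK \<Longrightarrow> i < hh \<Longrightarrow> j < hh \<Longrightarrow> la (inv (en i) \<otimes> en j) = (if i = j then 1 else 0)"
  using en_cross[of i j] LKD[of la] en_c by auto

lemma indrep_rep: assumes la: "la \<in> LK" shows "representation G hh (indrep la)"
  unfolding representation_def
proof (intro conjI ballI)
  show "indrep la \<one> = 1\<^sub>m hh" unfolding indrep_def using la_cross[OF la] en_c by (intro eq_matI) auto
next
  fix x y assume x: "x \<in> carrier G" and y: "y \<in> carrier G"
  show "indrep la (x \<otimes> y) = indrep la x * indrep la y"
  proof (rule eq_matI)
    fix i j assume "i < dim_row (indrep la x * indrep la y)" "j < dim_col (indrep la x * indrep la y)"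
    then have i: "i < hh" and j: "j < hh" unfolding indrep_def by auto
    obtain l0 where l0: "l0 < hh" "inv (en i) \<otimes> x \<otimes> en l0 \<in> K"
      "\<And>l. l < hh \<Longrightarrow> inv (en i) \<otimes> x \<otimes> en l \<in> K \<Longrightarrow> l = l0"
      using unique_l[OF x i] by blast
    have "(indrep la x * indrep la y) $$ (i, j) =
        (\<Sum>l<hh. la (inv (en i) \<otimes> x \<otimes> en l) * la (inv (en l) \<otimes> y \<otimes> en j))"
      using mult_entry[of "indrep la x" hh hh "indrep la y" hh i j] i j unfolding indrep_def by simp
    also have "\<dots> = la (inv (en i) \<otimes> x \<otimes> en l0) * la (inv (en l0) \<otimes> y \<otimes> en j)"
    proof (rule sum_single)
      fix l assume "l \<in> {..<hh}" "l \<noteq> l0"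
      then have "inv (en i) \<otimes> x \<otimes> en l \<notin> K" using l0(3) by auto
      then show "la (inv (en i) \<otimes> x \<otimes> en l) * la (inv (en l) \<otimes> y \<otimes> en j) = 0" using LKD[OF la] by simp
    qed (simp_all add: l0(1))
    also have "\<dots> = la (inv (en i) \<otimes> (x \<otimes> y) \<otimes> en j)"
    proof -
      define p q where "p = inv (en i) \<otimes> x \<otimes> en l0" "q = inv (en l0) \<otimes> y \<otimes> en j"
      have pc: "p \<in> carrier G" "q \<in> carrier G" unfolding p_q_def using x y en_c i j l0(1) by auto
      have pq: "p \<otimes> q = inv (en i) \<otimes> (x \<otimes> y) \<otimes> en j" unfolding p_q_def
        using x y en_c[OF i] en_c[OF j] en_c[OF l0(1)] by (simp add: m_assoc lcancel_inv lcancel_inv2)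
      have pK: "p \<in> K" using l0(2) p_q_def by simp
      have "la p * la q = la (p \<otimes> q)"
      proof (cases "q \<in> K")
        case True
        then show ?thesis using LKD[OF la] pK by simp
      next
        case False
        have "p \<otimes> q \<notin> K"
        proof
          assume "p \<otimes> q \<in> K"
          then have "inv p \<otimes> (p \<otimes> q) \<in> K" using Km Ki pK by simp
          then show False using False pc by (simp add: lcancel_inv)
        qed
        then show ?thesis using False LKD[OF la] by simp
      qed
      then show ?thesis using pq unfolding p_q_def by simp
    qed
    finally show "indrep la (x \<otimes> y) $$ (i, j) = (indrep la x * indrep la y) $$ (i, j)"
      unfolding indrep_def using i j by simp
  qed (simp_all add: indrep_def)
qed (simp add: indrep_def)

lemma ind_char: "character G (indrep la) = ind la"
proof
  fix g show "character G (indrep la) g = ind la g"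
  proof (cases "g \<in> carrier G")
    case True
    have "mat_trace (indrep la g) = (\<Sum>i<hh. la (inv (en i) \<otimes> g \<otimes> en i))"
      unfolding mat_trace_def indrep_def by simp
    also have "\<dots> = (\<Sum>a\<in>H. la (inv a \<otimes> g \<otimes> a))"
      using sum.reindex_bij_betw[OF en_bij, of "\<lambda>a. la (inv a \<otimes> g \<otimes> a)"] by simp
    finally show ?thesis unfolding character_def ind_def using True by simp
  qed (simp add: character_def ind_def)
qed

end

context frob begin

lemma fpf2: "z \<in> K \<Longrightarrow> c \<in> H \<Longrightarrow> c \<noteq> \<one> \<Longrightarrow> inv c \<otimes> z \<otimes> c = z \<Longrightarrow> z = \<one>"
proof (rule ccontr)
  assume a: "z \<in> K" "c \<in> H" "c \<noteq> \<one>" "inv c \<otimes> z \<otimes> c = z" "z \<noteq> \<one>"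
  have "inv c \<otimes> z \<otimes> inv (inv c) = z" using a Hc by auto
  then have "inv c = \<one>" using fpf[OF a(1) a(5) Hi[OF a(2)]] by simp
  then show False using a Hc by (metis inv_inv subsetD inv_one)
qed

lemma cj_fix_triv:
  assumes la: "la \<in> LK" and c: "c \<in> H" "c \<noteq> \<one>" and fx: "\<And>x. x \<in> K \<Longrightarrow> la (inv c \<otimes> x \<otimes> c) = la x"
  shows "la = triv (G\<lparr>carrier := K\<rparr>)"
proof -
  interpret GK: comm_group "G\<lparr>carrier := K\<rparr>" by (rule cK)
  have cc: "c \<in> carrier G" using c Hc by auto
  define \<phi> where "\<phi> x = (inv c \<otimes> x \<otimes> c) \<otimes> inv x" for x
  have \<phi>K: "\<phi> x \<in> K" if "x \<in> K" for x
    unfolding \<phi>_def using that conjK_iff[OF cc] Kc Km Ki by auto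
  have inj: "inj_on \<phi> K"
  proof (rule inj_onI)
    fix x y assume x: "x \<in> K" and y: "y \<in> K" and e: "\<phi> x = \<phi> y"
    have xc: "x \<in> carrier G" "y \<in> carrier G" using x y Kc by auto
    define u v where "u = inv c \<otimes> x \<otimes> c" "v = inv c \<otimes> y \<otimes> c"
    have uv: "u \<in> K" "v \<in> K" unfolding u_v_def using conjK_iff[OF cc] xc x y by auto
    have uvc: "u \<in> carrier G" "v \<in> carrier G" using uv Kc by auto
    have e2: "u \<otimes> inv x = v \<otimes> inv y" using e unfolding \<phi>_def u_v_def by simp
    have "u \<otimes> inv v = x \<otimes> inv y"
    proof -
      have "u = v \<otimes> inv y \<otimes> x" using e2 uvc xc by (metis inv_closed m_assoc m_closed r_one l_inv)
      then have "u \<otimes> inv v = v \<otimes> (inv y \<otimes> x) \<otimes> inv v" using uvc xc by (simp add: m_assoc)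
      also have "\<dots> = inv y \<otimes> x" using Kconj_fix[OF uv(2) Km[OF Ki[OF y] x]] .
      also have "\<dots> = x \<otimes> inv y" using Kcomm[OF Ki[OF y] x] .
      finally show ?thesis .
    qed
    moreover have "u \<otimes> inv v = inv c \<otimes> (x \<otimes> inv y) \<otimes> c"
      unfolding u_v_def using cc xc by (simp add: inv_mult_group m_assoc lcancel_inv lcancel_inv2)
    ultimately have "inv c \<otimes> (x \<otimes> inv y) \<otimes> c = x \<otimes> inv y" by simp
    then have "x \<otimes> inv y = \<one>" using fpf2[OF _ c] Km[OF x Ki[OF y]] by simp
    then show "x = y" using xc by (metis inv_closed inv_inv inv_equality inv_comm)
  qed
  have surj: "\<phi> ` K = K"
    using card_subset_eq[OF finK] \<phi>K card_image[OF inj] by blast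
  show ?thesis
  proof
    fix z show "la z = triv (G\<lparr>carrier := K\<rparr>) z"
    proof (cases "z \<in> K")
      case True
      then obtain x where x: "x \<in> K" "z = \<phi> x" using surj by blast
      have xc: "x \<in> carrier G" using x Kc by auto
      have "la z = la (inv c \<otimes> x \<otimes> c) * la (inv x)"
        using LKD[OF la] x conjK_iff[OF cc xc] Ki unfolding \<phi>_def by simp
      also have "\<dots> = la x * la (inv x)" using fx x by simp
      also have "\<dots> = la (x \<otimes> inv x)" using LKD[OF la] x Ki by simp
      also have "\<dots> = 1" using LKD[OF la] xc by simp
      finally show ?thesis using True unfolding triv_def by simp
    next
      case False then show ?thesis using LKD[OF la] unfolding triv_def by simp
    qed
  qed
qed

lemma cj_inj:
  assumes la: "la \<in> LK" "la \<noteq> triv (G\<lparr>carrier := K\<rparr>)" and ab: "a \<in> H" "b \<in> H" and e: "cj a la = cj b la"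
  shows "a = b"
proof (rule ccontr)
  assume ne: "a \<noteq> b"
  have ac: "a \<in> carrier G" "b \<in> carrier G" using ab Hc by auto
  define c where "c = inv a \<otimes> b"
  have cH: "c \<in> H" unfolding c_def using ab Hm Hi by simp
  have c1: "c \<noteq> \<one>" unfolding c_def using ne ac invl_one by metis
  have "la (inv c \<otimes> y \<otimes> c) = la y" if y: "y \<in> K" for y
  proof -
    have yc: "y \<in> carrier G" using y Kc by auto
    define x where "x = a \<otimes> y \<otimes> inv a"
    have xK: "x \<in> K" unfolding x_def using K_normal[OF y ac(1)] .
    have "inv a \<otimes> x \<otimes> a = y" unfolding x_def using ac yc by (simp add: m_assoc lcancel_inv)
    moreover have "inv b \<otimes> x \<otimes> b = inv c \<otimes> y \<otimes> c" unfolding x_def c_def using ac yc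
      by (simp add: m_assoc inv_mult_group)
    moreover have "cj a la x = cj b la x" using e by simp
    ultimately show ?thesis unfolding cj_def using xK by simp
  qed
  then have "la = triv (G\<lparr>carrier := K\<rparr>)" using cj_fix_triv[OF la(1) cH c1] by blast
  then show False using la(2) by simp
qed

end

context frob begin

lemma order_K: "order (G\<lparr>carrier := K\<rparr>) = card K" unfolding order_def by simp
lemma order_H: "order (G\<lparr>carrier := H\<rparr>) = card H" unfolding order_def by simp

lemma indrep_diag:
  assumes la: "la \<in> LK" and x: "x \<in> K" and ij: "i < hh" "j < hh"
  shows "indrep la x $$ (i, j) = (if i = j then cj (en i) la x else 0)"
proof -
  have xc: "x \<in> carrier G" using x Kc by auto
  have e: "en i \<in> carrier G" "en j \<in> carrier G" using en_c ij by auto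
  show ?thesis
  proof (cases "i = j")
    case True then show ?thesis unfolding indrep_def cj_def using ij x by simp
  next
    case False
    have "inv (en i) \<otimes> x \<otimes> en j \<notin> K"
    proof
      assume a: "inv (en i) \<otimes> x \<otimes> en j \<in> K"
      have b: "inv (en i) \<otimes> x \<otimes> en i \<in> K" using conjK_iff[OF e(1) xc] x by simp
      have "inv (inv (en i) \<otimes> x \<otimes> en i) \<otimes> (inv (en i) \<otimes> x \<otimes> en j) = inv (en i) \<otimes> en j"
        using e xc by (simp add: inv_mult_group m_assoc lcancel_inv lcancel_inv2)
      then have "inv (en i) \<otimes> en j \<in> K" using Km[OF Ki[OF b] a] by simp
      then show False using en_cross ij False by simp
    qed
    then show ?thesis unfolding indrep_def using ij False LKD[OF la] by simp
  qed
qed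

lemma indrep_irr:
  assumes la: "la \<in> LK" and nt: "la \<noteq> triv (G\<lparr>carrier := K\<rparr>)"
  shows "irreducible_rep G hh (indrep la)"
  unfolding irreducible_rep_def
proof (intro conjI allI impI)
  show rep: "representation G hh (indrep la)" by (rule indrep_rep[OF la])
  show "0 < hh" by (rule hh_pos)
  fix W assume W: "invariant_subspace G hh (indrep la) W"
  have Wc: "W \<subseteq> carrier_vec hh" and W0: "0\<^sub>v hh \<in> W"
    and sc: "\<And>c v. v \<in> W \<Longrightarrow> c \<cdot>\<^sub>v v \<in> W"
    and rc: "\<And>g v. g \<in> carrier G \<Longrightarrow> v \<in> W \<Longrightarrow> indrep la g *\<^sub>v v \<in> W"
    using W unfolding invariant_subspace_def by auto
  interpret FK: fab "G\<lparr>carrier := K\<rparr>" by (rule fabK)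
  show "W = {0\<^sub>v hh} \<or> W = carrier_vec hh"
  proof (cases "\<exists>v\<in>W. v \<noteq> 0\<^sub>v hh")
    case False
    then have "W \<subseteq> {0\<^sub>v hh}" by blast
    then have "W = {0\<^sub>v hh}" using W0 by blast
    then show ?thesis by blast
  next
    case True
    then obtain v where v: "v \<in> W" "v \<noteq> 0\<^sub>v hh" by blast
    have vc: "v \<in> carrier_vec hh" using v Wc by auto
    obtain i where i: "i < hh" "v $ i \<noteq> 0"
    proof -
      have "\<exists>i<hh. v $ i \<noteq> 0"
      proof (rule ccontr)
        assume "\<not> ?thesis"
        then have "v = 0\<^sub>v hh" using vc by (intro eq_vecI) auto
        then show False using v by simp
      qed
      then show ?thesis using that by blast
    qed
    have cjl: "cj (en l) la \<in> LK" if "l < hh" for l using cj_LK[OF en_H[OF that] la] .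
    have orth: "(\<Sum>x\<in>K. cnj (cj (en i) la x) * cj (en l) la x) = (if l = i then of_nat (card K) else 0)"
      if l: "l < hh" for l
    proof -
      have "(\<Sum>x\<in>K. cnj (cj (en i) la x) * cj (en l) la x) = (\<Sum>x\<in>K. cj (en l) la x * cnj (cj (en i) la x))"
        by (simp add: mult.commute)
      also have "\<dots> = (if cj (en l) la = cj (en i) la then of_nat (card K) else 0)"
        using FK.dual_row[OF cjl[OF l] cjl[OF i(1)]] order_K by simp
      also have "(cj (en l) la = cj (en i) la) = (l = i)"
        using cj_inj[OF la nt en_H[OF l] en_H[OF i(1)]] en_inj[OF l i(1)] by auto
      finally show ?thesis .
    qed
    define f where "f x = cnj (cj (en i) la x) \<cdot>\<^sub>v (indrep la x *\<^sub>v v)" for x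
    have fW: "f x \<in> W" if "x \<in> K" for x unfolding f_def using that Kc sc rc v(1) by auto
    have fl: "f x $ l = cnj (cj (en i) la x) * cj (en l) la x * v $ l" if x: "x \<in> K" and l: "l < hh" for x l
    proof -
      have "(indrep la x *\<^sub>v v) $ l = (\<Sum>m<hh. indrep la x $$ (l, m) * v $ m)"
        using l vc unfolding indrep_def by (simp add: scalar_prod_def atLeast0LessThan)
      also have "\<dots> = indrep la x $$ (l, l) * v $ l"
        by (rule sum_single) (use indrep_diag[OF la x l] l in auto)
      also have "\<dots> = cj (en l) la x * v $ l" using indrep_diag[OF la x l l] by simp
      finally show ?thesis unfolding f_def using l vc by (simp add: indrep_def mult.assoc)
    qed
    have "vec hh (\<lambda>l. \<Sum>x\<in>K. f x $ l) \<in> W" by (rule inv_sum_closed[OF W finK fW])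
    moreover have "vec hh (\<lambda>l. \<Sum>x\<in>K. f x $ l) = (of_nat (card K) * v $ i) \<cdot>\<^sub>v unit_vec hh i"
    proof (rule eq_vecI)
      fix l assume l: "l < dim_vec ((of_nat (card K) * v $ i) \<cdot>\<^sub>v unit_vec hh i)"
      then have l': "l < hh" by simp
      have "(\<Sum>x\<in>K. f x $ l) = (\<Sum>x\<in>K. cnj (cj (en i) la x) * cj (en l) la x) * v $ l"
        using fl l' by (simp add: sum_distrib_right)
      also have "\<dots> = (if l = i then of_nat (card K) else 0) * v $ l" using orth[OF l'] by simp
      finally show "vec hh (\<lambda>l. \<Sum>x\<in>K. f x $ l) $ l = ((of_nat (card K) * v $ i) \<cdot>\<^sub>v unit_vec hh i) $ l"
        using l' i(1) by simp
    qed simp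
    ultimately have "(of_nat (card K) * v $ i) \<cdot>\<^sub>v unit_vec hh i \<in> W" by simp
    then have "(1 / (of_nat (card K) * v $ i)) \<cdot>\<^sub>v ((of_nat (card K) * v $ i) \<cdot>\<^sub>v unit_vec hh i) \<in> W"
      by (rule sc)
    moreover have "card K \<noteq> 0" using K1 finK by auto
    ultimately have ui: "unit_vec hh i \<in> W" using i(2) by (simp add: smult_smult_assoc)
    have uj: "unit_vec hh j \<in> W" if j: "j < hh" for j
    proof -
      define g where "g = en j \<otimes> inv (en i)"
      have gc: "g \<in> carrier G" unfolding g_def using en_c i j by simp
      have "indrep la g *\<^sub>v unit_vec hh i = unit_vec hh j"
      proof (rule eq_vecI)
        fix l assume "l < dim_vec (unit_vec hh j)"
        then have l: "l < hh" by simp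
        have "(indrep la g *\<^sub>v unit_vec hh i) $ l = indrep la g $$ (l, i)"
          using mv_unit[of "indrep la g" hh hh l i] l i unfolding indrep_def by simp
        also have "\<dots> = la (inv (en l) \<otimes> en j)" unfolding indrep_def g_def using l i en_c j
          by (simp add: m_assoc)
        also have "\<dots> = unit_vec hh j $ l" using la_cross[OF la l j] l j by simp
        finally show "(indrep la g *\<^sub>v unit_vec hh i) $ l = unit_vec hh j $ l" .
      qed (simp add: indrep_def)
      then show ?thesis using rc[OF gc ui] by simp
    qed
    have "carrier_vec hh \<subseteq> W"
    proof
      fix w :: "complex vec" assume w: "w \<in> carrier_vec hh"
      have "vec hh (\<lambda>l. \<Sum>j\<in>{..<hh}. (w $ j \<cdot>\<^sub>v unit_vec hh j) $ l) \<in> W"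
        by (rule inv_sum_closed[OF W]) (use sc uj in auto)
      moreover have "vec hh (\<lambda>l. \<Sum>j\<in>{..<hh}. (w $ j \<cdot>\<^sub>v unit_vec hh j) $ l) = w"
      proof (rule eq_vecI)
        fix l assume "l < dim_vec w"
        then have l: "l < hh" using w by simp
        have "(\<Sum>j\<in>{..<hh}. (w $ j \<cdot>\<^sub>v unit_vec hh j) $ l) = w $ l"
          by (rule trans[OF sum_single[of _ l]]) (use l in auto)
        then show "vec hh (\<lambda>l. \<Sum>j\<in>{..<hh}. (w $ j \<cdot>\<^sub>v unit_vec hh j) $ l) $ l = w $ l" using l by simp
      qed (use w in simp)
      ultimately show "w \<in> W" by simp
    qed
    then show ?thesis using Wc by blast
  qed
qed

lemma ind_Irr: assumes "la \<in> LK" "la \<noteq> triv (G\<lparr>carrier := K\<rparr>)" shows "ind la \<in> Irr G"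
proof -
  have "irreducible_rep G hh (indrep la)" using indrep_irr[OF assms] .
  moreover have "ind la = character G (indrep la)" using ind_char by simp
  ultimately show ?thesis unfolding Irr_def by blast
qed

end

context frob begin

abbreviation "trK \<equiv> triv (G\<lparr>carrier := K\<rparr>)"

lemma card_LH: "card LH = card H"
  using fab.card_dual[OF fabH] order_H by simp
lemma card_LK: "card LK = card K"
  using fab.card_dual[OF fabK] order_K by simp
lemma fin_LH: "finite LH" using fab.dual_finite[OF fabH] .
lemma fin_LK: "finite LK" using fab.dual_finite[OF fabK] .
lemma trK_LK: "trK \<in> LK" using fab.triv_dual[OF fabK] .

lemma sumLH: "a \<in> H \<Longrightarrow> (\<Sum>\<mu>\<in>LH. \<mu> a) = (if a = \<one> then of_nat (card H) else 0)"
proof -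
  assume a: "a \<in> H"
  show ?thesis
  proof (cases "a = \<one>")
    case True
    then have "(\<Sum>\<mu>\<in>LH. \<mu> a) = (\<Sum>\<mu>\<in>LH. 1)" using LHD by (intro sum.cong) auto
    then show ?thesis using True card_LH by simp
  next
    case False
    then show ?thesis using fab.col0[OF fabH, of a] a by simp
  qed
qed

lemma sumLK: "z \<in> K \<Longrightarrow> (\<Sum>la\<in>LK. la z) = (if z = \<one> then of_nat (card K) else 0)"
proof -
  assume a: "z \<in> K"
  show ?thesis
  proof (cases "z = \<one>")
    case True
    then have "(\<Sum>la\<in>LK. la z) = (\<Sum>la\<in>LK. 1)" using LKD by (intro sum.cong) auto
    then show ?thesis using True card_LK by simp
  next
    case False
    then show ?thesis using fab.col0[OF fabK, of z] a by simp
  qed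
qed

lemma lin_K: "\<mu> \<in> LH \<Longrightarrow> x \<in> K \<Longrightarrow> lin \<mu> x = 1"
  unfolding lin_def using Kc pi_onK LHD by auto

lemma ind_notK: "g \<notin> K \<Longrightarrow> ind la' g = 0" if "la' \<in> LK"
proof -
  assume g: "g \<notin> K"
  show ?thesis
  proof (cases "g \<in> carrier G")
    case True
    have "la' (inv a \<otimes> g \<otimes> a) = 0" if "a \<in> H" for a
      using conjK_iff[of a g] that True g Hc LKD[OF \<open>la' \<in> LK\<close>] by auto
    then show ?thesis unfolding ind_def using True by simp
  qed (simp add: ind_def)
qed

lemma reg_sum:
  assumes g: "g \<in> carrier G"
  shows "(\<Sum>\<mu>\<in>LH. lin \<mu> g) + (\<Sum>la\<in>LK - {trK}. ind la g) = (if g = \<one> then of_nat (card (carrier G)) else 0)"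
proof (cases "g \<in> K")
  case False
  have "(\<Sum>la\<in>LK - {trK}. ind la g) = 0" using ind_notK False by (intro sum.neutral) auto
  moreover have "(\<Sum>\<mu>\<in>LH. lin \<mu> g) = (\<Sum>\<mu>\<in>LH. \<mu> (pi g))" unfolding lin_def using g by simp
  moreover have "pi g \<noteq> \<one>" using pi_one_iff g False by simp
  ultimately show ?thesis using sumLH[OF pi_H[OF g]] False K1 by auto
next
  case True
  have gc: "g \<in> carrier G" using g .
  have "(\<Sum>\<mu>\<in>LH. lin \<mu> g) = of_nat (card H)" using lin_K True card_LH by simp
  moreover have "(\<Sum>la\<in>LK - {trK}. ind la g) = of_nat (card H) * ((if g = \<one> then of_nat (card K) else 0) - 1)"
  proof -
    have cK: "inv a \<otimes> g \<otimes> a \<in> K" if "a \<in> H" for a using conjK_iff[of a g] that Hc True gc by auto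
    have "(\<Sum>la\<in>LK - {trK}. ind la g) = (\<Sum>la\<in>LK - {trK}. \<Sum>a\<in>H. la (inv a \<otimes> g \<otimes> a))"
      unfolding ind_def using gc by simp
    also have "\<dots> = (\<Sum>a\<in>H. \<Sum>la\<in>LK - {trK}. la (inv a \<otimes> g \<otimes> a))" by (rule sum.swap)
    also have "\<dots> = (\<Sum>a\<in>H. (\<Sum>la\<in>LK. la (inv a \<otimes> g \<otimes> a)) - 1)"
    proof (rule sum.cong[OF refl])
      fix a assume a: "a \<in> H"
      have "(\<Sum>la\<in>LK. la (inv a \<otimes> g \<otimes> a)) = trK (inv a \<otimes> g \<otimes> a) + (\<Sum>la\<in>LK - {trK}. la (inv a \<otimes> g \<otimes> a))"
        using fin_LK trK_LK by (simp add: sum.remove)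
      then show "(\<Sum>la\<in>LK - {trK}. la (inv a \<otimes> g \<otimes> a)) = (\<Sum>la\<in>LK. la (inv a \<otimes> g \<otimes> a)) - 1"
        using cK[OF a] unfolding triv_def by simp
    qed
    also have "\<dots> = (\<Sum>a\<in>H. (if g = \<one> then of_nat (card K) else 0) - 1)"
    proof (rule sum.cong[OF refl])
      fix a assume a: "a \<in> H"
      have ac: "a \<in> carrier G" using a Hc by auto
      have "(inv a \<otimes> g \<otimes> a = \<one>) = (g = \<one>)"
        using conj_one[of "inv a" g] ac gc by auto
      then show "(\<Sum>la\<in>LK. la (inv a \<otimes> g \<otimes> a)) - 1 = (if g = \<one> then of_nat (card K) else 0) - 1"
        using sumLK[OF cK[OF a]] by simp
    qed
    also have "\<dots> = of_nat (card H) * ((if g = \<one> then of_nat (card K) else 0) - 1)" by simp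
    finally show ?thesis .
  qed
  moreover have "(of_nat (card (carrier G)) :: complex) = of_nat (card H) * of_nat (card K)"
    using card_G by (simp flip: of_nat_mult add: mult.commute)
  ultimately show ?thesis by (simp add: algebra_simps)
qed

end

context frob begin

lemma char_one: "irreducible_rep G n \<rho> \<Longrightarrow> character G \<rho> \<one> = of_nat n"
  unfolding irreducible_rep_def representation_def character_def mat_trace_def by simp

lemma Irr_eq: "Irr G = lin ` LH \<union> ind ` (LK - {trK})"
proof
  show "lin ` LH \<union> ind ` (LK - {trK}) \<subseteq> Irr G" using lin_Irr ind_Irr by auto
next
  show "Irr G \<subseteq> lin ` LH \<union> ind ` (LK - {trK})"
  proof
    fix \<chi> assume "\<chi> \<in> Irr G"
    then obtain n \<rho> where r: "irreducible_rep G n \<rho>" and chi: "\<chi> = character G \<rho>" unfolding Irr_def by auto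
    have n0: "0 < n" using r unfolding irreducible_rep_def by simp
    have chi_out: "\<chi> g = 0" if "g \<notin> carrier G" for g unfolding chi character_def using that by simp
    define R where "R g = (\<Sum>\<mu>\<in>LH. lin \<mu> g) + (\<Sum>la\<in>LK - {trK}. ind la g)" for g
    have "(\<Sum>g\<in>carrier G. \<chi> g * R (inv g)) = (\<Sum>g\<in>carrier G. \<chi> g * (if g = \<one> then of_nat (card (carrier G)) else 0))"
    proof (rule sum.cong[OF refl])
      fix g assume g: "g \<in> carrier G"
      have "(inv g = \<one>) = (g = \<one>)" using g by (metis inv_inv inv_one)
      then show "\<chi> g * R (inv g) = \<chi> g * (if g = \<one> then of_nat (card (carrier G)) else 0)"
        unfolding R_def using reg_sum[OF inv_closed[OF g]] by simp
    qed
    also have "\<dots> = \<chi> \<one> * of_nat (card (carrier G))"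
      by (simp add: sum.delta[OF fin] if_distrib[of "\<lambda>x. \<chi> _ * x"] cong: if_cong)
    finally have tot: "(\<Sum>g\<in>carrier G. \<chi> g * R (inv g)) = of_nat n * of_nat (card (carrier G))"
      using char_one[OF r] chi by simp
    have "card (carrier G) \<noteq> 0" using fin one_closed by (auto simp: card_gt_0_iff)
    then have tot0: "(\<Sum>g\<in>carrier G. \<chi> g * R (inv g)) \<noteq> 0" using tot n0 by simp
    have "(\<Sum>g\<in>carrier G. \<chi> g * R (inv g)) =
      (\<Sum>\<mu>\<in>LH. \<Sum>g\<in>carrier G. \<chi> g * lin \<mu> (inv g)) + (\<Sum>la\<in>LK - {trK}. \<Sum>g\<in>carrier G. \<chi> g * ind la (inv g))"
      unfolding R_def by (simp add: distrib_left sum.distrib sum_distrib_left sum.swap[of _ "carrier G"])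
    with tot0 have "(\<exists>\<mu>\<in>LH. (\<Sum>g\<in>carrier G. \<chi> g * lin \<mu> (inv g)) \<noteq> 0) \<or>
        (\<exists>la\<in>LK - {trK}. (\<Sum>g\<in>carrier G. \<chi> g * ind la (inv g)) \<noteq> 0)"
      by (metis (no_types, lifting) add.right_neutral sum.neutral)
    then show "\<chi> \<in> lin ` LH \<union> ind ` (LK - {trK})"
    proof
      assume "\<exists>\<mu>\<in>LH. (\<Sum>g\<in>carrier G. \<chi> g * lin \<mu> (inv g)) \<noteq> 0"
      then obtain \<mu> where m: "\<mu> \<in> LH" "(\<Sum>g\<in>carrier G. \<chi> g * lin \<mu> (inv g)) \<noteq> 0" by blast
      have "character G (linrep \<mu>) = character G \<rho>"
        by (rule schur_char[OF fin r linrep_irr[OF m(1)]]) (use m(2) chi lin_char in simp)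
      then have "lin \<mu> = \<chi>" using lin_char chi by simp
      then show ?thesis using m(1) by blast
    next
      assume "\<exists>la\<in>LK - {trK}. (\<Sum>g\<in>carrier G. \<chi> g * ind la (inv g)) \<noteq> 0"
      then obtain la where m: "la \<in> LK" "la \<noteq> trK" "(\<Sum>g\<in>carrier G. \<chi> g * ind la (inv g)) \<noteq> 0" by blast
      have "character G (indrep la) = character G \<rho>"
        by (rule schur_char[OF fin r indrep_irr[OF m(1,2)]]) (use m(3) chi ind_char in simp)
      then have "ind la = \<chi>" using ind_char chi by simp
      then show ?thesis using m(1,2) by blast
    qed
  qed
qed

end

context frob begin

abbreviation "NL \<equiv> LK - {trK}"

lemma h2: "2 \<le> card H"
proof -
  obtain a where a: "a \<in> H" "a \<noteq> \<one>" using H_nt H1 by blast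
  have "{\<one>, a} \<subseteq> H" using a H1 by auto
  then have "card {\<one>, a} \<le> card H" using finH card_mono by blast
  then show ?thesis using a by simp
qed

lemma cj_comp: "b \<in> H \<Longrightarrow> c \<in> H \<Longrightarrow> cj b (cj c la) = cj (b \<otimes> c) la"
proof
  fix x assume b: "b \<in> H" and c: "c \<in> H"
  have bc: "b \<in> carrier G" "c \<in> carrier G" using b c Hc by auto
  show "cj b (cj c la) x = cj (b \<otimes> c) la x"
  proof (cases "x \<in> K")
    case True
    have xc: "x \<in> carrier G" using True Kc by auto
    have "inv b \<otimes> x \<otimes> b \<in> K" using conjK_iff[OF bc(1) xc] True by simp
    moreover have "inv c \<otimes> (inv b \<otimes> x \<otimes> b) \<otimes> c = inv (b \<otimes> c) \<otimes> x \<otimes> (b \<otimes> c)"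
      using bc xc by (simp add: inv_mult_group m_assoc)
    ultimately show ?thesis unfolding cj_def using True by simp
  qed (simp add: cj_def)
qed

lemma cj_one: "la \<in> LK \<Longrightarrow> cj \<one> la = la"
  unfolding cj_def using LKD Kc by (auto simp: fun_eq_iff)

lemma cj_nt: assumes la: "la \<in> LK" "la \<noteq> trK" and a: "a \<in> H" shows "cj a la \<noteq> trK"
proof
  assume e: "cj a la = trK"
  have ac: "a \<in> carrier G" using a Hc by auto
  have "cj (inv a) (cj a la) = la" using cj_comp[OF Hi[OF a] a] ac cj_one[OF la(1)] by simp
  moreover have "cj (inv a) trK = trK"
  proof
    fix x show "cj (inv a) trK x = trK x"
    proof (cases "x \<in> K")
      case True
      then have "inv (inv a) \<otimes> x \<otimes> inv a \<in> K" using conjK_iff[OF inv_closed[OF ac], of x] Kc by auto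
      then show ?thesis unfolding cj_def triv_def using True by simp
    qed (simp add: cj_def triv_def)
  qed
  ultimately show False using e la(2) by simp
qed

lemma cj_NL: "la \<in> NL \<Longrightarrow> a \<in> H \<Longrightarrow> cj a la \<in> NL"
  using cj_LK cj_nt by auto

lemma ind_K: "x \<in> K \<Longrightarrow> ind la x = (\<Sum>a\<in>H. cj a la x)"
  unfolding ind_def cj_def using Kc by auto

lemma sum_ind_K: assumes la: "la \<in> NL" shows "(\<Sum>x\<in>K. ind la x) = 0"
proof -
  have "(\<Sum>x\<in>K. ind la x) = (\<Sum>a\<in>H. \<Sum>x\<in>K. cj a la x)" using ind_K by (simp add: sum.swap[of _ H])
  also have "\<dots> = 0"
    using fab.dual_row0[OF fabK, of "cj _ la"] cj_NL[OF la] by (intro sum.neutral) auto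
  finally show ?thesis .
qed

definition IP where "IP la la' = (\<Sum>x\<in>K. ind la x * cnj (ind la' x))"

lemma IP_eq: assumes la: "la \<in> NL" "la' \<in> NL"
  shows "IP la la' = of_nat (card K) * of_nat (card {p \<in> H \<times> H. cj (fst p) la = cj (snd p) la'})"
proof -
  have "IP la la' = (\<Sum>x\<in>K. \<Sum>a\<in>H. \<Sum>b\<in>H. cj a la x * cnj (cj b la' x))"
    unfolding IP_def using ind_K by (simp add: cnj_sum sum_product)
  also have "\<dots> = (\<Sum>a\<in>H. \<Sum>b\<in>H. \<Sum>x\<in>K. cj a la x * cnj (cj b la' x))"
    by (simp add: sum.swap[of _ K])
  also have "\<dots> = (\<Sum>a\<in>H. \<Sum>b\<in>H. if cj a la = cj b la' then of_nat (card K) else 0)"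
    using fab.dual_row[OF fabK] cj_LK la order_K by (intro sum.cong refl) auto
  also have "\<dots> = (\<Sum>p\<in>H \<times> H. if cj (fst p) la = cj (snd p) la' then of_nat (card K) else 0)"
    by (simp add: sum.cartesian_product case_prod_unfold)
  also have "\<dots> = of_nat (card K) * of_nat (card {p \<in> H \<times> H. cj (fst p) la = cj (snd p) la'})"
    using finH by (simp add: sum.If_cases Int_def)
  finally show ?thesis .
qed

definition orb where "orb la = (\<lambda>a. cj a la) ` H"

lemma pairs_in: assumes la: "la \<in> NL" and c: "c \<in> H"
  shows "{p \<in> H \<times> H. cj (fst p) la = cj (snd p) (cj c la)} = (\<lambda>a. (a, a \<otimes> inv c)) ` H"
proof
  have cc: "c \<in> carrier G" using c Hc by auto
  show "{p \<in> H \<times> H. cj (fst p) la = cj (snd p) (cj c la)} \<subseteq> (\<lambda>a. (a, a \<otimes> inv c)) ` H"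
  proof
    fix p assume p: "p \<in> {p \<in> H \<times> H. cj (fst p) la = cj (snd p) (cj c la)}"
    obtain a b where ab: "p = (a, b)" by (cases p)
    have a: "a \<in> H" and b: "b \<in> H" and e: "cj a la = cj (b \<otimes> c) la" using p cj_comp[of b c la] c unfolding ab by auto
    have "a = b \<otimes> c" using cj_inj[of la a "b \<otimes> c"] la a Hm[OF b c] e by auto
    then have "b = a \<otimes> inv c" using cc b Hc by (simp add: m_assoc subsetD)
    then show "p \<in> (\<lambda>a. (a, a \<otimes> inv c)) ` H" using ab a by auto
  qed
  show "(\<lambda>a. (a, a \<otimes> inv c)) ` H \<subseteq> {p \<in> H \<times> H. cj (fst p) la = cj (snd p) (cj c la)}"
  proof
    fix p assume "p \<in> (\<lambda>a. (a, a \<otimes> inv c)) ` H"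
    then obtain a where a: "a \<in> H" "p = (a, a \<otimes> inv c)" by auto
    have "cj (a \<otimes> inv c) (cj c la) = cj a la" using cj_comp[OF Hm[OF a(1) Hi[OF c]] c] cc a Hc
      by (simp add: m_assoc subsetD)
    then show "p \<in> {p \<in> H \<times> H. cj (fst p) la = cj (snd p) (cj c la)}" using a Hm Hi c by auto
  qed
qed

lemma pairs_out: assumes la: "la \<in> NL" "la' \<in> NL" and n: "la' \<notin> orb la"
  shows "{p \<in> H \<times> H. cj (fst p) la = cj (snd p) la'} = {}"
proof (rule ccontr)
  assume "{p \<in> H \<times> H. cj (fst p) la = cj (snd p) la'} \<noteq> {}"
  then obtain a b where ab: "a \<in> H" "b \<in> H" "cj a la = cj b la'" by auto
  have "la' = cj (inv b) (cj b la')" using cj_comp[OF Hi[OF ab(2)] ab(2)] ab(2) Hc cj_one la(2) by (simp add: subsetD)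
  also have "\<dots> = cj (inv b \<otimes> a) la" using ab(3)[symmetric] cj_comp[OF Hi[OF ab(2)] ab(1)] by simp
  finally show False using n Hm[OF Hi[OF ab(2)] ab(1)] unfolding orb_def by auto
qed

lemma card_pairs: assumes la: "la \<in> NL" "la' \<in> NL"
  shows "card {p \<in> H \<times> H. cj (fst p) la = cj (snd p) la'} = (if la' \<in> orb la then card H else 0)"
proof (cases "la' \<in> orb la")
  case True
  then obtain c where c: "c \<in> H" "la' = cj c la" unfolding orb_def by auto
  have "inj_on (\<lambda>a. (a, a \<otimes> inv c)) H" by (rule inj_onI) auto
  then show ?thesis using pairs_in[OF la(1) c(1)] c True by (simp add: card_image)
next
  case False
  have "{p \<in> H \<times> H. cj (fst p) la = cj (snd p) la'} = {}" by (rule pairs_out[OF la False])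
  then show ?thesis using False by (simp only: card.empty) simp
qed

lemma IP_val: "la \<in> NL \<Longrightarrow> la' \<in> NL \<Longrightarrow> IP la la' = (if la' \<in> orb la then of_nat (card K * card H) else 0)"
  using IP_eq card_pairs by simp

lemma self_orb: "la \<in> NL \<Longrightarrow> la \<in> orb la"
  unfolding orb_def using cj_one H1 by (metis DiffD1 image_eqI)

lemma card_orb: "la \<in> NL \<Longrightarrow> card (orb la) = card H"
  unfolding orb_def using cj_inj by (intro card_image inj_onI) auto

lemma orb_sub: "la \<in> NL \<Longrightarrow> orb la \<subseteq> NL"
  unfolding orb_def using cj_NL by auto

lemma ind_cj: assumes la: "la \<in> LK" and c: "c \<in> H" shows "ind (cj c la) = ind la"
proof
  fix g show "ind (cj c la) g = ind la g"
  proof (cases "g \<in> carrier G")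
    case True
    have cc: "c \<in> carrier G" using c Hc by auto
    have "(\<Sum>b\<in>H. cj c la (inv b \<otimes> g \<otimes> b)) = (\<Sum>b\<in>H. la (inv (b \<otimes> c) \<otimes> g \<otimes> (b \<otimes> c)))"
    proof (rule sum.cong[OF refl])
      fix b assume b: "b \<in> H"
      have bc: "b \<in> carrier G" using b Hc by auto
      have e: "inv c \<otimes> (inv b \<otimes> g \<otimes> b) \<otimes> c = inv (b \<otimes> c) \<otimes> g \<otimes> (b \<otimes> c)"
        using bc cc True by (simp add: inv_mult_group m_assoc)
      show "cj c la (inv b \<otimes> g \<otimes> b) = la (inv (b \<otimes> c) \<otimes> g \<otimes> (b \<otimes> c))"
      proof (cases "inv b \<otimes> g \<otimes> b \<in> K")
        case True then show ?thesis unfolding cj_def using e by simp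
      next
        case False
        then have "inv (b \<otimes> c) \<otimes> g \<otimes> (b \<otimes> c) \<notin> K" using e conjK_iff[OF cc, of "inv b \<otimes> g \<otimes> b"] bc True by simp
        then show ?thesis unfolding cj_def using False LKD[OF la] by simp
      qed
    qed
    also have "\<dots> = (\<Sum>a\<in>H. la (inv a \<otimes> g \<otimes> a))"
    proof (rule sum.reindex_bij_witness[where i="\<lambda>a. a \<otimes> inv c" and j="\<lambda>b. b \<otimes> c"])
    qed (use c cc Hm Hi Hc in \<open>auto simp: m_assoc subsetD\<close>)
    finally show ?thesis unfolding ind_def using True by simp
  qed (simp add: ind_def)
qed

lemma ind_eq_iff: assumes la: "la \<in> NL" "la' \<in> NL" shows "ind la' = ind la \<longleftrightarrow> la' \<in> orb la"
proof
  assume e: "ind la' = ind la"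
  have "IP la la' = IP la la" unfolding IP_def using e by simp
  also have "\<dots> \<noteq> 0" using IP_val[OF la(1) la(1)] self_orb[OF la(1)] finK K1 finH H1 by auto
  finally show "la' \<in> orb la" using IP_val[OF la] by (auto split: if_splits)
next
  assume "la' \<in> orb la"
  then obtain c where "c \<in> H" "la' = cj c la" unfolding orb_def by auto
  then show "ind la' = ind la" using ind_cj la by simp
qed

lemma card_NL: "card NL = card K - 1"
  using card_LK trK_LK fin_LK by (simp add: card_Diff_singleton)

lemma sum_ind_image:
  fixes F :: "('a \<Rightarrow> complex) \<Rightarrow> 'c::field_char_0"
  shows "(\<Sum>\<psi>\<in>ind ` NL. F \<psi>) = (\<Sum>la\<in>NL. F (ind la)) / of_nat (card H)"
proof -
  have "(\<Sum>la\<in>NL. F (ind la)) = (\<Sum>\<psi>\<in>ind ` NL. \<Sum>la\<in>{la \<in> NL. ind la = \<psi>}. F (ind la))"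
    using fin_LK by (intro sum.image_gen) simp
  also have "\<dots> = (\<Sum>\<psi>\<in>ind ` NL. of_nat (card H) * F \<psi>)"
  proof (rule sum.cong[OF refl])
    fix \<psi> assume "\<psi> \<in> ind ` NL"
    then obtain la where la: "la \<in> NL" "\<psi> = ind la" by auto
    have "{la' \<in> NL. ind la' = \<psi>} = orb la" using ind_eq_iff[OF la(1)] orb_sub[OF la(1)] la(2) by auto
    moreover have "(\<Sum>la'\<in>orb la. F (ind la')) = (\<Sum>la'\<in>orb la. F \<psi>)"
    proof (rule sum.cong[OF refl])
      fix x assume x: "x \<in> orb la"
      then have "x \<in> NL" using orb_sub[OF la(1)] by auto
      then have "ind x = ind la" using ind_eq_iff[OF la(1)] x by blast
      then show "F (ind x) = F \<psi>" using la(2) by simp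
    qed
    ultimately show "(\<Sum>la\<in>{la \<in> NL. ind la = \<psi>}. F (ind la)) = of_nat (card H) * F \<psi>"
      using card_orb[OF la(1)] by simp
  qed
  finally have e: "(\<Sum>la\<in>NL. F (ind la)) = of_nat (card H) * (\<Sum>\<psi>\<in>ind ` NL. F \<psi>)"
    by (simp add: sum_distrib_left)
  have "(of_nat (card H) :: 'c) \<noteq> 0" using h2 by simp
  then show ?thesis using e by simp
qed

end

lemma (in group) char_class:
  assumes r: "representation G n \<rho>" and g: "g \<in> carrier G" and y: "y \<in> carrier G"
  shows "character G \<rho> (y \<otimes> g \<otimes> inv y) = character G \<rho> g"
proof -
  note D = repD[OF r]
  have c: "\<rho> y \<in> carrier_mat n n" "\<rho> g \<in> carrier_mat n n" "\<rho> (inv y) \<in> carrier_mat n n"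
    using D(1) g y by auto
  have "\<rho> (y \<otimes> g \<otimes> inv y) = (\<rho> y * \<rho> g) * \<rho> (inv y)" using D g y by simp
  moreover have "mat_trace ((\<rho> y * \<rho> g) * \<rho> (inv y)) = mat_trace (\<rho> (inv y) * (\<rho> y * \<rho> g))"
    by (rule mat_trace_comm) (use c in auto)
  moreover have "\<rho> (inv y) * (\<rho> y * \<rho> g) = (\<rho> (inv y) * \<rho> y) * \<rho> g"
    using assoc_mult_mat[OF c(3) c(1) c(2)] by simp
  moreover have "\<rho> (inv y) * \<rho> y = 1\<^sub>m n" using D(3)[of "inv y" y] D(2) y by simp
  moreover have "1\<^sub>m n * \<rho> g = \<rho> g" using left_mult_one_mat[OF c(2)] .
  ultimately have "mat_trace (\<rho> (y \<otimes> g \<otimes> inv y)) = mat_trace (\<rho> g)" by simp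
  then show ?thesis unfolding character_def using g y by simp
qed

lemma (in group) Irr_class:
  assumes chi: "\<chi> \<in> Irr G" and g: "g \<in> carrier G" and y: "y \<in> carrier G"
  shows "\<chi> (y \<otimes> g \<otimes> inv y) = \<chi> g"
  using chi char_class g y unfolding Irr_def irreducible_rep_def by auto

lemma (in group) Irr_class_val:
  assumes chi: "\<chi> \<in> Irr G" and g: "g \<in> carrier G"
  shows "class_val \<chi> (conj_class G g) = \<chi> g"
proof -
  have "g \<in> conj_class G g" using conj_class_self g .
  then have "(SOME x. x \<in> conj_class G g) \<in> conj_class G g" by (rule someI)
  then obtain y where "y \<in> carrier G" "(SOME x. x \<in> conj_class G g) = y \<otimes> g \<otimes> inv y"
    unfolding conj_class_def by auto
  then show ?thesis unfolding class_val_def using Irr_class[OF chi g] by simp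
qed

context frob begin

lemma LH_one: "\<mu> \<in> LH \<Longrightarrow> \<mu> \<one> = 1" using LHD by blast
lemma LH_out: "\<mu> \<in> LH \<Longrightarrow> x \<notin> H \<Longrightarrow> \<mu> x = 0" using LHD by blast
lemma LK_one: "la \<in> LK \<Longrightarrow> la \<one> = 1" using LKD by blast
lemma LK_out: "la \<in> LK \<Longrightarrow> x \<notin> K \<Longrightarrow> la x = 0" using LKD by blast

lemma lin_H: "\<mu> \<in> LH \<Longrightarrow> a \<in> H \<Longrightarrow> lin \<mu> a = \<mu> a"
  unfolding lin_def using pi_onH Hc by auto

lemma lin_inj: "inj_on lin LH"
proof (rule inj_onI)
  fix \<mu> \<mu>' assume m: "\<mu> \<in> LH" "\<mu>' \<in> LH" "lin \<mu> = lin \<mu>'"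
  show "\<mu> = \<mu>'"
  proof
    fix x show "\<mu> x = \<mu>' x"
    proof (cases "x \<in> H")
      case True then show ?thesis using lin_H m by metis
    next
      case False then show ?thesis using LH_out[OF m(1) False] LH_out[OF m(2) False] by simp
    qed
  qed
qed

lemma deg_lin: assumes "\<mu> \<in> LH" shows "degree G (lin \<mu>) = 1"
  unfolding degree_def lin_def using pi_one LH_one[OF assms] by simp

lemma ind_one: "la \<in> LK \<Longrightarrow> ind la \<one> = of_nat (card H)"
proof -
  assume la: "la \<in> LK"
  have "ind la \<one> = (\<Sum>a\<in>H. la (inv a \<otimes> \<one> \<otimes> a))" unfolding ind_def by simp
  also have "\<dots> = (\<Sum>a\<in>H. 1)"
  proof (rule sum.cong[OF refl])
    fix a assume "a \<in> H"
    then have "inv a \<otimes> \<one> \<otimes> a = \<one>" using Hc by (simp add: subsetD)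
    then show "la (inv a \<otimes> \<one> \<otimes> a) = 1" using LK_one[OF la] by simp
  qed
  finally have "ind la \<one> = (\<Sum>a\<in>H. 1)" .
  then show ?thesis by simp
qed

lemma deg_ind: "la \<in> LK \<Longrightarrow> degree G (ind la) = real (card H)"
  unfolding degree_def using ind_one by simp

lemma lin_ind_disj: "lin ` LH \<inter> ind ` NL = {}"
proof -
  have "lin \<mu> \<noteq> ind la" if "\<mu> \<in> LH" "la \<in> NL" for \<mu> la
  proof
    assume "lin \<mu> = ind la"
    then have "lin \<mu> \<one> = ind la \<one>" by simp
    then have "(1::complex) = of_nat (card H)" using ind_one[of la] that lin_def pi_one LH_one[OF that(1)] by simp
    then show False using h2 by (metis of_nat_1 of_nat_eq_iff numeral_le_one_iff semiring_norm(69))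
  qed
  then show ?thesis by blast
qed

lemma sum_Irr:
  fixes F :: "('a \<Rightarrow> complex) \<Rightarrow> 'c::field_char_0"
  shows "(\<Sum>\<chi>\<in>Irr G. F \<chi>) = (\<Sum>\<mu>\<in>LH. F (lin \<mu>)) + (\<Sum>la\<in>NL. F (ind la)) / of_nat (card H)"
proof -
  have "(\<Sum>\<chi>\<in>Irr G. F \<chi>) = (\<Sum>\<chi>\<in>lin ` LH. F \<chi>) + (\<Sum>\<chi>\<in>ind ` NL. F \<chi>)"
    unfolding Irr_eq by (rule sum.union_disjoint) (use fin_LH fin_LK lin_ind_disj in auto)
  also have "(\<Sum>\<chi>\<in>lin ` LH. F \<chi>) = (\<Sum>\<mu>\<in>LH. F (lin \<mu>))" by (rule sum.reindex[OF lin_inj, unfolded comp_def])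
  finally show ?thesis using sum_ind_image by simp
qed

lemma fin_Irr: "finite (Irr G)" unfolding Irr_eq using fin_LH fin_LK by simp

end

context frob begin

lemma sumNL_col: assumes x: "x \<in> K" and y: "y \<in> K"
  shows "(\<Sum>la\<in>NL. la x * cnj (la y)) = (if x = y then of_nat (card K) else 0) - 1"
proof -
  have "(\<Sum>la\<in>LK. la x * cnj (la y)) = trK x * cnj (trK y) + (\<Sum>la\<in>NL. la x * cnj (la y))"
    using fin_LK trK_LK by (simp add: sum.remove)
  moreover have "(\<Sum>la\<in>LK. la x * cnj (la y)) = (if x = y then of_nat (card K) else 0)"
    using fab.dual_col[OF fabK, of x y] x y order_K by simp
  moreover have "trK x * cnj (trK y) = 1" using x y unfolding triv_def by simp
  ultimately show ?thesis by (simp add: algebra_simps)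
qed

definition M where "M g g' = card {c \<in> H. c \<otimes> g \<otimes> inv c = g'}"
definition P where "P g g' = {p \<in> H \<times> H. inv (fst p) \<otimes> g \<otimes> fst p = inv (snd p) \<otimes> g' \<otimes> snd p}"

lemma card_P: assumes g: "g \<in> carrier G" and g': "g' \<in> carrier G"
  shows "card (P g g') = card H * M g g'"
proof -
  define Mset where "Mset = {c \<in> H. c \<otimes> g \<otimes> inv c = g'}"
  have "P g g' = (\<lambda>p. (fst p, snd p \<otimes> fst p)) ` (H \<times> Mset)"
  proof
    show "P g g' \<subseteq> (\<lambda>p. (fst p, snd p \<otimes> fst p)) ` (H \<times> Mset)"
    proof
      fix p assume p: "p \<in> P g g'"
      obtain a b where ab: "p = (a, b)" by (cases p)
      have a: "a \<in> H" and b: "b \<in> H" and e: "inv a \<otimes> g \<otimes> a = inv b \<otimes> g' \<otimes> b"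
        using p unfolding P_def ab by auto
      have ac: "a \<in> carrier G" "b \<in> carrier G" using a b Hc by auto
      define c where "c = b \<otimes> inv a"
      have cH: "c \<in> H" unfolding c_def using a b Hm Hi by simp
      have "c \<otimes> g \<otimes> inv c = b \<otimes> (inv a \<otimes> g \<otimes> a) \<otimes> inv b" unfolding c_def using ac g
        by (simp add: inv_mult_group m_assoc)
      also have "\<dots> = g'" using e conj_back[of "inv b" g'] ac g' by simp
      finally have "c \<in> Mset" unfolding Mset_def using cH by simp
      moreover have "b = c \<otimes> a" unfolding c_def using ac by (simp add: m_assoc)
      ultimately show "p \<in> (\<lambda>p. (fst p, snd p \<otimes> fst p)) ` (H \<times> Mset)" using ab a
        by (intro image_eqI[of _ _ "(a, c)"]) auto
    qed
  next
    show "(\<lambda>p. (fst p, snd p \<otimes> fst p)) ` (H \<times> Mset) \<subseteq> P g g'"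
    proof
      fix q assume "q \<in> (\<lambda>p. (fst p, snd p \<otimes> fst p)) ` (H \<times> Mset)"
      then obtain a c where ac: "a \<in> H" "c \<in> Mset" "q = (a, c \<otimes> a)" by auto
      have cH: "c \<in> H" and e: "c \<otimes> g \<otimes> inv c = g'" using ac unfolding Mset_def by auto
      have cc: "a \<in> carrier G" "c \<in> carrier G" using ac(1) cH Hc by auto
      have "inv (c \<otimes> a) \<otimes> g' \<otimes> (c \<otimes> a) = inv a \<otimes> (inv c \<otimes> g' \<otimes> c) \<otimes> a"
        using cc g' by (simp add: inv_mult_group m_assoc)
      also have "inv c \<otimes> g' \<otimes> c = g" using conj_back[OF cc(2) g] e by simp
      finally show "q \<in> P g g'" unfolding P_def using ac cH Hm by auto
    qed
  qed
  moreover have "inj_on (\<lambda>p. (fst p, snd p \<otimes> fst p)) (H \<times> Mset)"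
  proof (rule inj_onI)
    fix p q assume pq: "p \<in> H \<times> Mset" "q \<in> H \<times> Mset" "(fst p, snd p \<otimes> fst p) = (fst q, snd q \<otimes> fst q)"
    obtain a c a' c' where e: "p = (a, c)" "q = (a', c')" by (cases p, cases q)
    have m: "a \<in> H" "c \<in> H" "c' \<in> H" using pq e unfolding Mset_def by auto
    have aa: "a' = a" using pq e by simp
    then have "c \<otimes> a = c' \<otimes> a" using pq e by simp
    then have "c = c'" using m Hc right_cancel by (meson subsetD)
    then show "p = q" using e aa by simp
  qed
  ultimately show ?thesis unfolding M_def Mset_def using finH
    by (simp add: card_image card_cartesian_product)
qed

lemma Isum:
  assumes g: "g \<in> carrier G" and g': "g' \<in> carrier G"
  shows "(\<Sum>la\<in>NL. ind la g * cnj (ind la g')) =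
    (if g \<in> K \<and> g' \<in> K then of_nat (card K * card H * M g g') - of_nat (card H * card H) else 0)"
proof (cases "g \<in> K \<and> g' \<in> K")
  case False
  then have "ind la g * cnj (ind la g') = 0" if "la \<in> NL" for la
    using ind_notK[of la] that by auto
  then have "(\<Sum>la\<in>NL. ind la g * cnj (ind la g')) = 0" by (rule sum.neutral[rule_format])
  then show ?thesis by (simp only: if_not_P[OF False])
next
  case True
  have cK: "inv a \<otimes> x \<otimes> a \<in> K" if "a \<in> H" "x \<in> K" for a x
    using conjK_iff[of a x] that Hc Kc by auto
  have "(\<Sum>la\<in>NL. ind la g * cnj (ind la g')) =
      (\<Sum>la\<in>NL. \<Sum>a\<in>H. \<Sum>b\<in>H. la (inv a \<otimes> g \<otimes> a) * cnj (la (inv b \<otimes> g' \<otimes> b)))"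
    unfolding ind_def using g g' by (simp add: cnj_sum sum_product)
  also have "\<dots> = (\<Sum>a\<in>H. \<Sum>b\<in>H. \<Sum>la\<in>NL. la (inv a \<otimes> g \<otimes> a) * cnj (la (inv b \<otimes> g' \<otimes> b)))"
    by (simp add: sum.swap[of _ NL])
  also have "\<dots> = (\<Sum>a\<in>H. \<Sum>b\<in>H. (if inv a \<otimes> g \<otimes> a = inv b \<otimes> g' \<otimes> b then of_nat (card K) else 0) - 1)"
    using sumNL_col cK True by (intro sum.cong refl) auto
  also have "\<dots> = (\<Sum>p\<in>H \<times> H. (if inv (fst p) \<otimes> g \<otimes> fst p = inv (snd p) \<otimes> g' \<otimes> snd p then of_nat (card K) else 0) - 1)"
    by (simp add: sum.cartesian_product case_prod_unfold)
  also have "\<dots> = of_nat (card K) * of_nat (card (P g g')) - of_nat (card H * card H)"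
    unfolding P_def using finH by (simp add: sum_subtractf sum.If_cases Int_def card_cartesian_product)
  also have "\<dots> = of_nat (card K * card H * M g g') - of_nat (card H * card H)"
    using card_P[OF g g'] by (simp add: mult.assoc)
  finally show ?thesis using True by simp
qed

definition sval :: "'a \<Rightarrow> 'a \<Rightarrow> real" where
  "sval g g' = real (card H) * (if pi g = pi g' then 1 else 0) +
     (if g \<in> K \<and> g' \<in> K then real (card H) * (real (card K * card H * M g g') - real (card H * card H)) else 0)"

lemma Sg_val:
  assumes g: "g \<in> carrier G" and g': "g' \<in> carrier G"
  shows "(\<Sum>\<chi>\<in>Irr G. complex_of_real ((degree G \<chi>)\<^sup>2) * \<chi> g * cnj (\<chi> g')) = complex_of_real (sval g g')"
proof -
  have L: "(\<Sum>\<mu>\<in>LH. complex_of_real ((degree G (lin \<mu>))\<^sup>2) * lin \<mu> g * cnj (lin \<mu> g')) =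
      (if pi g = pi g' then of_nat (card H) else 0)"
  proof -
    have "(\<Sum>\<mu>\<in>LH. complex_of_real ((degree G (lin \<mu>))\<^sup>2) * lin \<mu> g * cnj (lin \<mu> g')) =
        (\<Sum>\<mu>\<in>LH. \<mu> (pi g) * cnj (\<mu> (pi g')))"
      using deg_lin g g' unfolding lin_def by (intro sum.cong) auto
    also have "\<dots> = (if pi g = pi g' then of_nat (card H) else 0)"
      using fab.dual_col[OF fabH, of "pi g" "pi g'"] pi_H g g' order_H by simp
    finally show ?thesis .
  qed
  have I: "(\<Sum>la\<in>NL. complex_of_real ((degree G (ind la))\<^sup>2) * ind la g * cnj (ind la g')) / of_nat (card H) =
      of_nat (card H) * (\<Sum>la\<in>NL. ind la g * cnj (ind la g'))"
  proof -
    have "(\<Sum>la\<in>NL. complex_of_real ((degree G (ind la))\<^sup>2) * ind la g * cnj (ind la g')) =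
        of_nat (card H) * of_nat (card H) * (\<Sum>la\<in>NL. ind la g * cnj (ind la g'))"
      using deg_ind by (simp add: sum_distrib_left power2_eq_square mult.assoc)
    moreover have "(of_nat (card H) :: complex) \<noteq> 0" using h2 by simp
    ultimately show ?thesis by simp
  qed
  show ?thesis
    using sum_Irr[of "\<lambda>\<chi>. complex_of_real ((degree G \<chi>)\<^sup>2) * \<chi> g * cnj (\<chi> g')"] L I Isum[OF g g']
    unfolding sval_def by (simp add: algebra_simps)
qed

end

context frob begin

lemma k2: "2 \<le> card K"
proof (rule ccontr)
  assume "\<not> 2 \<le> card K"
  moreover have "card K \<noteq> 0" using K1 finK by auto
  ultimately have "card K = 1" by linarith
  then have "card H = card (carrier G)" using card_G by simp
  then have "H = carrier G" using card_subset_eq[OF fin Hc] by simp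
  then show False using H_ne by simp
qed

lemma class_sub_K: "g \<in> K \<Longrightarrow> conj_class G g \<subseteq> K"
  using class_K K_normal Hc by auto

lemma one_notin_class: "g \<in> carrier G \<Longrightarrow> g \<noteq> \<one> \<Longrightarrow> \<one> \<notin> conj_class G g"
proof
  assume g: "g \<in> carrier G" "g \<noteq> \<one>" and "\<one> \<in> conj_class G g"
  then obtain y where y: "y \<in> carrier G" "\<one> = y \<otimes> g \<otimes> inv y" unfolding conj_class_def by auto
  then have "g = \<one>" using conj_one[OF y(1) g(1)] by simp
  then show False using g by simp
qed

lemma hk: "card H + 1 \<le> card K"
proof -
  obtain g where g: "g \<in> K" "g \<noteq> \<one>"
  proof -
    have "K \<noteq> {\<one>}" using k2 by auto
    then show ?thesis using that K1 by blast
  qed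
  have gc: "g \<in> carrier G" using g Kc by auto
  have "conj_class G g \<subseteq> K - {\<one>}" using class_sub_K[OF g(1)] one_notin_class[OF gc g(2)] by auto
  then have "card (conj_class G g) \<le> card (K - {\<one>})" using finK by (simp add: card_mono)
  then show ?thesis using card_class_K[OF g] K1 finK k2 by (simp add: card_Diff_singleton)
qed

lemma M_one: "g' \<in> carrier G \<Longrightarrow> M \<one> g' = (if g' = \<one> then card H else 0)"
proof -
  have c1: "\<And>c. c \<in> H \<Longrightarrow> c \<otimes> \<one> \<otimes> inv c = \<one>" using Hc by (simp add: subsetD)
  show ?thesis
  proof (cases "g' = \<one>")
    case True
    then have e: "{c \<in> H. c \<otimes> \<one> \<otimes> inv c = g'} = H" using c1 by auto
    show ?thesis unfolding M_def e using True by simp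
  next
    case False
    then have e: "{c \<in> H. c \<otimes> \<one> \<otimes> inv c = g'} = {}" using c1 by auto
    show ?thesis unfolding M_def e using False by simp
  qed
qed

lemma M_K: assumes g: "g \<in> K" "g \<noteq> \<one>"
  shows "M g g' = (if g' \<in> conj_class G g then 1 else 0)"
proof (cases "g' \<in> conj_class G g")
  case True
  then obtain a where a: "a \<in> H" "g' = a \<otimes> g \<otimes> inv a" using class_K[OF g(1)] by auto
  have "{c \<in> H. c \<otimes> g \<otimes> inv c = g'} = {a}" using a orbit_inj[OF g] by auto
  then show ?thesis unfolding M_def using True by simp
next
  case False
  have e: "{c \<in> H. c \<otimes> g \<otimes> inv c = g'} = {}" using False class_K[OF g(1)] by auto
  show ?thesis unfolding M_def e using False by simp
qed

lemma pi_fiber: assumes a: "a \<in> H" shows "card {g' \<in> carrier G. pi g' = a} = card K"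
proof -
  have ac: "a \<in> carrier G" using a Hc by auto
  have "{g' \<in> carrier G. pi g' = a} = (\<lambda>x. x \<otimes> a) ` K"
  proof
    show "{g' \<in> carrier G. pi g' = a} \<subseteq> (\<lambda>x. x \<otimes> a) ` K"
    proof
      fix g' assume "g' \<in> {g' \<in> carrier G. pi g' = a}"
      then have g': "g' \<in> carrier G" "pi g' = a" by auto
      then show "g' \<in> (\<lambda>x. x \<otimes> a) ` K" using pi_decomp[OF g'(1)] pi_K[OF g'(1)] by force
    qed
    show "(\<lambda>x. x \<otimes> a) ` K \<subseteq> {g' \<in> carrier G. pi g' = a}" using pi_eq a Kc ac by auto
  qed
  moreover have "inj_on (\<lambda>x. x \<otimes> a) K" using ac Kc by (intro inj_onI) (auto simp: subsetD)
  ultimately show ?thesis by (simp add: card_image)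
qed

lemma sum_if_count:
  assumes "finite S"
  shows "(\<Sum>x\<in>S. if Q x then (A::real) else B) = real (card {x \<in> S. Q x}) * A + real (card {x \<in> S. \<not> Q x}) * B"
  using assms by (simp add: sum.If_cases Int_def)

lemma row_notK: assumes g: "g \<in> carrier G" "g \<notin> K"
  shows "(\<Sum>g'\<in>carrier G. \<bar>sval g g'\<bar>) = real (card H) * real (card K)"
proof -
  have "(\<Sum>g'\<in>carrier G. \<bar>sval g g'\<bar>) = (\<Sum>g'\<in>carrier G. if pi g' = pi g then real (card H) else 0)"
    unfolding sval_def using g by (intro sum.cong) auto
  also have "\<dots> = real (card {g' \<in> carrier G. pi g' = pi g}) * real (card H)"
    using sum_if_count[OF fin] by simp
  finally show ?thesis using pi_fiber[OF pi_H[OF g(1)]] by simp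
qed

lemma row_K_aux: assumes g: "g \<in> K"
  shows "(\<Sum>g'\<in>carrier G. \<bar>sval g g'\<bar>) = (\<Sum>g'\<in>K. \<bar>sval g g'\<bar>)"
proof -
  have "(\<Sum>g'\<in>carrier G. \<bar>sval g g'\<bar>) = (\<Sum>g'\<in>K. \<bar>sval g g'\<bar>) + (\<Sum>g'\<in>carrier G - K. \<bar>sval g g'\<bar>)"
    using fin Kc by (metis sum.subset_diff add.commute)
  moreover have "(\<Sum>g'\<in>carrier G - K. \<bar>sval g g'\<bar>) = 0"
  proof (rule sum.neutral, rule ballI)
    fix g' assume g': "g' \<in> carrier G - K"
    have "pi g = \<one>" using pi_onK[OF g] .
    moreover have "pi g' \<noteq> \<one>" using g' pi_one_iff by auto
    ultimately show "\<bar>sval g g'\<bar> = 0" unfolding sval_def using g' by auto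
  qed
  ultimately show ?thesis by simp
qed

lemma row_one:
  "(\<Sum>g'\<in>carrier G. \<bar>sval \<one> g'\<bar>) =
     real (card H) + real (card H)^3 * real (card K) - real (card H)^3 + (real (card K) - 1) * (real (card H)^3 - real (card H))"
proof -
  define h k where "h = real (card H)" "k = real (card K)"
  have h2': "2 \<le> h" unfolding h_k_def using h2 by simp
  have "(\<Sum>g'\<in>K. \<bar>sval \<one> g'\<bar>) = (\<Sum>g'\<in>K. if g' = \<one> then h + h^3 * k - h^3 else h^3 - h)"
  proof (rule sum.cong[OF refl])
    fix g' assume g': "g' \<in> K"
    have gc: "g' \<in> carrier G" using g' Kc by auto
    have "pi \<one> = pi g'" using pi_onK g' K1 by simp
    then have sv: "sval \<one> g' = h + h * (k * h * real (M \<one> g') - h * h)" unfolding sval_def h_k_def using g' K1 by simp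
    show "\<bar>sval \<one> g'\<bar> = (if g' = \<one> then h + h^3 * k - h^3 else h^3 - h)"
    proof (cases "g' = \<one>")
      case True
      then have "sval \<one> g' = h + h^3 * k - h^3" using sv M_one gc unfolding h_k_def by (simp add: power3_eq_cube algebra_simps)
      moreover have "0 \<le> h + h^3 * k - h^3" using h2' k2 unfolding h_k_def
        by (smt (verit) mult_le_cancel_left1 of_nat_1 of_nat_le_iff one_le_numeral power3_eq_cube zero_le_power)
      ultimately show ?thesis using True by simp
    next
      case False
      then have "sval \<one> g' = h - h^3" using sv M_one gc by (simp add: power3_eq_cube algebra_simps)
      moreover have "h \<le> h^3" using h2' by (simp add: power3_eq_cube) (smt (verit) mult_le_cancel_left1 mult_nonneg_nonneg)
      ultimately show ?thesis using False by simp
    qed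
  qed
  also have "\<dots> = real (card {g' \<in> K. g' = \<one>}) * (h + h^3 * k - h^3) + real (card {g' \<in> K. g' \<noteq> \<one>}) * (h^3 - h)"
    by (rule sum_if_count[OF finK])
  also have "{g' \<in> K. g' = \<one>} = {\<one>}" using K1 by auto
  also have "{g' \<in> K. g' \<noteq> \<one>} = K - {\<one>}" by auto
  also have "real (card (K - {\<one>})) = k - 1" unfolding h_k_def using K1 finK k2 by (simp add: card_Diff_singleton of_nat_diff)
  finally show ?thesis using row_K_aux[OF K1] unfolding h_k_def by simp
qed

lemma row_K1: assumes g: "g \<in> K" "g \<noteq> \<one>"
  shows "(\<Sum>g'\<in>carrier G. \<bar>sval g g'\<bar>) =
     real (card H) * (real (card H) + real (card H)^2 * real (card K) - real (card H)^3) + (real (card K) - real (card H)) * (real (card H)^3 - real (card H))"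
proof -
  define h k where "h = real (card H)" "k = real (card K)"
  have h2': "2 \<le> h" unfolding h_k_def using h2 by simp
  have hk': "h + 1 \<le> k" unfolding h_k_def using hk by (metis of_nat_1 of_nat_add of_nat_le_iff)
  have gc: "g \<in> carrier G" using g Kc by auto
  have "(\<Sum>g'\<in>K. \<bar>sval g g'\<bar>) = (\<Sum>g'\<in>K. if g' \<in> conj_class G g then h + h^2 * k - h^3 else h^3 - h)"
  proof (rule sum.cong[OF refl])
    fix g' assume g': "g' \<in> K"
    have "pi g = pi g'" using pi_onK g' g by simp
    then have sv: "sval g g' = h + h * (k * h * real (M g g') - h * h)" unfolding sval_def h_k_def using g' g by simp
    show "\<bar>sval g g'\<bar> = (if g' \<in> conj_class G g then h + h^2 * k - h^3 else h^3 - h)"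
    proof (cases "g' \<in> conj_class G g")
      case True
      then have "sval g g' = h + h^2 * k - h^3" using sv M_K[OF g] by (simp add: power3_eq_cube power2_eq_square algebra_simps)
      moreover have "0 \<le> h + h^2 * k - h^3"
      proof -
        have "h^3 \<le> h^2 * k" using hk' h2' by (simp add: power3_eq_cube power2_eq_square)
        then show ?thesis using h2' by simp
      qed
      ultimately show ?thesis using True by simp
    next
      case False
      then have "sval g g' = h - h^3" using sv M_K[OF g] by (simp add: power3_eq_cube algebra_simps)
      moreover have "h \<le> h^3" using h2' by (simp add: power3_eq_cube) (smt (verit) mult_le_cancel_left1 mult_nonneg_nonneg)
      ultimately show ?thesis using False by simp
    qed
  qed
  also have "\<dots> = real (card {g' \<in> K. g' \<in> conj_class G g}) * (h + h^2 * k - h^3) + real (card {g' \<in> K. g' \<notin> conj_class G g}) * (h^3 - h)"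
    by (rule sum_if_count[OF finK])
  also have "{g' \<in> K. g' \<in> conj_class G g} = conj_class G g" using class_sub_K[OF g(1)] by auto
  also have "{g' \<in> K. g' \<notin> conj_class G g} = K - conj_class G g" by auto
  also have "real (card (K - conj_class G g)) = k - h"
  proof -
    have "card (K - conj_class G g) = card K - card H"
      using card_Diff_subset[OF _ class_sub_K[OF g(1)]] card_class_K[OF g] finK class_sub_K[OF g(1)]
      by (simp add: finite_subset)
    then show ?thesis unfolding h_k_def using hk by (simp add: of_nat_diff)
  qed
  finally show ?thesis using row_K_aux[OF g(1)] card_class_K[OF g] unfolding h_k_def by simp
qed

end

lemma AMZL_identity: "(h::real) \<noteq> 0 \<Longrightarrow> k \<noteq> 0 \<Longrightarrow> (1 / (k * h) ^ 2) *
    ((k * h - k) * (h * k) + (h + h^3 * k - h^3 + (k - 1) * (h^3 - h)) +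
     (k - 1) * (h * (h + h^2 * k - h^3) + (k - h) * (h^3 - h))) = 1 + (2 * (h^2 - 1) / h) * (1 - (h - 1) / k) * (1 - 1 / k)"
  by (simp add: divide_simps) (simp add: algebra_simps power2_eq_square power3_eq_cube)

context frob begin

lemma AMZL_sum: "AMZL G = (1 / real (card (carrier G)) ^ 2) * (\<Sum>g\<in>carrier G. \<Sum>g'\<in>carrier G. \<bar>sval g g'\<bar>)"
proof -
  define X where "X C C' = cmod (\<Sum>\<chi>\<in>Irr G. complex_of_real ((degree G \<chi>)\<^sup>2) * class_val \<chi> C * cnj (class_val \<chi> C'))" for C C'
  have "(\<Sum>C\<in>conj_classes G. \<Sum>C'\<in>conj_classes G. real (card C) * real (card C') * X C C') =
      (\<Sum>C\<in>conj_classes G. real (card C) * (\<Sum>C'\<in>conj_classes G. real (card C') * X C C'))"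
    by (simp add: sum_distrib_left mult.assoc)
  also have "\<dots> = (\<Sum>C\<in>conj_classes G. real (card C) * (\<Sum>g'\<in>carrier G. X C (conj_class G g')))"
    using sum_classes[OF fin] by simp
  also have "\<dots> = (\<Sum>g\<in>carrier G. \<Sum>g'\<in>carrier G. X (conj_class G g) (conj_class G g'))"
    using sum_classes[OF fin, of "\<lambda>C. \<Sum>g'\<in>carrier G. X C (conj_class G g')"] by simp
  also have "\<dots> = (\<Sum>g\<in>carrier G. \<Sum>g'\<in>carrier G. \<bar>sval g g'\<bar>)"
  proof (intro sum.cong refl)
    fix g g' assume g: "g \<in> carrier G" and g': "g' \<in> carrier G"
    have "X (conj_class G g) (conj_class G g') = cmod (\<Sum>\<chi>\<in>Irr G. complex_of_real ((degree G \<chi>)\<^sup>2) * \<chi> g * cnj (\<chi> g'))"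
      unfolding X_def using Irr_class_val g g' by (intro arg_cong[where f=cmod] sum.cong) auto
    also have "\<dots> = \<bar>sval g g'\<bar>" using Sg_val[OF g g'] by simp
    finally show "X (conj_class G g) (conj_class G g') = \<bar>sval g g'\<bar>" .
  qed
  finally show ?thesis unfolding AMZL_def X_def by simp
qed

lemma total_L:
  "(\<Sum>g\<in>carrier G. \<Sum>g'\<in>carrier G. \<bar>sval g g'\<bar>) =
    (real (card (carrier G)) - real (card K)) * (real (card H) * real (card K)) +
    (real (card H) + real (card H)^3 * real (card K) - real (card H)^3 + (real (card K) - 1) * (real (card H)^3 - real (card H))) +
    (real (card K) - 1) * (real (card H) * (real (card H) + real (card H)^2 * real (card K) - real (card H)^3) + (real (card K) - real (card H)) * (real (card H)^3 - real (card H)))"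
proof -
  define R where "R g = (\<Sum>g'\<in>carrier G. \<bar>sval g g'\<bar>)" for g
  have "(\<Sum>g\<in>carrier G. R g) = (\<Sum>g\<in>K. R g) + (\<Sum>g\<in>carrier G - K. R g)"
    using fin Kc by (metis sum.subset_diff add.commute)
  moreover have "(\<Sum>g\<in>carrier G - K. R g) = (real (card (carrier G)) - real (card K)) * (real (card H) * real (card K))"
  proof -
    have "(\<Sum>g\<in>carrier G - K. R g) = (\<Sum>g\<in>carrier G - K. real (card H) * real (card K))"
      unfolding R_def using row_notK by (intro sum.cong) auto
    then show ?thesis using Kc finK fin by (simp add: card_Diff_subset of_nat_diff card_mono)
  qed
  moreover have "(\<Sum>g\<in>K. R g) = R \<one> + (\<Sum>g\<in>K - {\<one>}. R g)" using finK K1 by (simp add: sum.remove)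
  moreover have "(\<Sum>g\<in>K - {\<one>}. R g) = (real (card K) - 1) * (real (card H) * (real (card H) + real (card H)^2 * real (card K) - real (card H)^3) + (real (card K) - real (card H)) * (real (card H)^3 - real (card H)))"
  proof -
    have "(\<Sum>g\<in>K - {\<one>}. R g) = (\<Sum>g\<in>K - {\<one>}. real (card H) * (real (card H) + real (card H)^2 * real (card K) - real (card H)^3) + (real (card K) - real (card H)) * (real (card H)^3 - real (card H)))"
      unfolding R_def using row_K1 by (intro sum.cong) auto
    then show ?thesis using finK K1 k2 by (simp add: card_Diff_singleton of_nat_diff)
  qed
  ultimately show ?thesis using row_one unfolding R_def by simp
qed

lemma AMZL_val:
  "AMZL G = 1 + (2 * ((real (card H))^2 - 1) / real (card H)) *
                      (1 - (real (card H) - 1) / real (card K)) * (1 - 1 / real (card K))"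
proof -
  define h k where "h = real (card H)" "k = real (card K)"
  have N: "real (card (carrier G)) = k * h" unfolding h_k_def using card_G by (metis of_nat_mult)
  have h0: "h \<noteq> 0" and k0: "k \<noteq> 0" unfolding h_k_def using h2 k2 by auto
  have "AMZL G = (1 / (k * h) ^ 2) *
    ((k * h - k) * (h * k) + (h + h^3 * k - h^3 + (k - 1) * (h^3 - h)) +
     (k - 1) * (h * (h + h^2 * k - h^3) + (k - h) * (h^3 - h)))"
    using AMZL_sum total_L N unfolding h_k_def by simp
  also have "\<dots> = 1 + (2 * (h^2 - 1) / h) * (1 - (h - 1) / k) * (1 - 1 / k)"
    using h0 k0 by (rule AMZL_identity)
  finally show ?thesis unfolding h_k_def .
qed

end

lemma (in group) sum_classes_c:
  assumes fin: "finite (carrier G)"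
  shows "(\<Sum>C\<in>conj_classes G. of_nat (card C) * F C) = (\<Sum>g\<in>carrier G. (F (conj_class G g) :: complex))"
proof -
  have ft: "finite (conj_classes G)" unfolding conj_classes_def using fin by simp
  have "(\<Sum>g\<in>carrier G. F (conj_class G g)) =
      (\<Sum>C\<in>conj_classes G. \<Sum>g\<in>{g \<in> carrier G. conj_class G g = C}. F (conj_class G g))"
    by (rule sum.group[symmetric]) (use fin ft in \<open>auto simp: conj_classes_def\<close>)
  also have "\<dots> = (\<Sum>C\<in>conj_classes G. of_nat (card C) * F C)"
  proof (rule sum.cong[OF refl])
    fix C assume "C \<in> conj_classes G"
    then obtain x where x: "x \<in> carrier G" "C = conj_class G x" unfolding conj_classes_def by auto
    have "{g \<in> carrier G. conj_class G g = C} = C"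
    proof
      show "{g \<in> carrier G. conj_class G g = C} \<subseteq> C" using x conj_class_self by auto
      show "C \<subseteq> {g \<in> carrier G. conj_class G g = C}"
        using x conj_class_mem_eq conj_class_sub by blast
    qed
    then have "(\<Sum>g\<in>{g \<in> carrier G. conj_class G g = C}. F (conj_class G g)) = (\<Sum>g\<in>C. F C)"
      using x conj_class_mem_eq by (intro sum.cong) auto
    then show "(\<Sum>g\<in>{g \<in> carrier G. conj_class G g = C}. F (conj_class G g)) = of_nat (card C) * F C"
      by simp
  qed
  finally show ?thesis by simp
qed

context frob begin

definition csz :: "'a \<Rightarrow> nat" where
  "csz g = (if g = \<one> then 1 else if g \<in> K then card H else card K)"

lemma csz_eq: "g \<in> carrier G \<Longrightarrow> card (conj_class G g) = csz g"
  unfolding csz_def using class_one card_class_K card_class_notK by auto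

lemma sum_csz_K:
  fixes f :: "'a \<Rightarrow> complex"
  assumes f0: "\<And>g. g \<in> carrier G \<Longrightarrow> g \<notin> K \<Longrightarrow> f g = 0"
  shows "(\<Sum>g\<in>carrier G. of_nat (csz g) * f g) = f \<one> + of_nat (card H) * ((\<Sum>g\<in>K. f g) - f \<one>)"
proof -
  have "(\<Sum>g\<in>carrier G. of_nat (csz g) * f g) = (\<Sum>g\<in>K. of_nat (csz g) * f g) + (\<Sum>g\<in>carrier G - K. of_nat (csz g) * f g)"
    using sum.subset_diff[OF Kc fin] by (simp add: add.commute)
  moreover have "(\<Sum>g\<in>carrier G - K. of_nat (csz g) * f g) = 0" using f0 by (intro sum.neutral) auto
  moreover have "(\<Sum>g\<in>K. of_nat (csz g) * f g) = f \<one> + (\<Sum>g\<in>K - {\<one>}. of_nat (card H) * f g)"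
  proof -
    have "(\<Sum>g\<in>K. of_nat (csz g) * f g) = of_nat (csz \<one>) * f \<one> + (\<Sum>g\<in>K - {\<one>}. of_nat (csz g) * f g)"
      using finK K1 by (simp add: sum.remove)
    moreover have "(\<Sum>g\<in>K - {\<one>}. of_nat (csz g) * f g) = (\<Sum>g\<in>K - {\<one>}. of_nat (card H) * f g)"
      unfolding csz_def by (intro sum.cong) auto
    ultimately show ?thesis unfolding csz_def by simp
  qed
  moreover have "(\<Sum>g\<in>K - {\<one>}. f g) = (\<Sum>g\<in>K. f g) - f \<one>" using finK K1 by (simp add: sum_diff1)
  ultimately show ?thesis by (simp add: sum_distrib_left[symmetric])
qed

lemma sum_pi: "(\<Sum>g\<in>carrier G. F (pi g)) = of_nat (card K) * (\<Sum>a\<in>H. (F a :: complex))"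
proof -
  have "(\<Sum>g\<in>carrier G. F (pi g)) = (\<Sum>a\<in>H. \<Sum>g\<in>{g \<in> carrier G. pi g = a}. F (pi g))"
    by (rule sum.group[symmetric]) (use fin finH pi_H in auto)
  also have "\<dots> = (\<Sum>a\<in>H. of_nat (card K) * F a)"
    using pi_fiber by (intro sum.cong refl) simp
  finally show ?thesis by (simp add: sum_distrib_left)
qed

definition tval where
  "tval \<chi> \<chi>' = (\<Sum>g\<in>carrier G. of_nat (csz g) * \<chi> g * cnj (\<chi>' g))"

lemma T_LL: assumes m: "\<mu> \<in> LH" "\<mu>' \<in> LH"
  shows "tval (lin \<mu>) (lin \<mu>') = of_real (1 + real (card H) * (real (card K) - 1) +
     real (card K)^2 * ((if \<mu> = \<mu>' then real (card H) else 0) - 1))"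
proof -
  define f where "f g = \<mu> (pi g) * cnj (\<mu>' (pi g))" for g
  have "tval (lin \<mu>) (lin \<mu>') = (\<Sum>g\<in>carrier G. of_nat (csz g) * f g)"
    unfolding tval_def lin_def f_def by (intro sum.cong) (auto simp: mult.assoc)
  also have "\<dots> = (\<Sum>g\<in>K. of_nat (csz g) * f g) + (\<Sum>g\<in>carrier G - K. of_nat (csz g) * f g)"
    using sum.subset_diff[OF Kc fin] by (simp add: add.commute)
  also have "(\<Sum>g\<in>K. of_nat (csz g) * f g) = (\<Sum>g\<in>K. of_nat (csz g))"
    unfolding f_def using pi_onK LH_one[OF m(1)] LH_one[OF m(2)] by (intro sum.cong) auto
  also have "\<dots> = 1 + of_nat (card H) * (of_nat (card K) - 1)"
  proof -
    have "(\<Sum>g\<in>K. (of_nat (csz g) :: complex)) = of_nat (csz \<one>) + (\<Sum>g\<in>K - {\<one>}. of_nat (csz g))"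
      using finK K1 by (simp add: sum.remove)
    also have "(\<Sum>g\<in>K - {\<one>}. (of_nat (csz g) :: complex)) = (\<Sum>g\<in>K - {\<one>}. of_nat (card H))"
      unfolding csz_def by (intro sum.cong) auto
    finally show ?thesis using finK K1 k2 unfolding csz_def by (simp add: card_Diff_singleton of_nat_diff)
  qed
  also have "(\<Sum>g\<in>carrier G - K. of_nat (csz g) * f g) = of_nat (card K) * ((\<Sum>g\<in>carrier G. f g) - (\<Sum>g\<in>K. f g))"
  proof -
    have "(\<Sum>g\<in>carrier G - K. of_nat (csz g) * f g) = (\<Sum>g\<in>carrier G - K. of_nat (card K) * f g)"
      unfolding csz_def using K1 by (intro sum.cong) auto
    also have "\<dots> = of_nat (card K) * (\<Sum>g\<in>carrier G - K. f g)" by (simp add: sum_distrib_left)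
    also have "(\<Sum>g\<in>carrier G - K. f g) = (\<Sum>g\<in>carrier G. f g) - (\<Sum>g\<in>K. f g)"
      using fin Kc by (simp add: sum_diff)
    finally show ?thesis .
  qed
  also have "(\<Sum>g\<in>K. f g) = of_nat (card K)"
    unfolding f_def using pi_onK LH_one[OF m(1)] LH_one[OF m(2)] by simp
  also have "(\<Sum>g\<in>carrier G. f g) = of_nat (card K) * (if \<mu> = \<mu>' then of_nat (card H) else 0)"
    unfolding f_def using sum_pi[of "\<lambda>a. \<mu> a * cnj (\<mu>' a)"] fab.dual_row[OF fabH m] order_H by simp
  finally show ?thesis by (simp add: power2_eq_square algebra_simps)
qed

lemma T_LN: assumes m: "\<mu> \<in> LH" and la: "la \<in> NL"
  shows "tval (lin \<mu>) (ind la) = of_real (real (card H) - real (card H)^2)"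
    and "tval (ind la) (lin \<mu>) = of_real (real (card H) - real (card H)^2)"
proof -
  have laK: "la \<in> LK" using la by simp
  have s0: "(\<Sum>g\<in>K. ind la g) = 0" using sum_ind_K[OF la] .
  have i1: "ind la \<one> = of_nat (card H)" using ind_one[OF laK] .
  have "tval (lin \<mu>) (ind la) = (\<Sum>g\<in>carrier G. of_nat (csz g) * cnj (ind la g))"
    unfolding tval_def
  proof (intro sum.cong refl)
    fix g assume g: "g \<in> carrier G"
    show "of_nat (csz g) * lin \<mu> g * cnj (ind la g) = of_nat (csz g) * cnj (ind la g)"
    proof (cases "g \<in> K")
      case True then show ?thesis using lin_K[OF m] by simp
    next
      case False then show ?thesis using ind_notK[OF laK] by simp
    qed
  qed
  also have "\<dots> = cnj (ind la \<one>) + of_nat (card H) * ((\<Sum>g\<in>K. cnj (ind la g)) - cnj (ind la \<one>))"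
    by (rule sum_csz_K) (use ind_notK[OF laK] in simp)
  also have "(\<Sum>g\<in>K. cnj (ind la g)) = 0" using s0 by (simp flip: cnj_sum)
  finally show "tval (lin \<mu>) (ind la) = of_real (real (card H) - real (card H)^2)"
    using i1 by (simp add: power2_eq_square algebra_simps)
  have "tval (ind la) (lin \<mu>) = (\<Sum>g\<in>carrier G. of_nat (csz g) * ind la g)"
    unfolding tval_def
  proof (intro sum.cong refl)
    fix g assume g: "g \<in> carrier G"
    show "of_nat (csz g) * ind la g * cnj (lin \<mu> g) = of_nat (csz g) * ind la g"
    proof (cases "g \<in> K")
      case True then show ?thesis using lin_K[OF m] by simp
    next
      case False then show ?thesis using ind_notK[OF laK] by simp
    qed
  qed
  also have "\<dots> = ind la \<one> + of_nat (card H) * ((\<Sum>g\<in>K. ind la g) - ind la \<one>)"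
    by (rule sum_csz_K) (use ind_notK[OF laK] in simp)
  finally show "tval (ind la) (lin \<mu>) = of_real (real (card H) - real (card H)^2)"
    using i1 s0 by (simp add: power2_eq_square algebra_simps)
qed

lemma T_NN: assumes la: "la \<in> NL" "la' \<in> NL"
  shows "tval (ind la) (ind la') = of_real (real (card H)^2 - real (card H)^3 +
     (if la' \<in> orb la then real (card K) * real (card H)^2 else 0))"
proof -
  have laK: "la \<in> LK" "la' \<in> LK" using la by auto
  have "tval (ind la) (ind la') = ind la \<one> * cnj (ind la' \<one>) + of_nat (card H) * (IP la la' - ind la \<one> * cnj (ind la' \<one>))"
  proof -
    have "tval (ind la) (ind la') = (\<Sum>g\<in>carrier G. of_nat (csz g) * (ind la g * cnj (ind la' g)))"
      unfolding tval_def by (simp add: mult.assoc)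
    also have "\<dots> = ind la \<one> * cnj (ind la' \<one>) + of_nat (card H) * ((\<Sum>g\<in>K. ind la g * cnj (ind la' g)) - ind la \<one> * cnj (ind la' \<one>))"
      by (rule sum_csz_K) (use ind_notK[OF laK(1)] in simp)
    finally show ?thesis unfolding IP_def .
  qed
  then show ?thesis using ind_one[OF laK(1)] ind_one[OF laK(2)] IP_val[OF la]
    by (simp add: power2_eq_square power3_eq_cube algebra_simps)
qed

end

lemma AMZA_identity: "(h::real) \<noteq> 0 \<Longrightarrow> k \<noteq> 0 \<Longrightarrow>
  (1 / (k * h) ^ 2) * (h * ((1 + h * (k - 1) + k^2 * (h - 1)) + (h - 1) * (k^2 - 1 - h * (k - 1)) + (k - 1) * (h^2 - h)) +
    (k - 1) * (h^2 * (h^2 - h) + h * (h * (h^2 - h^3 + k * h^2) + (k - 1 - h) * (h^3 - h^2))) / h)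
  = 1 + (2 * (h^2 - 1) / h) * (1 - (h - 1) / k) * (1 - 1 / k)"
  by (simp add: divide_simps) (simp add: algebra_simps power2_eq_square power3_eq_cube)

context frob begin

lemma AMZA_sum: "AMZA G = (1 / real (card (carrier G)) ^ 2) *
    (\<Sum>\<chi>\<in>Irr G. \<Sum>\<chi>'\<in>Irr G. degree G \<chi> * degree G \<chi>' * cmod (tval \<chi> \<chi>'))"
proof -
  have "(\<Sum>C\<in>conj_classes G. complex_of_real ((real (card C))\<^sup>2) * class_val \<chi> C * cnj (class_val \<chi>' C)) = tval \<chi> \<chi>'"
    if chi: "\<chi> \<in> Irr G" "\<chi>' \<in> Irr G" for \<chi> \<chi>'
  proof -
    have "(\<Sum>C\<in>conj_classes G. complex_of_real ((real (card C))\<^sup>2) * class_val \<chi> C * cnj (class_val \<chi>' C)) =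
        (\<Sum>C\<in>conj_classes G. of_nat (card C) * (of_nat (card C) * class_val \<chi> C * cnj (class_val \<chi>' C)))"
      by (simp add: power2_eq_square mult.assoc)
    also have "\<dots> = (\<Sum>g\<in>carrier G. of_nat (card (conj_class G g)) * class_val \<chi> (conj_class G g) * cnj (class_val \<chi>' (conj_class G g)))"
      by (rule sum_classes_c[OF fin])
    also have "\<dots> = tval \<chi> \<chi>'"
      unfolding tval_def using csz_eq Irr_class_val chi by (intro sum.cong) auto
    finally show ?thesis .
  qed
  then show ?thesis unfolding AMZA_def by (intro arg_cong[where f="\<lambda>x. _ * x"] sum.cong refl) auto
qed

lemma AMZA_val:
  "AMZA G = 1 + (2 * ((real (card H))^2 - 1) / real (card H)) *
                      (1 - (real (card H) - 1) / real (card K)) * (1 - 1 / real (card K))"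
proof -
  define h k where "h = real (card H)" "k = real (card K)"
  have N: "real (card (carrier G)) = k * h" unfolding h_k_def using card_G by (metis of_nat_mult)
  have h2': "2 \<le> h" unfolding h_k_def using h2 by simp
  have hk': "h + 1 \<le> k" unfolding h_k_def using hk by (metis of_nat_1 of_nat_add of_nat_le_iff)
  have h0: "h \<noteq> 0" and k0: "k \<noteq> 0" using h2' hk' by auto
  have cLH: "real (card LH) = h" unfolding h_k_def using card_LH by simp
  have cNL: "real (card NL) = k - 1" unfolding h_k_def using card_NL k2 by (simp add: of_nat_diff)
  define A B C D where "A = 1 + h * (k - 1) + k^2 * (h - 1)" "B = k^2 - 1 - h * (k - 1)"
    "C = h^2 - h^3 + k * h^2" "D = h^3 - h^2"
  have LL: "cmod (tval (lin \<mu>) (lin \<mu>')) = (if \<mu> = \<mu>' then A else B)" if "\<mu> \<in> LH" "\<mu>' \<in> LH" for \<mu> \<mu>'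
  proof -
    have "cmod (tval (lin \<mu>) (lin \<mu>')) = \<bar>1 + h * (k - 1) + k^2 * ((if \<mu> = \<mu>' then h else 0) - 1)\<bar>"
      using T_LL[OF that] unfolding h_k_def by (simp only: norm_of_real)
    also have "\<dots> = (if \<mu> = \<mu>' then A else B)"
    proof (cases "\<mu> = \<mu>'")
      case True
      have "0 \<le> A" unfolding A_B_C_D_def using h2' hk' by (smt (verit) mult_nonneg_nonneg zero_le_power)
      then show ?thesis using True unfolding A_B_C_D_def by (simp add: algebra_simps)
    next
      case False
      have "h * (k - 1) \<le> k^2 - 1"
      proof -
        have "h * (k - 1) \<le> (k + 1) * (k - 1)" using hk' h2' by (intro mult_right_mono) auto
        then show ?thesis by (simp add: power2_eq_square algebra_simps)
      qed
      then show ?thesis using False unfolding A_B_C_D_def by (simp add: algebra_simps)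
    qed
    finally show ?thesis .
  qed
  have LN: "cmod (tval (lin \<mu>) (ind la)) = h^2 - h" "cmod (tval (ind la) (lin \<mu>)) = h^2 - h"
    if "\<mu> \<in> LH" "la \<in> NL" for \<mu> la
  proof -
    have "h \<le> h^2" using h2' by (simp add: power2_eq_square)
    then show "cmod (tval (lin \<mu>) (ind la)) = h^2 - h" "cmod (tval (ind la) (lin \<mu>)) = h^2 - h"
      using T_LN[OF that] unfolding h_k_def by (simp_all only: norm_of_real)
  qed
  have NN: "cmod (tval (ind la) (ind la')) = (if la' \<in> orb la then C else D)" if "la \<in> NL" "la' \<in> NL" for la la'
  proof -
    have "cmod (tval (ind la) (ind la')) = \<bar>h^2 - h^3 + (if la' \<in> orb la then k * h^2 else 0)\<bar>"
      using T_NN[OF that] unfolding h_k_def by (simp only: norm_of_real)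
    also have "\<dots> = (if la' \<in> orb la then C else D)"
    proof -
      have "h^3 \<le> h^2 * (1 + k)" using hk' h2' by (simp add: power3_eq_cube power2_eq_square)
      moreover have "h^2 \<le> h^3" using h2' by (simp add: power3_eq_cube power2_eq_square)
      ultimately show ?thesis unfolding A_B_C_D_def by (auto simp: algebra_simps)
    qed
    finally show ?thesis .
  qed
  have d_lin: "degree G (lin \<mu>) = 1" if "\<mu> \<in> LH" for \<mu> using deg_lin[OF that] .
  have d_ind: "degree G (ind la) = h" if "la \<in> NL" for la using deg_ind that unfolding h_k_def by simp
  have row_lin: "(\<Sum>\<chi>'\<in>Irr G. degree G (lin \<mu>) * degree G \<chi>' * cmod (tval (lin \<mu>) \<chi>')) =
      A + (h - 1) * B + (k - 1) * (h^2 - h)" if m: "\<mu> \<in> LH" for \<mu>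
  proof -
    have "(\<Sum>\<mu>'\<in>LH. degree G (lin \<mu>) * degree G (lin \<mu>') * cmod (tval (lin \<mu>) (lin \<mu>'))) =
        (\<Sum>\<mu>'\<in>LH. if \<mu>' = \<mu> then A else B)"
      using d_lin LL m by (intro sum.cong) auto
    also have "\<dots> = real (card {\<mu>' \<in> LH. \<mu>' = \<mu>}) * A + real (card {\<mu>' \<in> LH. \<mu>' \<noteq> \<mu>}) * B"
      by (rule sum_if_count[OF fin_LH])
    also have "{\<mu>' \<in> LH. \<mu>' = \<mu>} = {\<mu>}" using m by auto
    also have "{\<mu>' \<in> LH. \<mu>' \<noteq> \<mu>} = LH - {\<mu>}" by auto
    also have "real (card (LH - {\<mu>})) = h - 1"
    proof -
      have "1 \<le> card LH" using card_LH h2 by simp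
      then show ?thesis using cLH m fin_LH by (simp add: card_Diff_singleton of_nat_diff)
    qed
    finally have e1: "(\<Sum>\<mu>'\<in>LH. degree G (lin \<mu>) * degree G (lin \<mu>') * cmod (tval (lin \<mu>) (lin \<mu>'))) = A + (h - 1) * B" by simp
    have "(\<Sum>la\<in>NL. degree G (lin \<mu>) * degree G (ind la) * cmod (tval (lin \<mu>) (ind la))) = (\<Sum>la\<in>NL. h * (h^2 - h))"
      using d_lin d_ind LN m by (intro sum.cong) auto
    also have "\<dots> = (k - 1) * (h * (h^2 - h))" using cNL by simp
    finally have e2: "(\<Sum>la\<in>NL. degree G (lin \<mu>) * degree G (ind la) * cmod (tval (lin \<mu>) (ind la))) / h = (k - 1) * (h^2 - h)"
      using h0 by simp
    show ?thesis using sum_Irr[of "\<lambda>\<chi>'. degree G (lin \<mu>) * degree G \<chi>' * cmod (tval (lin \<mu>) \<chi>')"] e1 e2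
      unfolding h_k_def by simp
  qed
  have row_ind: "(\<Sum>\<chi>'\<in>Irr G. degree G (ind la) * degree G \<chi>' * cmod (tval (ind la) \<chi>')) =
      h^2 * (h^2 - h) + h * (h * C + (k - 1 - h) * D)" if la: "la \<in> NL" for la
  proof -
    have "(\<Sum>\<mu>'\<in>LH. degree G (ind la) * degree G (lin \<mu>') * cmod (tval (ind la) (lin \<mu>'))) = (\<Sum>\<mu>'\<in>LH. h * (h^2 - h))"
      using d_lin d_ind LN la by (intro sum.cong) auto
    also have "\<dots> = h^2 * (h^2 - h)" using cLH by (simp add: power2_eq_square)
    finally have e1: "(\<Sum>\<mu>'\<in>LH. degree G (ind la) * degree G (lin \<mu>') * cmod (tval (ind la) (lin \<mu>'))) = h^2 * (h^2 - h)" .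
    have "(\<Sum>la'\<in>NL. degree G (ind la) * degree G (ind la') * cmod (tval (ind la) (ind la'))) =
        h * h * (\<Sum>la'\<in>NL. if la' \<in> orb la then C else D)"
      using d_ind NN la by (simp add: sum_distrib_left)
    also have "(\<Sum>la'\<in>NL. if la' \<in> orb la then C else D) =
        real (card {la' \<in> NL. la' \<in> orb la}) * C + real (card {la' \<in> NL. la' \<notin> orb la}) * D"
      by (rule sum_if_count) (use fin_LK in simp)
    also have "{la' \<in> NL. la' \<in> orb la} = orb la" using orb_sub[OF la] by auto
    also have "{la' \<in> NL. la' \<notin> orb la} = NL - orb la" by auto
    also have "real (card (NL - orb la)) = k - 1 - h"
    proof -
      have "card (NL - orb la) = card NL - card (orb la)"
        using card_Diff_subset[OF _ orb_sub[OF la]] fin_LK finite_subset[OF orb_sub[OF la]] by simp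
      moreover have "card (orb la) \<le> card NL" using card_mono[OF _ orb_sub[OF la]] fin_LK by simp
      ultimately show ?thesis using cNL card_orb[OF la] unfolding h_k_def by (simp add: of_nat_diff)
    qed
    finally have "(\<Sum>la'\<in>NL. degree G (ind la) * degree G (ind la') * cmod (tval (ind la) (ind la'))) / h =
        h * (h * C + (k - 1 - h) * D)" using card_orb[OF la] h0 unfolding h_k_def by simp
    then show ?thesis using sum_Irr[of "\<lambda>\<chi>'. degree G (ind la) * degree G \<chi>' * cmod (tval (ind la) \<chi>')"] e1
      h_k_def(1)[symmetric] by simp
  qed
  have "(\<Sum>\<chi>\<in>Irr G. \<Sum>\<chi>'\<in>Irr G. degree G \<chi> * degree G \<chi>' * cmod (tval \<chi> \<chi>')) =
      (\<Sum>\<mu>\<in>LH. A + (h - 1) * B + (k - 1) * (h^2 - h)) +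
      (\<Sum>la\<in>NL. h^2 * (h^2 - h) + h * (h * C + (k - 1 - h) * D)) / h"
    using sum_Irr[of "\<lambda>\<chi>. \<Sum>\<chi>'\<in>Irr G. degree G \<chi> * degree G \<chi>' * cmod (tval \<chi> \<chi>')"] row_lin row_ind
      h_k_def(1)[symmetric] by simp
  also have "\<dots> = h * (A + (h - 1) * B + (k - 1) * (h^2 - h)) + (k - 1) * (h^2 * (h^2 - h) + h * (h * C + (k - 1 - h) * D)) / h"
    using cLH cNL by simp
  finally have tot: "(\<Sum>\<chi>\<in>Irr G. \<Sum>\<chi>'\<in>Irr G. degree G \<chi> * degree G \<chi>' * cmod (tval \<chi> \<chi>')) =
      h * (A + (h - 1) * B + (k - 1) * (h^2 - h)) + (k - 1) * (h^2 * (h^2 - h) + h * (h * C + (k - 1 - h) * D)) / h" .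
  have "AMZA G = (1 / (k * h) ^ 2) * (h * (A + (h - 1) * B + (k - 1) * (h^2 - h)) + (k - 1) * (h^2 * (h^2 - h) + h * (h * C + (k - 1 - h) * D)) / h)"
    using AMZA_sum tot N by simp
  also have "\<dots> = 1 + (2 * (h^2 - 1) / h) * (1 - (h - 1) / k) * (1 - 1 / k)"
    unfolding A_B_C_D_def using AMZA_identity[OF h0 k0] by simp
  finally show ?thesis unfolding h_k_def .
qed

end

theorem theorem2p2:
  fixes G :: "('a, 'b) monoid_scheme" and H :: "'a set"
  assumes "group G" and "finite (carrier G)"
    and "frobenius_complement G H"
    and "comm_group (G\<lparr>carrier := frobenius_kernel G H\<rparr>)"
    and "comm_group (G\<lparr>carrier := H\<rparr>)"
  shows "AMZA G = AMZL G \<and>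
         AMZL G = 1 + (2 * ((real (card H))^2 - 1) / real (card H)) *
                      (1 - (real (card H) - 1) / real (card (frobenius_kernel G H))) *
                      (1 - 1 / real (card (frobenius_kernel G H)))"
proof -
  interpret F: frob G H
    using assms unfolding frob_def frob_axioms_def by auto
  show ?thesis using F.AMZL_val F.AMZA_val by simp
qed

end
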